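(* There is no orthonormal basis $(f_n)_{n\ge0}$ of $C(\mathbb{Z}_p,\mathbb{Q}_p)$ such that every stationary $C(\mathbb{Z}_p,\mathbb{Q}_p)$-valued $\mathbb{Q}_p$-Gaussian random variable $X$ can be written as $X=\sum_{n=0}^\infty A_nf_n$ for some sequence $(A_n)_{n\ge0}$ of independent $\mathbb{Q}_p$-valued $\mathbb{Q}_p$-Gaussian random variables.
   Context: $\mathbb{Q}_p$ is the field of $p$-adic numbers with $p$-adic absolute value $|\cdot|$ (non-archimedean: $|x+y|\le|x|\vee|y|$), $\mathbb{Z}_p=\{x:|x|\le1\}$. $C(\mathbb{Z}_p,\mathbb{Q}_p)$ is the Banach space over $\mathbb{Q}_p$ of continuous functions $\mathbb{Z}_p\to\mathbb{Q}_p$ with sup norm $\|\cdot\|_C$. A set $F$ in a normed space over $\mathbb{Q}_p$ is orthonormal if $\|\sum_{i=1}^k\alpha_ix_i\|=\bigvee_{i=1}^k|\alpha_i|$ for all finite $\{x_1,\dots,x_k\}\subset F$ and $\alpha_i\in\mathbb{Q}_p$ (so each $x\in F$ has norm $1$); an orthonormal basis is an orthonormal sequence whose closed linear span is the whole space. $\mathbb{Q}_p^2$ has norm $|(x_1,x_2)|=|x_1|\vee|x_2|$. For a separable Banach space $E$ over $\mathbb{Q}_p$, an $E$-valued random variable $X$ is $\mathbb{Q}_p$-Gaussian if whenever $X_1,X_2$ are independent copies of $X$ and $(\alpha_{11},\alpha_{12}),(\alpha_{21},\alpha_{22})$ is an orthonormal pair in $\mathbb{Q}_p^2$, $(\alpha_{11}X_1+\alpha_{12}X_2,\alpha_{21}X_1+\alpha_{22}X_2)$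 has the same law as $(X_1,X_2)$. A $C(\mathbb{Z}_p,\mathbb{Q}_p)$-valued random variable $X$ is stationary if $X(\cdot+s)$ has the same law as $X$ for all $s\in\mathbb{Z}_p$. The series $\sum A_nf_n$ is understood as converging almost surely in $C(\mathbb{Z}_p,\mathbb{Q}_p)$. *)

theory Defs
  imports "HOL-Probability.Probability" "HOL-Computational_Algebra.Computational_Algebra"
begin

definition padic_abs :: "nat \<Rightarrow> rat \<Rightarrow> real" where
  "padic_abs p q =
     (if q = 0 then 0
      else (case quotient_of q of (a, b) \<Rightarrow>
              real p powr (real (multiplicity (int p) b) - real (multiplicity (int p) a))))"

text \<open>This is the defining property of Q_p
  (the completion of Q), which determines (K, nv) up to unique isometric isomorphism.\<close>

definition is_Qp :: "nat \<Rightarrow> ('k::field_char_0 \<Rightarrow> real) \<Rightarrow> bool" where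
  "is_Qp p nv \<longleftrightarrow>
     (\<forall>x. nv x \<ge> 0) \<and> (\<forall>x. nv x = 0 \<longleftrightarrow> x = 0) \<and>
     (\<forall>x y. nv (x * y) = nv x * nv y) \<and>
     (\<forall>x y. nv (x + y) \<le> max (nv x) (nv y)) \<and>
     (\<forall>q. nv (of_rat q) = padic_abs p q) \<and>
     (\<forall>s::nat \<Rightarrow> 'k. (\<forall>e>0. \<exists>N. \<forall>m\<ge>N. \<forall>n\<ge>N. nv (s m - s n) < e) \<longrightarrow>
        (\<exists>l. \<forall>e>0. \<exists>N. \<forall>n\<ge>N. nv (s n - l) < e)) \<and>
     (\<forall>x. \<forall>e>0. \<exists>q. nv (x - of_rat q) < e)"

definition Zp :: "('k::field_char_0 \<Rightarrow> real) \<Rightarrow> 'k set" where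
  "Zp nv = {x. nv x \<le> 1}"

definition nv_open :: "('k::field_char_0 \<Rightarrow> real) \<Rightarrow> 'k set \<Rightarrow> bool" where
  "nv_open nv U \<longleftrightarrow> (\<forall>x\<in>U. \<exists>e>0. \<forall>y. nv (y - x) < e \<longrightarrow> y \<in> U)"

definition Kborel :: "('k::field_char_0 \<Rightarrow> real) \<Rightarrow> 'k measure" where
  "Kborel nv = sigma UNIV (Collect (nv_open nv))"

text \<open>Elements of C(Z_p,Q_p) are represented by functions K => K that are continuous on Z_p
  and vanish outside Z_p (so that the representation is unique).\<close>
definition Ccarrier :: "('k::field_char_0 \<Rightarrow> real) \<Rightarrow> ('k \<Rightarrow> 'k) set" where
  "Ccarrier nv = {f. (\<forall>x\<in>Zp nv. \<forall>e>0. \<exists>d>0. \<forall>y\<in>Zp nv. nv (y - x) < d \<longrightarrow> nv (f y - f x) < e)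
                   \<and> (\<forall>x. x \<notin> Zp nv \<longrightarrow> f x = 0)}"

definition supnorm :: "('k::field_char_0 \<Rightarrow> real) \<Rightarrow> ('k \<Rightarrow> 'k) \<Rightarrow> real" where
  "supnorm nv f = (SUP x\<in>Zp nv. nv (f x))"

definition C_open :: "('k::field_char_0 \<Rightarrow> real) \<Rightarrow> ('k \<Rightarrow> 'k) set \<Rightarrow> bool" where
  "C_open nv U \<longleftrightarrow> U \<subseteq> Ccarrier nv \<and>
     (\<forall>g\<in>U. \<exists>e>0. \<forall>h\<in>Ccarrier nv. supnorm nv (\<lambda>x. h x - g x) < e \<longrightarrow> h \<in> U)"

definition Cborel :: "('k::field_char_0 \<Rightarrow> real) \<Rightarrow> ('k \<Rightarrow> 'k) measure" where
  "Cborel nv = sigma (Ccarrier nv) (Collect (C_open nv))"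

definition orthonormal_seq_C :: "('k::field_char_0 \<Rightarrow> real) \<Rightarrow> (nat \<Rightarrow> 'k \<Rightarrow> 'k) \<Rightarrow> bool" where
  "orthonormal_seq_C nv f \<longleftrightarrow>
     (\<forall>n. f n \<in> Ccarrier nv) \<and>
     (\<forall>I \<alpha>. finite I \<and> I \<noteq> {} \<longrightarrow>
        supnorm nv (\<lambda>x. \<Sum>i\<in>I. \<alpha> i * f i x) = Max ((\<lambda>i. nv (\<alpha> i)) ` I))"

definition orthonormal_basis_C :: "('k::field_char_0 \<Rightarrow> real) \<Rightarrow> (nat \<Rightarrow> 'k \<Rightarrow> 'k) \<Rightarrow> bool" where
  "orthonormal_basis_C nv f \<longleftrightarrow> orthonormal_seq_C nv f \<and>
     (\<forall>g\<in>Ccarrier nv. \<forall>e>0. \<exists>I \<alpha>. finite I \<and>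
        supnorm nv (\<lambda>x. g x - (\<Sum>i\<in>I. \<alpha> i * f i x)) < e)"

definition orthonormal_pair :: "('k::field_char_0 \<Rightarrow> real) \<Rightarrow> 'k \<Rightarrow> 'k \<Rightarrow> 'k \<Rightarrow> 'k \<Rightarrow> bool" where
  "orthonormal_pair nv a11 a12 a21 a22 \<longleftrightarrow>
     (\<forall>b1 b2. max (nv (b1 * a11 + b2 * a21)) (nv (b1 * a12 + b2 * a22)) = max (nv b1) (nv b2))"

text \<open>A law mu on a space E (with addition add and scalar multiplication sm) is Q_p-Gaussian iff,
  for independent copies X1, X2 (whose joint law is mu x mu) and every orthonormal pair,
  the law of (a11 X1 + a12 X2, a21 X1 + a22 X2) equals the law of (X1, X2).\<close>
definition qgauss_law :: "('k::field_char_0 \<Rightarrow> real) \<Rightarrow> 'e measure \<Rightarrow> ('e \<Rightarrow> 'e \<Rightarrow> 'e)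
     \<Rightarrow> ('k \<Rightarrow> 'e \<Rightarrow> 'e) \<Rightarrow> 'e measure \<Rightarrow> bool" where
  "qgauss_law nv N add sm \<mu> \<longleftrightarrow>
     (\<forall>a11 a12 a21 a22. orthonormal_pair nv a11 a12 a21 a22 \<longrightarrow>
        distr (\<mu> \<Otimes>\<^sub>M \<mu>) (N \<Otimes>\<^sub>M N)
          (\<lambda>(x, y). (add (sm a11 x) (sm a12 y), add (sm a21 x) (sm a22 y))) = \<mu> \<Otimes>\<^sub>M \<mu>)"

definition C_add :: "('k::field_char_0 \<Rightarrow> 'k) \<Rightarrow> ('k \<Rightarrow> 'k) \<Rightarrow> 'k \<Rightarrow> 'k" where
  "C_add f g = (\<lambda>x. f x + g x)"

definition C_smult :: "'k::field_char_0 \<Rightarrow> ('k \<Rightarrow> 'k) \<Rightarrow> 'k \<Rightarrow> 'k" where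
  "C_smult c f = (\<lambda>x. c * f x)"

definition C_gaussian_rv :: "('k::field_char_0 \<Rightarrow> real) \<Rightarrow> 'w measure \<Rightarrow> ('w \<Rightarrow> 'k \<Rightarrow> 'k) \<Rightarrow> bool" where
  "C_gaussian_rv nv M X \<longleftrightarrow> X \<in> measurable M (Cborel nv) \<and>
     qgauss_law nv (Cborel nv) C_add C_smult (distr M (Cborel nv) X)"

definition K_gaussian_rv :: "('k::field_char_0 \<Rightarrow> real) \<Rightarrow> 'w measure \<Rightarrow> ('w \<Rightarrow> 'k) \<Rightarrow> bool" where
  "K_gaussian_rv nv M A \<longleftrightarrow> A \<in> measurable M (Kborel nv) \<and>
     qgauss_law nv (Kborel nv) (+) (*) (distr M (Kborel nv) A)"

definition C_shift :: "('k::field_char_0 \<Rightarrow> real) \<Rightarrow> 'k \<Rightarrow> ('k \<Rightarrow> 'k) \<Rightarrow> 'k \<Rightarrow> 'k" where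
  "C_shift nv s f = (\<lambda>x. if x \<in> Zp nv then f (x + s) else 0)"

definition C_stationary :: "('k::field_char_0 \<Rightarrow> real) \<Rightarrow> 'w measure \<Rightarrow> ('w \<Rightarrow> 'k \<Rightarrow> 'k) \<Rightarrow> bool" where
  "C_stationary nv M X \<longleftrightarrow>
     (\<forall>s\<in>Zp nv. distr M (Cborel nv) (\<lambda>\<omega>. C_shift nv s (X \<omega>)) = distr M (Cborel nv) X)"

definition series_repr :: "('k::field_char_0 \<Rightarrow> real) \<Rightarrow> 'w measure \<Rightarrow> ('w \<Rightarrow> 'k \<Rightarrow> 'k)
     \<Rightarrow> (nat \<Rightarrow> 'w \<Rightarrow> 'k) \<Rightarrow> (nat \<Rightarrow> 'k \<Rightarrow> 'k) \<Rightarrow> bool" where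
  "series_repr nv M X A f \<longleftrightarrow>
     (AE \<omega> in M. (\<lambda>N. supnorm nv (\<lambda>x. X \<omega> x - (\<Sum>n<N. A n \<omega> * f n x))) \<longlonglongrightarrow> 0)"

end

theory Submission
  imports Defs
begin


locale qp =
  fixes p :: nat and nv :: "'k::field_char_0 \<Rightarrow> real"
  assumes prime_p: "prime p" and isqp: "is_Qp p nv"
begin

lemma nv_nonneg[simp]: "nv x \<ge> 0" using isqp by (simp add: is_Qp_def)
lemma nv_eq0[simp]: "nv x = 0 \<longleftrightarrow> x = 0" using isqp by (simp add: is_Qp_def)
lemma nv_mult: "nv (x * y) = nv x * nv y" using isqp by (simp add: is_Qp_def)
lemma nv_ultra: "nv (x + y) \<le> max (nv x) (nv y)" using isqp by (simp add: is_Qp_def)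
lemma nv_rat: "nv (of_rat q) = padic_abs p q" using isqp by (simp add: is_Qp_def)
lemma nv_complete: 
  fixes s :: "nat \<Rightarrow> 'k"
  assumes "\<forall>e>0. \<exists>N. \<forall>m\<ge>N. \<forall>n\<ge>N. nv (s m - s n) < e"
  shows "\<exists>l. \<forall>e>0. \<exists>N. \<forall>n\<ge>N. nv (s n - l) < e"
proof -
  have "\<forall>s::nat\<Rightarrow>'k. (\<forall>e>0. \<exists>N. \<forall>m\<ge>N. \<forall>n\<ge>N. nv (s m - s n) < e) \<longrightarrow>
        (\<exists>l. \<forall>e>0. \<exists>N. \<forall>n\<ge>N. nv (s n - l) < e)" using isqp unfolding is_Qp_def by blast
  thus ?thesis using assms by blast
qed
lemma nv_dense: "e > 0 \<Longrightarrow> \<exists>q. nv (x - of_rat q) < e" using isqp by (simp add: is_Qp_def)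

lemma p_gt1: "p > 1" using prime_p prime_gt_1_nat by blast
lemma p_pos: "real p > 0" using p_gt1 by simp

lemma nv_0[simp]: "nv 0 = 0" by simp
lemma nv_1[simp]: "nv 1 = 1"
proof -
  have "nv 1 = nv 1 * nv 1" using nv_mult[of 1 1] by simp
  moreover have "nv 1 \<noteq> 0" by simp
  ultimately show ?thesis by (metis mult_cancel_left1)
qed
lemma nv_minus1: "nv (-1) = 1"
proof -
  have "nv (-1) * nv (-1) = 1" using nv_mult[of "-1" "-1"] by simp
  hence "nv (-1) ^ 2 = 1" by (simp add: power2_eq_square)
  thus ?thesis using nv_nonneg[of "-1"] by (simp add: power2_eq_1_iff) 
qed
lemma nv_uminus[simp]: "nv (- x) = nv x"
  using nv_mult[of "-1" x] nv_minus1 by simp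
lemma nv_commute: "nv (x - y) = nv (y - x)"
  by (metis minus_diff_eq nv_uminus)
lemma nv_inverse: "nv (inverse x) = inverse (nv x)"
proof (cases "x = 0")
  case False
  have "nv (inverse x) * nv x = 1" using nv_mult[of "inverse x" x] False by simp
  hence "nv (inverse x) = 1 / nv x" using False by (simp add: eq_divide_eq)
  thus ?thesis by (simp add: inverse_eq_divide)
qed simp
lemma nv_divide: "nv (x / y) = nv x / nv y"
  by (simp add: divide_inverse nv_mult nv_inverse)
lemma nv_power: "nv (x ^ n) = nv x ^ n"
  by (induction n) (simp_all add: nv_mult)
lemma nv_ultra_diff: "nv (x - z) \<le> max (nv (x - y)) (nv (y - z))"
  using nv_ultra[of "x - y" "y - z"] by simp
lemma nv_diff_le: "nv (x - y) \<le> max (nv x) (nv y)"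
  using nv_ultra[of x "- y"] by simp
lemma nv_ultra_le: "nv x \<le> r \<Longrightarrow> nv y \<le> r \<Longrightarrow> nv (x + y) \<le> r"
  using nv_ultra[of x y] by linarith
lemma nv_ultra_less: "nv x < r \<Longrightarrow> nv y < r \<Longrightarrow> nv (x + y) < r"
  using nv_ultra[of x y] by linarith
lemma nv_strict: "nv y < nv x \<Longrightarrow> nv (x + y) = nv x"
proof -
  assume a: "nv y < nv x"
  have "nv (x + y) \<le> nv x" using nv_ultra[of x y] a by simp
  moreover have "nv x \<le> max (nv (x + y)) (nv y)" using nv_ultra[of "x + y" "-y"] by simp
  ultimately show ?thesis using a by linarith
qed

lemma nv_sum_le:
  assumes "finite F" "\<And>i. i \<in> F \<Longrightarrow> nv (f i) \<le> r" "r \<ge> 0"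
  shows "nv (sum f F) \<le> r"
  using assms by (induction F rule: finite_induct) (auto intro!: nv_ultra_le)

lemma nv_of_int: "m \<noteq> 0 \<Longrightarrow> nv (of_int m) = real p powr (- real (multiplicity (int p) m))"
proof -
  assume m: "m \<noteq> 0"
  have "nv (of_int m) = nv (of_rat (of_int m))" by simp
  also have "\<dots> = padic_abs p (of_int m)" by (rule nv_rat)
  also have "\<dots> = real p powr (- real (multiplicity (int p) m))"
    using m by (simp add: padic_abs_def quotient_of_int)
  finally show ?thesis .
qed

lemma nv_of_int_le1: "nv (of_int m) \<le> 1"
proof (cases "m = 0")
  case False
  then show ?thesis using nv_of_int[OF False] p_gt1 ge_one_powr_ge_zero[of "real p" "real (multiplicity (int p) m)"]
    by (simp add: powr_minus inverse_le_1_iff)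
qed simp

lemma nv_of_nat_le1: "nv (of_nat m) \<le> 1"
  using nv_of_int_le1[of "int m"] by simp

lemma nv_of_int_unit: "\<not> int p dvd m \<Longrightarrow> nv (of_int m) = 1"
proof -
  assume a: "\<not> int p dvd m"
  hence m: "m \<noteq> 0" by auto
  have "multiplicity (int p) m = 0" using a by (simp add: not_dvd_imp_multiplicity_0)
  thus ?thesis using nv_of_int[OF m] p_gt1 by simp
qed

lemma nv_p: "nv (of_nat p) = inverse (real p)"
proof -
  have pp: "prime (int p)" using prime_p by simp
  have "multiplicity (int p) (int p) = 1" using pp
    by (simp add: multiplicity_prime)
  hence "nv (of_int (int p)) = real p powr (-1)" using nv_of_int[of "int p"] p_gt1 by simp
  thus ?thesis using p_pos by (simp add: powr_minus)
qed

definition rad :: "nat \<Rightarrow> real" where "rad n = inverse (real p ^ n)"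

lemma rad_pos: "rad n > 0" using p_pos by (simp add: rad_def)
lemma rad_le1: "rad n \<le> 1" using p_gt1 one_le_power[of "real p" n] by (simp add: rad_def inverse_le_1_iff)
lemma rad_0[simp]: "rad 0 = 1" by (simp add: rad_def)
lemma rad_Suc: "rad (Suc n) = rad n / real p" by (simp add: rad_def field_simps)
lemma rad_mono: "m \<le> n \<Longrightarrow> rad n \<le> rad m"
  using p_gt1 by (simp add: rad_def power_increasing)
lemma rad_strict: "m < n \<Longrightarrow> rad n < rad m"
  using p_gt1 by (simp add: rad_def power_strict_increasing)
lemma rad_small: "e > 0 \<Longrightarrow> \<exists>n. rad n < e"
proof -
  assume e: "e > 0"
  have "inverse (real p) < 1" using p_gt1 by (simp add: inverse_less_1_iff)
  then obtain n where "inverse (real p) ^ n < e" using real_arch_pow_inv[OF e] by blast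
  thus ?thesis by (auto simp: rad_def power_inverse)
qed

end


context qp begin

lemma powr_neg_nat: "real p powr (- real k) = rad k"
  using p_pos by (simp add: rad_def powr_minus powr_realpow)

lemma nv_of_int_dvd: "(int p) ^ n dvd m \<Longrightarrow> nv (of_int m) \<le> rad n"
proof (cases "m = 0")
  case False
  assume d: "(int p) ^ n dvd m"
  have pp: "prime (int p)" using prime_p by simp
  have "n \<le> multiplicity (int p) m" using d False pp
    by (metis multiplicity_geI not_prime_unit)
  hence "rad (multiplicity (int p) m) \<le> rad n" by (rule rad_mono)
  thus ?thesis using nv_of_int[OF False] powr_neg_nat by simp
qed (simp add: rad_pos less_imp_le)

lemma nv_of_int_dvd_rev: "nv (of_int m) \<le> rad n \<Longrightarrow> (int p) ^ n dvd m"
proof (cases "m = 0")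
  case False
  assume d: "nv (of_int m) \<le> rad n"
  have pp: "prime (int p)" using prime_p by simp
  have "rad (multiplicity (int p) m) \<le> rad n" using d nv_of_int[OF False] powr_neg_nat by simp
  hence "n \<le> multiplicity (int p) m"
    using rad_strict by (metis not_le)
  thus ?thesis using False pp
    by (metis multiplicity_dvd')
qed simp

lemma nv_of_rat_quot:
  assumes "quotient_of q = (a, b)"
  shows "(of_rat q :: 'k) = of_int a / of_int b"
proof -
  have "q = of_int a / of_int b" by (rule quotient_of_div[OF assms])
  hence "(of_rat q :: 'k) = of_rat (of_int a / of_int b)" by simp
  also have "\<dots> = of_int a / of_int b" by (simp add: of_rat_divide)
  finally show ?thesis .
qed

lemma nv_pos: "x \<noteq> 0 \<Longrightarrow> nv x > 0"
  using nv_nonneg[of x] nv_eq0[of x] by linarith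

lemma nv_close_rat:
  assumes "x \<noteq> 0"
  obtains q where "nv (of_rat q :: 'k) = nv x" "q \<noteq> 0"
proof -
  obtain q where q: "nv (x - of_rat q) < nv x" using nv_dense[of "nv x" x] nv_pos[OF assms] by auto
  have a: "nv x \<le> max (nv (of_rat q)) (nv (x - of_rat q))" using nv_ultra[of "of_rat q" "x - of_rat q"] by simp
  have b: "nv (of_rat q) \<le> max (nv x) (nv (x - of_rat q))" using nv_ultra[of "x" "- (x - of_rat q)"] by (simp only: nv_uminus) simp
  have "nv (of_rat q :: 'k) = nv x" using a b q by linarith
  moreover have "q \<noteq> 0" using calculation assms by auto
  ultimately show ?thesis using that by blast
qed

lemma nv_value_group:
  assumes "x \<noteq> 0"
  shows "\<exists>k::int. nv x = real p powr k"
proof -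
  obtain q where q: "nv (of_rat q :: 'k) = nv x" "q \<noteq> 0" using nv_close_rat assms by blast
  obtain a b where ab: "quotient_of q = (a, b)" by (cases "quotient_of q") auto
  have "nv x = padic_abs p q" using q nv_rat by simp
  also have "\<dots> = real p powr (real (multiplicity (int p) b) - real (multiplicity (int p) a))"
    using q(2) ab by (simp add: padic_abs_def)
  also have "\<dots> = real p powr (real_of_int (int (multiplicity (int p) b) - int (multiplicity (int p) a)))"
    by simp
  finally show ?thesis by blast
qed

lemma nv_le1_rad:
  assumes "x \<noteq> 0" "nv x \<le> 1"
  shows "\<exists>k. nv x = rad k"
proof -
  obtain k::int where k: "nv x = real p powr k" using nv_value_group assms by blast
  have "k \<le> 0"
  proof (rule ccontr)
    assume "\<not> k \<le> 0"
    hence "real p powr 0 < real p powr k" using p_gt1 by (intro powr_less_mono) auto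
    hence "real p powr k > 1" using p_gt1 by simp
    thus False using assms k by simp
  qed
  hence "real p powr k = real p powr (- real (nat (- k)))" by simp
  thus ?thesis using k powr_neg_nat by metis
qed

lemma nv_lt1: "nv x < 1 \<Longrightarrow> nv x \<le> rad 1"
proof (cases "x = 0")
  case False
  assume a: "nv x < 1"
  obtain k where k: "nv x = rad k" using nv_le1_rad[OF False] a by auto
  have "k \<noteq> 0" using k a rad_0 by (metis less_irrefl)
  hence "rad k \<le> rad 1" by (intro rad_mono) simp
  thus ?thesis using k by simp
qed (simp add: rad_pos less_imp_le)

lemma approx_nat:
  assumes "nv x \<le> 1"
  shows "\<exists>r::nat. r < p ^ n \<and> nv (x - of_nat r) \<le> rad n"
proof -
  obtain q where q: "nv (x - of_rat q) < rad n" using nv_dense[of "rad n" x] rad_pos by auto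
  have qle: "nv (of_rat q :: 'k) \<le> 1"
    using nv_diff_le[of x "x - of_rat q"] q rad_le1[of n] assms by simp
  obtain a b where ab: "quotient_of q = (a, b)" by (cases "quotient_of q") auto
  have bpos: "b > 0" using quotient_of_denom_pos[OF ab] .
  have cop: "coprime a b" using quotient_of_coprime[OF ab] .
  have qab: "(of_rat q :: 'k) = of_int a / of_int b" using nv_of_rat_quot[OF ab] .
  have pp: "prime (int p)" using prime_p by simp
  have nb: "\<not> int p dvd b"
  proof
    assume pb: "int p dvd b"
    hence "\<not> int p dvd a" using cop pp
      by (metis coprime_common_divisor not_prime_unit)
    hence na: "nv (of_int a :: 'k) = 1" by (rule nv_of_int_unit)
    have "nv (of_int b :: 'k) \<le> rad 1" using nv_of_int_dvd[of 1 b] pb by simp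
    moreover have "nv (of_int b :: 'k) > 0" using bpos by (intro nv_pos) simp
    moreover have "rad 1 < 1" using rad_strict[of 0 1] by simp
    ultimately have "nv (of_rat q :: 'k) > 1" using qab na by (simp add: nv_divide)
    thus False using qle by simp
  qed
  have nbv: "nv (of_int b :: 'k) = 1" by (rule nv_of_int_unit[OF nb])
  have "coprime b (int p ^ n)" using nb pp
    by (metis coprime_commute coprime_power_right_iff prime_imp_coprime)
  then obtain u v where uv: "u * b + v * (int p ^ n) = 1"
    using bezout_int[of b "int p ^ n"] by (auto simp: coprime_iff_gcd_eq_1)
  define k where "k = (a * u) mod (int p ^ n)"
  have kge: "k \<ge> 0" and klt: "k < int p ^ n" using p_gt1 by (auto simp: k_def)
  have "int p ^ n dvd (a - k * b)"
  proof -
    have "int p ^ n dvd (a * u - k)" unfolding k_def by (simp add: mod_eq_dvd_iff[symmetric] mod_diff_eq[symmetric]) 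
    hence "int p ^ n dvd (a * u - k) * b" by simp
    moreover have "a - k * b = (a * u - k) * b + a * v * int p ^ n"
    proof -
      have "a = a * (u * b + v * (int p ^ n))" using uv by simp
      thus ?thesis by (simp add: algebra_simps)
    qed
    ultimately show ?thesis by simp
  qed
  hence "nv (of_int (a - k * b) :: 'k) \<le> rad n" by (rule nv_of_int_dvd)
  moreover have "(of_rat q :: 'k) - of_int k = of_int (a - k * b) / of_int b"
    using qab bpos by (simp add: field_simps)
  ultimately have "nv ((of_rat q :: 'k) - of_int k) \<le> rad n" using nbv by (simp add: nv_divide)
  moreover have "(of_int k :: 'k) = of_nat (nat k)" using kge by simp
  ultimately have c: "nv ((of_rat q :: 'k) - of_nat (nat k)) \<le> rad n" by simp
  have "nv (x - of_nat (nat k)) \<le> rad n"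
    using nv_ultra_diff[of x "of_nat (nat k)" "of_rat q"] c q by simp
  moreover have "nat k < p ^ n" using klt kge
    by (metis nat_less_iff of_nat_power)
  ultimately show ?thesis by blast
qed

end


context qp begin

lemma in_Zp[simp]: "x \<in> Zp nv \<longleftrightarrow> nv x \<le> 1" by (simp add: Zp_def)

lemma Zp_add: "x \<in> Zp nv \<Longrightarrow> y \<in> Zp nv \<Longrightarrow> x + y \<in> Zp nv"
  by (simp add: nv_ultra_le)
lemma Zp_mult: "x \<in> Zp nv \<Longrightarrow> y \<in> Zp nv \<Longrightarrow> x * y \<in> Zp nv"
  by (simp add: nv_mult mult_le_one)

interpretation nvm: Metric_space UNIV "\<lambda>x y. nv (x - y)"
proof
  fix x y z :: 'k
  show "0 \<le> nv (x - y)" by simp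
  show "nv (x - y) = nv (y - x)" by (rule nv_commute)
  show "(nv (x - y) = 0) = (x = y)" by simp
  show "nv (x - z) \<le> nv (x - y) + nv (y - z)"
    using nv_ultra_diff[of x z y] nv_nonneg[of "x - y"] nv_nonneg[of "y - z"] by linarith
qed

lemma Zp_totally_bounded: "nvm.mtotally_bounded (Zp nv)"
  unfolding nvm.mtotally_bounded_def
proof (intro allI impI)
  fix e :: real assume e: "e > 0"
  obtain n where n: "rad n < e" using rad_small[OF e] by blast
  let ?K = "(of_nat :: nat \<Rightarrow> 'k) ` {..<p ^ n}"
  have "Zp nv \<subseteq> (\<Union>x\<in>?K. nvm.mball x e)"
  proof
    fix y assume y: "y \<in> Zp nv"
    obtain r where r: "r < p ^ n" "nv (y - of_nat r) \<le> rad n" using approx_nat[of y n] y by auto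
    hence "y \<in> nvm.mball (of_nat r) e" using n by (simp add: nvm.mball_def nv_commute)
    thus "y \<in> (\<Union>x\<in>?K. nvm.mball x e)" using r by blast
  qed
  moreover have "?K \<subseteq> Zp nv" using nv_of_nat_le1 by auto
  moreover have "finite ?K" by (rule finite_imageI) simp
  ultimately have "finite ?K \<and> ?K \<subseteq> Zp nv \<and> Zp nv \<subseteq> (\<Union>x\<in>?K. nvm.mball x e)"
    by (intro conjI)
  thus "\<exists>K. finite K \<and> K \<subseteq> Zp nv \<and> Zp nv \<subseteq> (\<Union>x\<in>K. nvm.mball x e)"
    by (rule exI)
qed

lemma Zp_seq_compact:
  fixes \<sigma> :: "nat \<Rightarrow> 'k"
  assumes "\<And>n. \<sigma> n \<in> Zp nv"
  obtains r :: "nat \<Rightarrow> nat" and l where "strict_mono r" "l \<in> Zp nv" "\<And>e. e > 0 \<Longrightarrow> \<exists>N. \<forall>n\<ge>N. nv (\<sigma> (r n) - l) < e"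
proof -
  have "range \<sigma> \<subseteq> Zp nv" using assms by auto
  moreover have "\<forall>\<sigma>' :: nat \<Rightarrow> 'k. range \<sigma>' \<subseteq> Zp nv \<longrightarrow> (\<exists>r. strict_mono r \<and> nvm.MCauchy (\<sigma>' \<circ> r))"
    using Zp_totally_bounded unfolding nvm.mtotally_bounded_sequentially by (elim conjE) assumption
  ultimately have "\<exists>r. strict_mono r \<and> nvm.MCauchy (\<sigma> \<circ> r)" by (elim allE impE)
  then obtain r where r: "strict_mono r" "nvm.MCauchy (\<sigma> \<circ> r)" by (elim exE conjE)
  have "\<forall>e>0. \<exists>N. \<forall>m\<ge>N. \<forall>n\<ge>N. nv (\<sigma> (r m) - \<sigma> (r n)) < e"
    using r(2) unfolding nvm.MCauchy_def by auto
  then obtain l where l: "\<forall>e>0. \<exists>N. \<forall>n\<ge>N. nv (\<sigma> (r n) - l) < e"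
    using nv_complete[of "\<lambda>n. \<sigma> (r n)"] by auto
  obtain N where N: "\<forall>n\<ge>N. nv (\<sigma> (r n) - l) < 1" using l by force
  have "nv l \<le> max (nv (l - \<sigma> (r N))) (nv (\<sigma> (r N)))"
    using nv_ultra[of "l - \<sigma> (r N)" "\<sigma> (r N)"] by simp
  also have "\<dots> \<le> 1" using N[rule_format, of N] assms[of "r N"] by (simp add: nv_commute)
  finally have "l \<in> Zp nv" by simp
  thus ?thesis using that[of r l] r(1) l by simp
qed

definition bnd :: "('k \<Rightarrow> 'k) \<Rightarrow> bool" where
  "bnd f \<longleftrightarrow> (\<exists>B. \<forall>x\<in>Zp nv. nv (f x) \<le> B)"

lemma Ccarrier_bnd:
  assumes f: "f \<in> Ccarrier nv"
  shows "bnd f"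
proof (rule ccontr)
  assume "\<not> bnd f"
  hence "\<forall>B. \<exists>x\<in>Zp nv. nv (f x) > B" unfolding bnd_def
    by (simp add: not_le del: in_Zp)
  hence "\<forall>n::nat. \<exists>x. x \<in> Zp nv \<and> nv (f x) > real n" by blast
  then obtain \<sigma> where s0: "\<forall>n. \<sigma> n \<in> Zp nv \<and> nv (f (\<sigma> n)) > real n"
    by (rule choice[THEN exE]) 
  have s: "\<And>n. \<sigma> n \<in> Zp nv" "\<And>n. nv (f (\<sigma> n)) > real n" using s0 by auto
  obtain r :: "nat \<Rightarrow> nat" and l where rl: "strict_mono r" "l \<in> Zp nv" "\<And>e. e > 0 \<Longrightarrow> \<exists>N. \<forall>n\<ge>N. nv (\<sigma> (r n) - l) < e"
    using Zp_seq_compact[of \<sigma>, OF s(1)] by metis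
  have cont: "\<forall>e>0. \<exists>d>0. \<forall>y\<in>Zp nv. nv (y - l) < d \<longrightarrow> nv (f y - f l) < e"
    using f rl(2) unfolding Ccarrier_def by blast
  obtain d where d: "d > 0" "\<forall>y\<in>Zp nv. nv (y - l) < d \<longrightarrow> nv (f y - f l) < 1"
    using cont by (meson zero_less_one)
  obtain N :: nat where N: "\<forall>n\<ge>N. nv (\<sigma> (r n) - l) < d" using rl(3)[OF d(1)] by blast
  obtain n0 :: nat where n0: "real n0 > max 1 (nv (f l))"
    using reals_Archimedean2 by blast
  define n where "n = max N n0"
  have n: "n \<ge> N" "real n > max 1 (nv (f l))" using n0 unfolding n_def by auto
  have "n \<le> r n" using rl(1) by (rule strict_mono_imp_increasing)
  have 1: "nv (f (\<sigma> (r n)) - f l) < 1" using d(2) N n(1) s(1) by blast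
  have "nv (f (\<sigma> (r n))) \<le> max (nv (f (\<sigma> (r n)) - f l)) (nv (f l))"
    using nv_ultra[of "f (\<sigma> (r n)) - f l" "f l"] by simp
  also have "\<dots> \<le> max 1 (nv (f l))" using 1 by simp
  also have "\<dots> < real n" using n by simp
  also have "\<dots> \<le> real (r n)" using \<open>n \<le> r n\<close> by simp
  also have "\<dots> < nv (f (\<sigma> (r n)))" using s(2) by simp
  finally have "nv (f (\<sigma> (r n))) < nv (f (\<sigma> (r n)))" .
  thus False by simp
qed

lemma Zp_ne: "Zp nv \<noteq> {}" using in_Zp[of 0] by (metis empty_iff nv_0 zero_le_one)

lemma bnd_bdd: "bnd f \<Longrightarrow> bdd_above ((\<lambda>x. nv (f x)) ` Zp nv)"
  unfolding bnd_def bdd_above_def by auto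

lemma supnorm_ge: "bnd f \<Longrightarrow> x \<in> Zp nv \<Longrightarrow> nv (f x) \<le> supnorm nv f"
  unfolding supnorm_def by (rule cSUP_upper) (auto simp: bnd_bdd)

lemma supnorm_le: "(\<And>x. x \<in> Zp nv \<Longrightarrow> nv (f x) \<le> r) \<Longrightarrow> supnorm nv f \<le> r"
  unfolding supnorm_def using Zp_ne by (rule cSUP_least) auto

lemma supnorm_nonneg: "bnd f \<Longrightarrow> supnorm nv f \<ge> 0"
  using supnorm_ge[of f 0] nv_nonneg[of "f 0"] by (simp del: nv_nonneg)

lemma bnd_add: "bnd f \<Longrightarrow> bnd g \<Longrightarrow> bnd (\<lambda>x. f x + g x)"
proof -
  assume "bnd f" "bnd g"
  then obtain B C where B: "\<forall>x\<in>Zp nv. nv (f x) \<le> B" and C: "\<forall>x\<in>Zp nv. nv (g x) \<le> C"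
    unfolding bnd_def by blast
  have "\<forall>x\<in>Zp nv. nv (f x + g x) \<le> max B C"
  proof
    fix x assume "x \<in> Zp nv"
    hence "nv (f x) \<le> max B C" "nv (g x) \<le> max B C" using B C by (auto simp: le_max_iff_disj)
    thus "nv (f x + g x) \<le> max B C" by (rule nv_ultra_le)
  qed
  thus ?thesis unfolding bnd_def by blast
qed
lemma bnd_smult: "bnd f \<Longrightarrow> bnd (\<lambda>x. c * f x)"
proof -
  assume "bnd f"
  then obtain B where B: "\<forall>x\<in>Zp nv. nv (f x) \<le> B" unfolding bnd_def by blast
  have "\<forall>x\<in>Zp nv. nv (c * f x) \<le> nv c * B"
    using B by (simp add: nv_mult mult_left_mono)
  thus ?thesis unfolding bnd_def by blast
qed
lemma bnd_uminus: "bnd f \<Longrightarrow> bnd (\<lambda>x. - f x)"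
  unfolding bnd_def by simp
lemma bnd_diff: "bnd f \<Longrightarrow> bnd g \<Longrightarrow> bnd (\<lambda>x. f x - g x)"
  using bnd_add[of f "\<lambda>x. - g x"] bnd_uminus[of g] by simp

lemma supnorm_ultra:
  assumes "bnd f" "bnd g"
  shows "supnorm nv (\<lambda>x. f x + g x) \<le> max (supnorm nv f) (supnorm nv g)"
proof (rule supnorm_le)
  fix x assume x: "x \<in> Zp nv"
  have "nv (f x + g x) \<le> max (nv (f x)) (nv (g x))" by (rule nv_ultra)
  also have "\<dots> \<le> max (supnorm nv f) (supnorm nv g)"
    using supnorm_ge[OF assms(1) x] supnorm_ge[OF assms(2) x] by (rule max.mono)
  finally show "nv (f x + g x) \<le> max (supnorm nv f) (supnorm nv g)" .
qed

lemma supnorm_ultra_diff: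
  assumes "bnd f" "bnd g" "bnd h"
  shows "supnorm nv (\<lambda>x. f x - h x) \<le> max (supnorm nv (\<lambda>x. f x - g x)) (supnorm nv (\<lambda>x. g x - h x))"
  using supnorm_ultra[OF bnd_diff[OF assms(1,2)] bnd_diff[OF assms(2,3)]] by simp

lemma supnorm_commute: "supnorm nv (\<lambda>x. f x - g x) = supnorm nv (\<lambda>x. g x - f x)"
  unfolding supnorm_def by (simp add: nv_commute)

lemma supnorm_smult:
  assumes "bnd f"
  shows "supnorm nv (\<lambda>x. c * f x) = nv c * supnorm nv f"
proof (cases "c = 0")
  case True
  have "supnorm nv (\<lambda>x. c * f x) = 0" unfolding supnorm_def using True Zp_ne by simp
  thus ?thesis using True by simp
next
  case False
  have "supnorm nv (\<lambda>x. c * f x) \<le> nv c * supnorm nv f"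
    by (rule supnorm_le) (simp add: nv_mult supnorm_ge[OF assms] mult_left_mono)
  moreover have "supnorm nv f \<le> supnorm nv (\<lambda>x. c * f x) / nv c"
  proof (rule supnorm_le)
    fix x assume x: "x \<in> Zp nv"
    have "nv (c * f x) \<le> supnorm nv (\<lambda>x. c * f x)" using supnorm_ge[OF bnd_smult[OF assms] x] .
    thus "nv (f x) \<le> supnorm nv (\<lambda>x. c * f x) / nv c" using nv_pos[OF False]
      by (simp add: nv_mult pos_le_divide_eq mult.commute)
  qed
  ultimately show ?thesis using nv_pos[OF False] by (simp add: pos_le_divide_eq mult.commute)
qed

lemma supnorm_zero: "bnd f \<Longrightarrow> supnorm nv f = 0 \<Longrightarrow> x \<in> Zp nv \<Longrightarrow> f x = 0"
  using supnorm_ge[of f x] nv_nonneg[of "f x"] by simp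

lemma supnorm_const_zero: "supnorm nv (\<lambda>x. 0) = 0"
  unfolding supnorm_def using Zp_ne by simp

end


context qp begin

lemma cc_bnd: "g \<in> Ccarrier nv \<Longrightarrow> bnd g" by (rule Ccarrier_bnd)

lemma cc_zero_out: "g \<in> Ccarrier nv \<Longrightarrow> x \<notin> Zp nv \<Longrightarrow> g x = 0"
  unfolding Ccarrier_def by blast

lemma cc_cont: "g \<in> Ccarrier nv \<Longrightarrow> x \<in> Zp nv \<Longrightarrow> e > 0 \<Longrightarrow>
   \<exists>d>0. \<forall>y\<in>Zp nv. nv (y - x) < d \<longrightarrow> nv (g y - g x) < e"
  unfolding Ccarrier_def by blast

lemma ccI:
  assumes "\<And>x e. x \<in> Zp nv \<Longrightarrow> e > 0 \<Longrightarrow> \<exists>d>0. \<forall>y\<in>Zp nv. nv (y - x) < d \<longrightarrow> nv (g y - g x) < e"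
    and "\<And>x. x \<notin> Zp nv \<Longrightarrow> g x = 0"
  shows "g \<in> Ccarrier nv"
  using assms unfolding Ccarrier_def by blast

lemma cc_add: 
  assumes "g \<in> Ccarrier nv" "h \<in> Ccarrier nv"
  shows "(\<lambda>x. g x + h x) \<in> Ccarrier nv"
proof (rule ccI)
  fix x e assume x: "x \<in> Zp nv" and e: "(e::real) > 0"
  obtain d1 where d1: "d1 > 0" "\<forall>y\<in>Zp nv. nv (y - x) < d1 \<longrightarrow> nv (g y - g x) < e"
    using cc_cont[OF assms(1) x e] by blast
  obtain d2 where d2: "d2 > 0" "\<forall>y\<in>Zp nv. nv (y - x) < d2 \<longrightarrow> nv (h y - h x) < e"
    using cc_cont[OF assms(2) x e] by blast
  show "\<exists>d>0. \<forall>y\<in>Zp nv. nv (y - x) < d \<longrightarrow> nv ((g y + h y) - (g x + h x)) < e"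
  proof (intro exI[of _ "min d1 d2"] conjI ballI impI)
    fix y assume "y \<in> Zp nv" "nv (y - x) < min d1 d2"
    hence "nv (g y - g x) < e" "nv (h y - h x) < e" using d1 d2 by auto
    hence "nv ((g y - g x) + (h y - h x)) < e" by (rule nv_ultra_less)
    thus "nv ((g y + h y) - (g x + h x)) < e" by (simp add: algebra_simps)
  qed (use d1 d2 in auto)
next
  fix x assume "x \<notin> Zp nv" thus "g x + h x = 0" using cc_zero_out[OF assms(1)] cc_zero_out[OF assms(2)] by (simp del: in_Zp)
qed

lemma cc_smult:
  assumes "g \<in> Ccarrier nv"
  shows "(\<lambda>x. c * g x) \<in> Ccarrier nv"
proof (cases "c = 0")
  case True
  show ?thesis by (rule ccI) (auto simp: True intro: exI[of _ 1])
next
  case False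
  show ?thesis
  proof (rule ccI)
    fix x e assume x: "x \<in> Zp nv" and e: "(e::real) > 0"
    have e': "e / nv c > 0" using e nv_pos[OF False] by simp
    obtain d where d: "d > 0" "\<forall>y\<in>Zp nv. nv (y - x) < d \<longrightarrow> nv (g y - g x) < e / nv c"
      using cc_cont[OF assms x e'] by blast
    show "\<exists>d>0. \<forall>y\<in>Zp nv. nv (y - x) < d \<longrightarrow> nv (c * g y - c * g x) < e"
    proof (intro exI[of _ d] conjI ballI impI)
      fix y assume "y \<in> Zp nv" "nv (y - x) < d"
      hence "nv (g y - g x) < e / nv c" using d by auto
      hence "nv c * nv (g y - g x) < e" using nv_pos[OF False] by (simp add: field_simps)
      thus "nv (c * g y - c * g x) < e" by (simp add: nv_mult right_diff_distrib[symmetric])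
    qed (use d in auto)
  next
    fix x assume "x \<notin> Zp nv" thus "c * g x = 0" using cc_zero_out[OF assms(1)] by (simp del: in_Zp)
  qed
qed

lemma cc_diff: "g \<in> Ccarrier nv \<Longrightarrow> h \<in> Ccarrier nv \<Longrightarrow> (\<lambda>x. g x - h x) \<in> Ccarrier nv"
  using cc_add[of g "\<lambda>x. (-1) * h x"] cc_smult[of h "-1"] by simp

lemma cc_zero: "(\<lambda>x. 0) \<in> Ccarrier nv"
  by (rule ccI) (auto intro: exI[of _ 1])

lemma cc_sum:
  assumes "finite I" "\<And>i. i \<in> I \<Longrightarrow> g i \<in> Ccarrier nv"
  shows "(\<lambda>x. \<Sum>i\<in>I. c i * g i x) \<in> Ccarrier nv"
  using assms
proof (induction I rule: finite_induct)
  case empty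
  then show ?case using cc_zero by simp
next
  case (insert i I)
  have "(\<lambda>x. c i * g i x + (\<Sum>i\<in>I. c i * g i x)) \<in> Ccarrier nv"
    using insert by (intro cc_add cc_smult) auto
  thus ?case using insert by simp
qed

lemma cc_const: "(\<lambda>x. if x \<in> Zp nv then c else 0) \<in> Ccarrier nv"
  by (rule ccI) (auto intro: exI[of _ 1])

lemma cc_id: "(\<lambda>x. if x \<in> Zp nv then x + c else 0) \<in> Ccarrier nv"
proof (rule ccI)
  fix x e assume "x \<in> Zp nv" "(e::real) > 0"
  thus "\<exists>d>0. \<forall>y\<in>Zp nv. nv (y - x) < d \<longrightarrow>
      nv ((if y \<in> Zp nv then y + c else 0) - (if x \<in> Zp nv then x + c else 0)) < e"
    by (intro exI[of _ e]) auto
qed simp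

definition cball :: "('k \<Rightarrow> 'k) \<Rightarrow> real \<Rightarrow> ('k \<Rightarrow> 'k) set" where
  "cball d r = {h \<in> Ccarrier nv. supnorm nv (\<lambda>x. h x - d x) < r}"

lemma cball_open:
  assumes d: "d \<in> Ccarrier nv"
  shows "C_open nv (cball d r)"
  unfolding C_open_def
proof (intro conjI ballI)
  show "cball d r \<subseteq> Ccarrier nv" unfolding cball_def by auto
  fix g assume g: "g \<in> cball d r"
  hence gc: "g \<in> Ccarrier nv" and gr: "supnorm nv (\<lambda>x. g x - d x) < r" unfolding cball_def by auto
  have "0 \<le> supnorm nv (\<lambda>x. g x - d x)" by (intro supnorm_nonneg bnd_diff cc_bnd gc d)
  hence r: "r > 0" using gr by linarith
  show "\<exists>e>0. \<forall>h\<in>Ccarrier nv. supnorm nv (\<lambda>x. h x - g x) < e \<longrightarrow> h \<in> cball d r"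
  proof (intro exI[of _ r] conjI ballI impI r)
    fix h assume h: "h \<in> Ccarrier nv" "supnorm nv (\<lambda>x. h x - g x) < r"
    have "supnorm nv (\<lambda>x. h x - d x) \<le> max (supnorm nv (\<lambda>x. h x - g x)) (supnorm nv (\<lambda>x. g x - d x))"
      by (intro supnorm_ultra_diff cc_bnd h gc d)
    also have "\<dots> < r" using h gr by simp
    finally show "h \<in> cball d r" using h unfolding cball_def by simp
  qed
qed

lemma sets_Cborel: "sets (Cborel nv) = sigma_sets (Ccarrier nv) (Collect (C_open nv))"
  unfolding Cborel_def by (rule sets_measure_of) (auto simp: C_open_def)

lemma space_Cborel: "space (Cborel nv) = Ccarrier nv"
  unfolding Cborel_def by (rule space_measure_of) (auto simp: C_open_def)

lemma cball_sets: "d \<in> Ccarrier nv \<Longrightarrow> cball d r \<in> sets (Cborel nv)"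
  unfolding sets_Cborel using cball_open by (auto intro: sigma_sets.Basic)

lemma C_open_sets: "C_open nv U \<Longrightarrow> U \<in> sets (Cborel nv)"
  unfolding sets_Cborel by (auto intro: sigma_sets.Basic)

end

locale qpb = qp p nv for p :: nat and nv :: "'k::field_char_0 \<Rightarrow> real" +
  fixes f :: "nat \<Rightarrow> 'k \<Rightarrow> 'k"
  assumes onb: "orthonormal_basis_C nv f"
begin

lemma f_cc: "f n \<in> Ccarrier nv" using onb unfolding orthonormal_basis_C_def orthonormal_seq_C_def by blast

lemma f_orth: "finite I \<Longrightarrow> I \<noteq> {} \<Longrightarrow>
   supnorm nv (\<lambda>x. \<Sum>i\<in>I. a i * f i x) = Max ((\<lambda>i. nv (a i)) ` I)"
  using onb unfolding orthonormal_basis_C_def orthonormal_seq_C_def by blast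

lemma f_dense: "g \<in> Ccarrier nv \<Longrightarrow> e > 0 \<Longrightarrow> \<exists>I a. finite I \<and> supnorm nv (\<lambda>x. g x - (\<Sum>i\<in>I. a i * f i x)) < e"
  using onb unfolding orthonormal_basis_C_def by blast

definition Dset :: "('k \<Rightarrow> 'k) set" where
  "Dset = (\<lambda>qs. \<lambda>x. \<Sum>i<length qs. of_rat (qs ! i) * f i x) ` UNIV"

lemma Dset_countable: "countable Dset"
  unfolding Dset_def by simp

lemma Dset_cc: "d \<in> Dset \<Longrightarrow> d \<in> Ccarrier nv"
  unfolding Dset_def using f_cc by (auto intro!: cc_sum)

lemma sum_extend:
  assumes "finite I" "I \<subseteq> {..<n}"
  shows "(\<Sum>i\<in>I. a i * f i x) = (\<Sum>i<n. (if i \<in> I then a i else 0) * f i x)"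
proof -
  have "(\<Sum>i<n. (if i \<in> I then a i else 0) * f i x) = (\<Sum>i\<in>{..<n} \<inter> I. a i * f i x)"
    by (simp add: sum.inter_restrict if_distrib[of "\<lambda>t. t * f _ x"] cong: if_cong)
  also have "{..<n} \<inter> I = I" using assms by auto
  finally show ?thesis by simp
qed

lemma Dset_dense:
  assumes g: "g \<in> Ccarrier nv" and e: "e > 0"
  shows "\<exists>d\<in>Dset. supnorm nv (\<lambda>x. g x - d x) < e"
proof -
  obtain I a where Ia: "finite I" "supnorm nv (\<lambda>x. g x - (\<Sum>i\<in>I. a i * f i x)) < e"
    using f_dense[OF g e] by blast
  define n where "n = Suc (Max (insert 0 I))"
  have In: "I \<subseteq> {..<n}" using Ia(1) unfolding n_def by (auto simp: less_Suc_eq_le)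
  define b where "b i = (if i \<in> I then a i else 0)" for i
  have "\<forall>i. \<exists>q. nv (b i - of_rat q) < e" using nv_dense e by blast
  then obtain Q where Q: "\<And>i. nv (b i - of_rat (Q i)) < e" by metis
  define qs where "qs = map Q [0..<n]"
  define d where "d = (\<lambda>x. \<Sum>i<length qs. of_rat (qs ! i) * f i x)"
  have dD: "d \<in> Dset" unfolding Dset_def d_def by blast
  have d_eq: "d x = (\<Sum>i<n. of_rat (Q i) * f i x)" for x
    unfolding d_def qs_def by (intro sum.cong) auto
  have s_eq: "(\<Sum>i\<in>I. a i * f i x) = (\<Sum>i<n. b i * f i x)" for x
    unfolding b_def by (rule sum_extend[OF Ia(1) In])
  have bcc: "(\<lambda>x. \<Sum>i<n. b i * f i x) \<in> Ccarrier nv" using f_cc by (intro cc_sum) auto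
  have dcc: "d \<in> Ccarrier nv" using Dset_cc[OF dD] .
  have 1: "supnorm nv (\<lambda>x. g x - (\<Sum>i<n. b i * f i x)) < e" using Ia(2) s_eq by simp
  have 2: "supnorm nv (\<lambda>x. (\<Sum>i<n. b i * f i x) - d x) < e"
  proof -
    have "(\<lambda>x. (\<Sum>i<n. b i * f i x) - d x) = (\<lambda>x. \<Sum>i<n. (b i - of_rat (Q i)) * f i x)"
      by (auto simp: d_eq sum_subtractf[symmetric] left_diff_distrib)
    moreover have "supnorm nv (\<lambda>x. \<Sum>i<n. (b i - of_rat (Q i)) * f i x) < e"
    proof -
      have "n > 0" unfolding n_def by simp
      hence "supnorm nv (\<lambda>x. \<Sum>i<n. (b i - of_rat (Q i)) * f i x) = Max ((\<lambda>i. nv (b i - of_rat (Q i))) ` {..<n})"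
        by (intro f_orth) auto
      also have "\<dots> < e" using Q \<open>n > 0\<close> by (subst Max_less_iff) auto
      finally show ?thesis .
    qed
    ultimately show ?thesis by simp
  qed
  have "supnorm nv (\<lambda>x. g x - d x) \<le> max (supnorm nv (\<lambda>x. g x - (\<Sum>i<n. b i * f i x))) (supnorm nv (\<lambda>x. (\<Sum>i<n. b i * f i x) - d x))"
    by (intro supnorm_ultra_diff cc_bnd g bcc dcc)
  also have "\<dots> < e" using 1 2 by simp
  finally show ?thesis using dD by blast
qed

definition C2open :: "(('k \<Rightarrow> 'k) \<times> ('k \<Rightarrow> 'k)) set \<Rightarrow> bool" where
  "C2open W \<longleftrightarrow> W \<subseteq> Ccarrier nv \<times> Ccarrier nv \<and>
    (\<forall>g h. (g, h) \<in> W \<longrightarrow> (\<exists>e>0. \<forall>g'\<in>Ccarrier nv. \<forall>h'\<in>Ccarrier nv.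
        supnorm nv (\<lambda>x. g' x - g x) < e \<longrightarrow> supnorm nv (\<lambda>x. h' x - h x) < e \<longrightarrow> (g', h') \<in> W))"

lemma C2open_sets:
  assumes W: "C2open W"
  shows "W \<in> sets (Cborel nv \<Otimes>\<^sub>M Cborel nv)"
proof -
  define B where "B = (\<lambda>(d1, d2, n::nat). cball d1 (1 / Suc n) \<times> cball d2 (1 / Suc n))"
  define J where "J = {(d1, d2, n). d1 \<in> Dset \<and> d2 \<in> Dset \<and> B (d1, d2, n) \<subseteq> W}"
  have cJ: "countable J"
  proof -
    have "J \<subseteq> Dset \<times> Dset \<times> UNIV" unfolding J_def by auto
    moreover have "countable (Dset \<times> Dset \<times> (UNIV :: nat set))" using Dset_countable by simp
    ultimately show ?thesis by (rule countable_subset)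
  qed
  have "W = (\<Union>j\<in>J. B j)"
  proof
    show "(\<Union>j\<in>J. B j) \<subseteq> W" unfolding J_def by auto
    show "W \<subseteq> (\<Union>j\<in>J. B j)"
    proof
      fix z assume z: "z \<in> W"
      obtain g h where gh: "z = (g, h)" by (cases z)
      have gc: "g \<in> Ccarrier nv" and hc: "h \<in> Ccarrier nv" using W z gh unfolding C2open_def by auto
      obtain e where e: "e > 0" "\<forall>g'\<in>Ccarrier nv. \<forall>h'\<in>Ccarrier nv.
        supnorm nv (\<lambda>x. g' x - g x) < e \<longrightarrow> supnorm nv (\<lambda>x. h' x - h x) < e \<longrightarrow> (g', h') \<in> W"
        using W z gh unfolding C2open_def by blast
      obtain n :: nat where n: "1 / Suc n < e" using e(1)
        by (metis nat_approx_posE)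
      define r where "r = 1 / real (Suc n)"
      have r: "r > 0" "r < e" using n unfolding r_def by auto
      obtain d1 where d1: "d1 \<in> Dset" "supnorm nv (\<lambda>x. g x - d1 x) < r" using Dset_dense[OF gc r(1)] by blast
      obtain d2 where d2: "d2 \<in> Dset" "supnorm nv (\<lambda>x. h x - d2 x) < r" using Dset_dense[OF hc r(1)] by blast
      have sub: "B (d1, d2, n) \<subseteq> W"
      proof
        fix w assume w: "w \<in> B (d1, d2, n)"
        obtain g' h' where w': "w = (g', h')" by (cases w)
        have g': "g' \<in> Ccarrier nv" "supnorm nv (\<lambda>x. g' x - d1 x) < r"
          and h': "h' \<in> Ccarrier nv" "supnorm nv (\<lambda>x. h' x - d2 x) < r"
          using w w' unfolding B_def cball_def r_def by auto
        have "supnorm nv (\<lambda>x. g' x - g x) \<le> max (supnorm nv (\<lambda>x. g' x - d1 x)) (supnorm nv (\<lambda>x. d1 x - g x))"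
          by (intro supnorm_ultra_diff cc_bnd g'(1) gc Dset_cc d1(1))
        also have "\<dots> < e" using g'(2) d1(2) r supnorm_commute[of d1 g] by simp
        finally have 1: "supnorm nv (\<lambda>x. g' x - g x) < e" .
        have "supnorm nv (\<lambda>x. h' x - h x) \<le> max (supnorm nv (\<lambda>x. h' x - d2 x)) (supnorm nv (\<lambda>x. d2 x - h x))"
          by (intro supnorm_ultra_diff cc_bnd h'(1) hc Dset_cc d2(1))
        also have "\<dots> < e" using h'(2) d2(2) r supnorm_commute[of d2 h] by simp
        finally have 2: "supnorm nv (\<lambda>x. h' x - h x) < e" .
        show "w \<in> W" using e(2) g'(1) h'(1) 1 2 w' by blast
      qed
      have "z \<in> B (d1, d2, n)" using gh gc hc d1(2) d2(2) unfolding B_def cball_def r_def by auto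
      thus "z \<in> (\<Union>j\<in>J. B j)" using sub d1(1) d2(1) unfolding J_def by blast
    qed
  qed
  also have "\<dots> \<in> sets (Cborel nv \<Otimes>\<^sub>M Cborel nv)"
  proof (rule sets.countable_UN'')
    show "countable J" by (rule cJ)
    fix j assume "j \<in> J"
    then obtain d1 d2 n where j: "j = (d1, d2, n)" "d1 \<in> Dset" "d2 \<in> Dset" unfolding J_def by auto
    show "B j \<in> sets (Cborel nv \<Otimes>\<^sub>M Cborel nv)"
      unfolding j B_def by (auto intro!: pair_measureI cball_sets Dset_cc j)
  qed
  finally show ?thesis .
qed

end


context qp begin
lemma measurable_CborelI:
  assumes "F \<in> space M \<rightarrow> Ccarrier nv"
    and "\<And>U. C_open nv U \<Longrightarrow> F -` U \<inter> space M \<in> sets M"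
  shows "F \<in> measurable M (Cborel nv)"
  unfolding Cborel_def
  by (rule measurable_measure_of) (use assms in \<open>auto simp: C_open_def\<close>)
end

context qpb begin

lemma cont2_meas:
  assumes Fc: "\<And>g h. g \<in> Ccarrier nv \<Longrightarrow> h \<in> Ccarrier nv \<Longrightarrow> F (g, h) \<in> Ccarrier nv"
  and cont: "\<And>g h e. g \<in> Ccarrier nv \<Longrightarrow> h \<in> Ccarrier nv \<Longrightarrow> e > 0 \<Longrightarrow>
     \<exists>d>0. \<forall>g'\<in>Ccarrier nv. \<forall>h'\<in>Ccarrier nv. supnorm nv (\<lambda>x. g' x - g x) < d \<longrightarrow>
        supnorm nv (\<lambda>x. h' x - h x) < d \<longrightarrow> supnorm nv (\<lambda>x. F (g', h') x - F (g, h) x) < e"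
  shows "F \<in> measurable (Cborel nv \<Otimes>\<^sub>M Cborel nv) (Cborel nv)"
proof (rule measurable_CborelI)
  show "F \<in> space (Cborel nv \<Otimes>\<^sub>M Cborel nv) \<rightarrow> Ccarrier nv"
    using Fc by (auto simp: space_pair_measure space_Cborel)
  fix U assume U: "C_open nv U"
  have "C2open (F -` U \<inter> space (Cborel nv \<Otimes>\<^sub>M Cborel nv))"
    unfolding C2open_def
  proof (intro conjI allI impI)
    show "F -` U \<inter> space (Cborel nv \<Otimes>\<^sub>M Cborel nv) \<subseteq> Ccarrier nv \<times> Ccarrier nv"
      by (auto simp: space_pair_measure space_Cborel)
    fix g h assume gh: "(g, h) \<in> F -` U \<inter> space (Cborel nv \<Otimes>\<^sub>M Cborel nv)"
    hence gc: "g \<in> Ccarrier nv" and hc: "h \<in> Ccarrier nv" and FU: "F (g, h) \<in> U"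
      by (auto simp: space_pair_measure space_Cborel)
    obtain e where e: "e > 0" "\<forall>k\<in>Ccarrier nv. supnorm nv (\<lambda>x. k x - F (g, h) x) < e \<longrightarrow> k \<in> U"
      using U FU unfolding C_open_def by blast
    obtain d where d: "d > 0" "\<forall>g'\<in>Ccarrier nv. \<forall>h'\<in>Ccarrier nv. supnorm nv (\<lambda>x. g' x - g x) < d \<longrightarrow>
        supnorm nv (\<lambda>x. h' x - h x) < d \<longrightarrow> supnorm nv (\<lambda>x. F (g', h') x - F (g, h) x) < e"
      using cont[OF gc hc e(1)] by blast
    show "\<exists>e>0. \<forall>g'\<in>Ccarrier nv. \<forall>h'\<in>Ccarrier nv. supnorm nv (\<lambda>x. g' x - g x) < e \<longrightarrow>
        supnorm nv (\<lambda>x. h' x - h x) < e \<longrightarrow> (g', h') \<in> F -` U \<inter> space (Cborel nv \<Otimes>\<^sub>M Cborel nv)"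
    proof (intro exI[of _ d] conjI ballI impI)
      fix g' h' assume g': "g' \<in> Ccarrier nv" and h': "h' \<in> Ccarrier nv"
        and s: "supnorm nv (\<lambda>x. g' x - g x) < d" "supnorm nv (\<lambda>x. h' x - h x) < d"
      have "F (g', h') \<in> U" using e(2) d(2) g' h' s Fc[OF g' h'] by blast
      thus "(g', h') \<in> F -` U \<inter> space (Cborel nv \<Otimes>\<^sub>M Cborel nv)"
        using g' h' by (auto simp: space_pair_measure space_Cborel)
    qed (rule d(1))
  qed
  thus "F -` U \<inter> space (Cborel nv \<Otimes>\<^sub>M Cborel nv) \<in> sets (Cborel nv \<Otimes>\<^sub>M Cborel nv)"
    by (rule C2open_sets)
qed

lemma lin_meas:
  assumes a: "nv a \<le> 1" and b: "nv b \<le> 1"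
  shows "(\<lambda>z. C_add (C_smult a (fst z)) (C_smult b (snd z))) \<in> measurable (Cborel nv \<Otimes>\<^sub>M Cborel nv) (Cborel nv)"
proof (rule cont2_meas)
  fix g h assume gc: "g \<in> Ccarrier nv" and hc: "h \<in> Ccarrier nv"
  show "C_add (C_smult a (fst (g, h))) (C_smult b (snd (g, h))) \<in> Ccarrier nv"
    unfolding C_add_def C_smult_def by (simp add: cc_add cc_smult gc hc)
  fix e :: real assume e: "e > 0"
  show "\<exists>d>0. \<forall>g'\<in>Ccarrier nv. \<forall>h'\<in>Ccarrier nv. supnorm nv (\<lambda>x. g' x - g x) < d \<longrightarrow>
        supnorm nv (\<lambda>x. h' x - h x) < d \<longrightarrow>
        supnorm nv (\<lambda>x. C_add (C_smult a (fst (g', h'))) (C_smult b (snd (g', h'))) x -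
           C_add (C_smult a (fst (g, h))) (C_smult b (snd (g, h))) x) < e"
  proof (intro exI[of _ e] conjI ballI impI e)
    fix g' h' assume g': "g' \<in> Ccarrier nv" and h': "h' \<in> Ccarrier nv"
      and s: "supnorm nv (\<lambda>x. g' x - g x) < e" "supnorm nv (\<lambda>x. h' x - h x) < e"
    have bg: "bnd (\<lambda>x. g' x - g x)" and bh: "bnd (\<lambda>x. h' x - h x)"
      by (intro bnd_diff cc_bnd g' h' gc hc)+
    have eq: "(\<lambda>x. C_add (C_smult a (fst (g', h'))) (C_smult b (snd (g', h'))) x -
           C_add (C_smult a (fst (g, h))) (C_smult b (snd (g, h))) x) =
          (\<lambda>x. a * (g' x - g x) + b * (h' x - h x))"
      unfolding C_add_def C_smult_def by (auto simp: algebra_simps)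
    have "supnorm nv (\<lambda>x. a * (g' x - g x) + b * (h' x - h x)) \<le>
       max (supnorm nv (\<lambda>x. a * (g' x - g x))) (supnorm nv (\<lambda>x. b * (h' x - h x)))"
      by (intro supnorm_ultra bnd_smult bg bh)
    also have "\<dots> = max (nv a * supnorm nv (\<lambda>x. g' x - g x)) (nv b * supnorm nv (\<lambda>x. h' x - h x))"
      by (simp add: supnorm_smult bg bh)
    also have "\<dots> < e"
    proof -
      have "nv a * supnorm nv (\<lambda>x. g' x - g x) \<le> supnorm nv (\<lambda>x. g' x - g x)"
        using a supnorm_nonneg[OF bg] by (simp add: mult_left_le_one_le)
      moreover have "nv b * supnorm nv (\<lambda>x. h' x - h x) \<le> supnorm nv (\<lambda>x. h' x - h x)"
        using b supnorm_nonneg[OF bh] by (simp add: mult_left_le_one_le)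
      ultimately show ?thesis using s by simp
    qed
    finally show "supnorm nv (\<lambda>x. C_add (C_smult a (fst (g', h'))) (C_smult b (snd (g', h'))) x -
           C_add (C_smult a (fst (g, h))) (C_smult b (snd (g, h))) x) < e" using eq by simp
  qed
qed

lemma onp_le1:
  assumes "orthonormal_pair nv a11 a12 a21 a22"
  shows "nv a11 \<le> 1" "nv a12 \<le> 1" "nv a21 \<le> 1" "nv a22 \<le> 1"
proof -
  have "max (nv a11) (nv a12) = 1" using assms[unfolded orthonormal_pair_def, rule_format, of 1 0] by simp
  moreover have "max (nv a21) (nv a22) = 1" using assms[unfolded orthonormal_pair_def, rule_format, of 0 1] by simp
  ultimately show "nv a11 \<le> 1" "nv a12 \<le> 1" "nv a21 \<le> 1" "nv a22 \<le> 1" by linarith+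
qed

lemma gmap_meas:
  assumes "orthonormal_pair nv a11 a12 a21 a22"
  shows "(\<lambda>(x, y). (C_add (C_smult a11 x) (C_smult a12 y), C_add (C_smult a21 x) (C_smult a22 y)))
     \<in> measurable (Cborel nv \<Otimes>\<^sub>M Cborel nv) (Cborel nv \<Otimes>\<^sub>M Cborel nv)"
proof -
  have "(\<lambda>z. (C_add (C_smult a11 (fst z)) (C_smult a12 (snd z)), C_add (C_smult a21 (fst z)) (C_smult a22 (snd z))))
     \<in> measurable (Cborel nv \<Otimes>\<^sub>M Cborel nv) (Cborel nv \<Otimes>\<^sub>M Cborel nv)"
    using onp_le1[OF assms] by (intro measurable_Pair lin_meas) auto
  thus ?thesis by (simp add: case_prod_beta')
qed

end

context qp begin

lemma space_Kborel[simp]: "space (Kborel nv) = UNIV"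
  unfolding Kborel_def by (rule space_measure_of) auto

lemma sets_Kborel: "sets (Kborel nv) = sigma_sets UNIV (Collect (nv_open nv))"
  unfolding Kborel_def by (rule sets_measure_of) auto

lemma nv_open_sets: "nv_open nv U \<Longrightarrow> U \<in> sets (Kborel nv)"
  unfolding sets_Kborel by (auto intro: sigma_sets.Basic)

definition oball :: "'k \<Rightarrow> real \<Rightarrow> 'k set" where
  "oball c r = {y. nv (y - c) < r}"

lemma oball_open: "nv_open nv (oball c r)"
  unfolding nv_open_def oball_def
proof (intro ballI)
  fix x assume x: "x \<in> {y. nv (y - c) < r}"
  show "\<exists>e>0. \<forall>y. nv (y - x) < e \<longrightarrow> y \<in> {y. nv (y - c) < r}"
  proof (intro exI[of _ "r - nv (x - c)"] conjI allI impI)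
    show "r - nv (x - c) > 0" using x by simp
    fix y assume yx: "nv (y - x) < r - nv (x - c)"
    have "nv (y - x) < r" using yx nv_nonneg[of "x - c"] by linarith
    moreover have "nv (y - c) \<le> max (nv (y - x)) (nv (x - c))" by (rule nv_ultra_diff)
    ultimately show "y \<in> {y. nv (y - c) < r}" using x by (auto simp: max_def split: if_splits)
  qed
qed

lemma oball_sets: "oball c r \<in> sets (Kborel nv)"
  by (rule nv_open_sets[OF oball_open])

definition K2open :: "('k \<times> 'k) set \<Rightarrow> bool" where
  "K2open W \<longleftrightarrow> (\<forall>a b. (a, b) \<in> W \<longrightarrow> (\<exists>e>0. \<forall>a' b'. nv (a' - a) < e \<longrightarrow> nv (b' - b) < e \<longrightarrow> (a', b') \<in> W))"

lemma K2open_sets: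
  assumes W: "K2open W"
  shows "W \<in> sets (Kborel nv \<Otimes>\<^sub>M Kborel nv)"
proof -
  define B where "B = (\<lambda>(q1::rat, q2::rat, n::nat). oball (of_rat q1) (1 / Suc n) \<times> oball (of_rat q2) (1 / Suc n))"
  define J where "J = {j. B j \<subseteq> W}"
  have cJ: "countable J" by (rule countable_subset[of _ UNIV]) auto
  have "W = (\<Union>j\<in>J. B j)"
  proof
    show "(\<Union>j\<in>J. B j) \<subseteq> W" unfolding J_def by auto
    show "W \<subseteq> (\<Union>j\<in>J. B j)"
    proof
      fix z assume z: "z \<in> W"
      obtain a b where ab: "z = (a, b)" by (cases z)
      obtain e where e: "e > 0" "\<forall>a' b'. nv (a' - a) < e \<longrightarrow> nv (b' - b) < e \<longrightarrow> (a', b') \<in> W"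
        using W z ab unfolding K2open_def by blast
      obtain n :: nat where n: "1 / Suc n < e" using e(1) by (metis nat_approx_posE)
      define r where "r = 1 / real (Suc n)"
      have r: "r > 0" "r < e" using n unfolding r_def by auto
      obtain q1 where q1: "nv (a - of_rat q1) < r" using nv_dense[OF r(1)] by blast
      obtain q2 where q2: "nv (b - of_rat q2) < r" using nv_dense[OF r(1)] by blast
      have sub: "B (q1, q2, n) \<subseteq> W"
      proof
        fix w assume w: "w \<in> B (q1, q2, n)"
        obtain a' b' where w': "w = (a', b')" by (cases w)
        have a': "nv (a' - of_rat q1) < r" and b': "nv (b' - of_rat q2) < r"
          using w w' unfolding B_def oball_def r_def by auto
        have "nv (a' - a) \<le> max (nv (a' - of_rat q1)) (nv (of_rat q1 - a))" by (rule nv_ultra_diff)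
        hence 1: "nv (a' - a) < e" using a' q1 r nv_commute[of a "of_rat q1"] by simp
        have "nv (b' - b) \<le> max (nv (b' - of_rat q2)) (nv (of_rat q2 - b))" by (rule nv_ultra_diff)
        hence 2: "nv (b' - b) < e" using b' q2 r nv_commute[of b "of_rat q2"] by simp
        show "w \<in> W" using e(2) 1 2 w' by blast
      qed
      have "z \<in> B (q1, q2, n)" using ab q1 q2 unfolding B_def oball_def r_def by auto
      thus "z \<in> (\<Union>j\<in>J. B j)" using sub unfolding J_def by blast
    qed
  qed
  also have "\<dots> \<in> sets (Kborel nv \<Otimes>\<^sub>M Kborel nv)"
  proof (rule sets.countable_UN'')
    show "countable J" by (rule cJ)
    fix j assume "j \<in> J"
    obtain q1 q2 n where j: "j = (q1, q2, n)" by (cases j)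
    show "B j \<in> sets (Kborel nv \<Otimes>\<^sub>M Kborel nv)"
      unfolding j B_def by (auto intro!: pair_measureI oball_sets)
  qed
  finally show ?thesis .
qed

lemma K_to_C_meas:
  assumes Fc: "\<And>a. F a \<in> Ccarrier nv"
  and cont: "\<And>a e. e > 0 \<Longrightarrow> \<exists>d>0. \<forall>a'. nv (a' - a) < d \<longrightarrow> supnorm nv (\<lambda>x. F a' x - F a x) < e"
  shows "F \<in> measurable (Kborel nv) (Cborel nv)"
proof (rule measurable_CborelI)
  show "F \<in> space (Kborel nv) \<rightarrow> Ccarrier nv" using Fc by auto
  fix U assume U: "C_open nv U"
  have "nv_open nv (F -` U)"
    unfolding nv_open_def
  proof
    fix a assume "a \<in> F -` U"
    then obtain e where e: "e > 0" "\<forall>k\<in>Ccarrier nv. supnorm nv (\<lambda>x. k x - F a x) < e \<longrightarrow> k \<in> U"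
      using U unfolding C_open_def by blast
    obtain d where d: "d > 0" "\<forall>a'. nv (a' - a) < d \<longrightarrow> supnorm nv (\<lambda>x. F a' x - F a x) < e"
      using cont[OF e(1)] by blast
    show "\<exists>e>0. \<forall>y. nv (y - a) < e \<longrightarrow> y \<in> F -` U"
      using d e Fc by blast
  qed
  thus "F -` U \<inter> space (Kborel nv) \<in> sets (Kborel nv)" by (simp add: nv_open_sets)
qed

lemma K2_to_C_meas:
  assumes Fc: "\<And>a b. F (a, b) \<in> Ccarrier nv"
  and cont: "\<And>a b e. e > 0 \<Longrightarrow> \<exists>d>0. \<forall>a' b'. nv (a' - a) < d \<longrightarrow> nv (b' - b) < d \<longrightarrow>
       supnorm nv (\<lambda>x. F (a', b') x - F (a, b) x) < e"
  shows "F \<in> measurable (Kborel nv \<Otimes>\<^sub>M Kborel nv) (Cborel nv)"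
proof (rule measurable_CborelI)
  show "F \<in> space (Kborel nv \<Otimes>\<^sub>M Kborel nv) \<rightarrow> Ccarrier nv" using Fc by auto
  fix U assume U: "C_open nv U"
  have "K2open (F -` U)"
    unfolding K2open_def
  proof (intro allI impI)
    fix a b assume "(a, b) \<in> F -` U"
    then obtain e where e: "e > 0" "\<forall>k\<in>Ccarrier nv. supnorm nv (\<lambda>x. k x - F (a, b) x) < e \<longrightarrow> k \<in> U"
      using U unfolding C_open_def by blast
    obtain d where d: "d > 0" "\<forall>a' b'. nv (a' - a) < d \<longrightarrow> nv (b' - b) < d \<longrightarrow> supnorm nv (\<lambda>x. F (a', b') x - F (a, b) x) < e"
      using cont[OF e(1)] by blast
    show "\<exists>e>0. \<forall>a' b'. nv (a' - a) < e \<longrightarrow> nv (b' - b) < e \<longrightarrow> (a', b') \<in> F -` U"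
      using d e Fc by blast
  qed
  thus "F -` U \<inter> space (Kborel nv \<Otimes>\<^sub>M Kborel nv) \<in> sets (Kborel nv \<Otimes>\<^sub>M Kborel nv)"
    by (simp add: K2open_sets space_pair_measure)
qed

end


lemma digits_recon:
  fixes p :: nat assumes "p > 0"
  shows "r < p ^ n \<Longrightarrow> (\<Sum>k<n. (r div p ^ k mod p) * p ^ k) = r"
proof (induction n arbitrary: r)
  case 0 thus ?case by simp
next
  case (Suc n)
  have "r div p < p ^ n" using Suc.prems assms by (simp add: div_less_iff_less_mult mult.commute)
  hence IH: "(\<Sum>k<n. (r div p div p ^ k mod p) * p ^ k) = r div p" by (rule Suc.IH)
  have "(\<Sum>k<Suc n. (r div p ^ k mod p) * p ^ k) = r mod p + (\<Sum>k<n. (r div p ^ Suc k mod p) * p ^ Suc k)"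
    by (subst sum.lessThan_Suc_shift) simp
  also have "(\<Sum>k<n. (r div p ^ Suc k mod p) * p ^ Suc k) = p * (\<Sum>k<n. (r div p div p ^ k mod p) * p ^ k)"
    by (simp add: sum_distrib_left div_mult2_eq mult_ac)
  also have "\<dots> = p * (r div p)" using IH by simp
  finally show ?case by simp
qed

lemma digits_sum_bound:
  fixes p :: nat
  shows "(\<And>k. k < n \<Longrightarrow> w k < p) \<Longrightarrow> (\<Sum>k<n. w k * p ^ k) < p ^ n"
proof (induction n arbitrary: w)
  case 0 thus ?case by simp
next
  case (Suc n)
  have IH: "(\<Sum>k<n. w (Suc k) * p ^ k) < p ^ n" using Suc.prems by (intro Suc.IH) auto
  have w0: "w 0 < p" using Suc.prems by auto
  have "(\<Sum>k<Suc n. w k * p ^ k) = w 0 + p * (\<Sum>k<n. w (Suc k) * p ^ k)"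
    by (subst sum.lessThan_Suc_shift) (simp add: sum_distrib_left mult_ac)
  also have "\<dots> < p ^ Suc n"
  proof -
    have "p * (\<Sum>k<n. w (Suc k) * p ^ k) \<le> p * (p ^ n - 1)" using IH by (intro mult_left_mono) auto
    moreover have "p * (p ^ n - 1) + p = p ^ Suc n" using IH by (cases "p ^ n") (auto simp: algebra_simps)
    ultimately show ?thesis using w0 by linarith
  qed
  finally show ?case .
qed

lemma digits_unique:
  fixes p :: nat
  shows "(\<And>k. k < n \<Longrightarrow> w k < p) \<Longrightarrow> k < n \<Longrightarrow> (\<Sum>j<n. w j * p ^ j) div p ^ k mod p = w k"
proof (induction n arbitrary: w k)
  case 0 thus ?case by simp
next
  case (Suc n)
  have eq: "(\<Sum>j<Suc n. w j * p ^ j) = w 0 + p * (\<Sum>j<n. w (Suc j) * p ^ j)"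
    by (subst sum.lessThan_Suc_shift) (simp add: sum_distrib_left mult_ac)
  have w0: "w 0 < p" using Suc.prems by auto
  show ?case
  proof (cases k)
    case 0 thus ?thesis using eq w0 by simp
  next
    case (Suc k')
    have "(w 0 + p * (\<Sum>j<n. w (Suc j) * p ^ j)) div p = (\<Sum>j<n. w (Suc j) * p ^ j)"
      using w0 by simp
    hence "(\<Sum>j<Suc n. w j * p ^ j) div p ^ k = (\<Sum>j<n. w (Suc j) * p ^ j) div p ^ k'"
      using eq Suc by (simp add: div_mult2_eq)
    also have "\<dots> mod p = w (Suc k')" using Suc.prems Suc by (intro Suc.IH) auto
    finally show ?thesis using Suc by simp
  qed
qed

context qp begin

definition psn :: "(nat \<Rightarrow> nat) \<Rightarrow> nat \<Rightarrow> 'k" where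
  "psn w n = (\<Sum>k<n. of_nat (w k) * of_nat p ^ k)"

definition psi :: "(nat \<Rightarrow> nat) \<Rightarrow> 'k" where
  "psi w = (SOME l. \<forall>e>0. \<exists>N. \<forall>n\<ge>N. nv (psn w n - l) < e)"

lemma nv_ppow: "nv (of_nat p ^ k :: 'k) = rad k"
  by (simp add: nv_power nv_p rad_def power_inverse)

lemma psn_cauchy: "n \<le> m \<Longrightarrow> nv (psn w m - psn w n) \<le> rad n"
proof (induction m rule: dec_induct)
  case base thus ?case using rad_pos[of n] by (simp add: less_imp_le)
next
  case (step m)
  have e: "psn w (Suc m) - psn w n = (psn w m - psn w n) + of_nat (w m) * of_nat p ^ m"
    unfolding psn_def by simp
  have t: "nv (of_nat (w m) * of_nat p ^ m :: 'k) \<le> rad n"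
  proof -
    have "nv (of_nat (w m) * of_nat p ^ m :: 'k) = nv (of_nat (w m) :: 'k) * rad m"
      by (simp add: nv_mult nv_ppow)
    also have "\<dots> \<le> rad m" using nv_of_nat_le1[of "w m"] rad_pos[of m] by (simp add: mult_left_le_one_le)
    also have "\<dots> \<le> rad n" using step by (intro rad_mono) simp
    finally show ?thesis .
  qed
  have "nv ((psn w m - psn w n) + of_nat (w m) * of_nat p ^ m) \<le> rad n"
    using \<open>nv (psn w m - psn w n) \<le> rad n\<close> t by (rule nv_ultra_le)
  thus ?case by (simp only: e)
qed

lemma psn_cauchy': "nv (psn w m - psn w n) \<le> rad (min m n)"
proof (cases "n \<le> m")
  case True thus ?thesis using psn_cauchy[of n m w] less_imp_le[OF rad_pos[of n]] by (simp add: min_def)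
next
  case False thus ?thesis using psn_cauchy[of m n w] nv_commute[of "psn w m" "psn w n"] by (simp add: min_def)
qed

lemma psi_lim: "\<forall>e>0. \<exists>N. \<forall>n\<ge>N. nv (psn w n - psi w) < e"
proof -
  have "\<forall>e>0. \<exists>N. \<forall>m\<ge>N. \<forall>n\<ge>N. nv (psn w m - psn w n) < e"
  proof (intro allI impI)
    fix e :: real assume "e > 0"
    then obtain N where N: "rad N < e" using rad_small by blast
    show "\<exists>N. \<forall>m\<ge>N. \<forall>n\<ge>N. nv (psn w m - psn w n) < e"
    proof (intro exI[of _ N] allI impI)
      fix m n assume "m \<ge> N" "n \<ge> N"
      hence "rad (min m n) \<le> rad N" by (intro rad_mono) simp
      thus "nv (psn w m - psn w n) < e" using psn_cauchy'[of w m n] N by linarith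
    qed
  qed
  hence "\<exists>l. \<forall>e>0. \<exists>N. \<forall>n\<ge>N. nv (psn w n - l) < e" by (rule nv_complete)
  thus ?thesis unfolding psi_def by (rule someI_ex)
qed

lemma psi_approx: "nv (psi w - psn w n) \<le> rad n"
proof (rule field_le_epsilon)
  fix e :: real assume e: "e > 0"
  obtain N where N: "\<forall>n\<ge>N. nv (psn w n - psi w) < e" using psi_lim e by blast
  define m where "m = max N n"
  have "nv (psi w - psn w n) \<le> max (nv (psi w - psn w m)) (nv (psn w m - psn w n))"
    by (rule nv_ultra_diff)
  also have "\<dots> \<le> max e (rad n)"
    using N[rule_format, of m] psn_cauchy[of n m w] nv_commute[of "psi w" "psn w m"]
    unfolding m_def by (intro max.mono) auto
  also have "\<dots> \<le> rad n + e" using e rad_pos[of n] by simp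
  finally show "nv (psi w - psn w n) \<le> rad n + e" .
qed

lemma psn_nat: "psn w n = of_nat (\<Sum>k<n. w k * p ^ k)"
  unfolding psn_def by simp

lemma psi_Zp: "nv (psi w) \<le> 1"
  using psi_approx[of w 0] by (simp add: psn_def)

definition kball :: "'k \<Rightarrow> nat \<Rightarrow> 'k set" where
  "kball c n = {y. nv (y - c) \<le> rad n}"

lemma kball_open: "nv_open nv (kball c n)"
  unfolding nv_open_def kball_def
proof (intro ballI exI[of _ "rad n"] conjI allI impI)
  show "rad n > 0" by (rule rad_pos)
  fix x y assume "x \<in> {y. nv (y - c) \<le> rad n}" "nv (y - x) < rad n"
  thus "y \<in> {y. nv (y - c) \<le> rad n}" using nv_ultra_diff[of y c x] by auto
qed

lemma kball_sets: "kball c n \<in> sets (Kborel nv)"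
  by (rule nv_open_sets[OF kball_open])

lemma psi_kball: "psi w \<in> kball c n \<longleftrightarrow> psn w n \<in> kball c n"
proof -
  have a: "nv (psi w - psn w n) \<le> rad n" by (rule psi_approx)
  have "nv (psi w - c) \<le> max (nv (psi w - psn w n)) (nv (psn w n - c))" by (rule nv_ultra_diff)
  moreover have "nv (psn w n - c) \<le> max (nv (psn w n - psi w)) (nv (psi w - c))" by (rule nv_ultra_diff)
  ultimately show ?thesis using a nv_commute[of "psi w" "psn w n"] unfolding kball_def by auto
qed

definition Ud :: "nat measure" where "Ud = uniform_count_measure {0..<p}"
definition Om :: "(nat \<Rightarrow> nat) measure" where "Om = PiM UNIV (\<lambda>_. Ud)"

lemma Ud_prob: "prob_space Ud"
  unfolding Ud_def using p_gt1 by (intro prob_space_uniform_count_measure) auto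

lemma Om_prob: "prob_space Om"
  unfolding Om_def using Ud_prob by (intro prob_space_PiM) auto

lemma space_Ud: "space Ud = {0..<p}" by (simp add: Ud_def space_uniform_count_measure)
lemma sets_Ud: "sets Ud = Pow {0..<p}" by (simp add: Ud_def sets_uniform_count_measure)

lemma space_Om: "space Om = {w. \<forall>k. w k < p}"
  unfolding Om_def space_PiM space_Ud by (auto simp: PiE_def Pi_def extensional_def)

lemma pre_kball_in:
  assumes c: "nv c \<le> 1"
  obtains dg where "\<And>k. dg k < p"
    "{w \<in> space Om. psi w \<in> kball c n} = prod_emb UNIV (\<lambda>_. Ud) {..<n} (PiE {..<n} (\<lambda>k. {dg k}))"
proof -
  obtain r where r: "r < p ^ n" "nv (c - of_nat r) \<le> rad n" using approx_nat[OF c] by blast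
  define dg where "dg k = r div p ^ k mod p" for k
  have dgp: "dg k < p" for k unfolding dg_def using p_gt1 by simp
  have recon: "(\<Sum>k<n. dg k * p ^ k) = r" unfolding dg_def using digits_recon[of p r n] p_gt1 r(1) by simp
  have "{w \<in> space Om. psi w \<in> kball c n} = {w \<in> space Om. \<forall>k<n. w k = dg k}"
  proof (intro Collect_cong conj_cong refl)
    fix w assume w: "w \<in> space Om"
    hence wp: "\<And>k. w k < p" by (simp add: space_Om)
    show "psi w \<in> kball c n \<longleftrightarrow> (\<forall>k<n. w k = dg k)"
    proof
      assume "psi w \<in> kball c n"
      hence "psn w n \<in> kball c n" by (simp add: psi_kball)
      hence 1: "nv (of_nat (\<Sum>k<n. w k * p ^ k) - c) \<le> rad n" by (simp add: kball_def psn_nat)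
      define s where "s = (\<Sum>k<n. w k * p ^ k)"
      have sb: "s < p ^ n" unfolding s_def using wp by (intro digits_sum_bound) auto
      have "nv (of_nat s - of_nat r :: 'k) \<le> max (nv (of_nat s - c)) (nv (c - of_nat r))"
        by (rule nv_ultra_diff)
      also have "\<dots> \<le> rad n" using 1 r(2) unfolding s_def by simp
      finally have "nv (of_int (int s - int r) :: 'k) \<le> rad n" by simp
      hence "int p ^ n dvd (int s - int r)" by (rule nv_of_int_dvd_rev)
      have sr: "s = r"
      proof (rule ccontr)
        assume "s \<noteq> r"
        hence "int s - int r \<noteq> 0" by simp
        hence "\<bar>int p ^ n\<bar> \<le> \<bar>int s - int r\<bar>" using dvd_imp_le_int \<open>int p ^ n dvd (int s - int r)\<close> by blast
        moreover have "\<bar>int s - int r\<bar> < int p ^ n"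
        proof -
          have "int s < int (p ^ n)" "int r < int (p ^ n)" using sb r(1) by linarith+
          hence A: "int s < int p ^ n" "int r < int p ^ n" by simp_all
          have B: "int s \<ge> 0" "int r \<ge> 0" by simp_all
          show ?thesis unfolding abs_less_iff using A B by linarith
        qed
        ultimately show False by simp
      qed
      show "\<forall>k<n. w k = dg k"
      proof (intro allI impI)
        fix k assume k: "k < n"
        have "w k = s div p ^ k mod p" unfolding s_def using wp k by (intro digits_unique[symmetric]) auto
        thus "w k = dg k" using sr unfolding dg_def by simp
      qed
    next
      assume "\<forall>k<n. w k = dg k"
      hence "(\<Sum>k<n. w k * p ^ k) = r" using recon by simp
      hence "psn w n = of_nat r" by (simp add: psn_nat)
      hence "psn w n \<in> kball c n" using r(2) nv_commute[of c "of_nat r"] by (simp add: kball_def)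
      thus "psi w \<in> kball c n" by (simp add: psi_kball)
    qed
  qed
  also have "\<dots> = prod_emb UNIV (\<lambda>_. Ud) {..<n} (PiE {..<n} (\<lambda>k. {dg k}))"
    by (auto simp: prod_emb_iff space_Om space_Ud PiE_iff)
  finally show ?thesis using that dgp by blast
qed

end


context qp begin

lemma pre_kball_out:
  assumes c: "nv c > 1"
  shows "{w \<in> space Om. psi w \<in> kball c n} = {}"
proof -
  have "nv (psi w - c) > rad n" for w
  proof -
    have "nv (- c + psi w) = nv (- c)" using psi_Zp[of w] c by (intro nv_strict) simp
    hence "nv (psi w - c) = nv c" by simp
    thus ?thesis using c rad_le1[of n] by simp
  qed
  thus ?thesis unfolding kball_def by (auto simp: not_le)
qed

lemma pre_kball_sets: "{w \<in> space Om. psi w \<in> kball c n} \<in> sets Om"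
proof (cases "nv c \<le> 1")
  case True
  obtain dg where dg: "\<And>k. dg k < p" "{w \<in> space Om. psi w \<in> kball c n} = prod_emb UNIV (\<lambda>_. Ud) {..<n} (PiE {..<n} (\<lambda>k. {dg k}))"
    using pre_kball_in[where n=n, OF True] by blast
  show ?thesis unfolding dg(2) by (unfold Om_def, intro sets_PiM_I) (auto simp: sets_Ud dg(1))
next
  case False
  have "{w \<in> space Om. psi w \<in> kball c n} = {}" using False by (intro pre_kball_out) simp
  thus ?thesis by (simp only: sets.empty_sets)
qed

lemma kball_cover:
  assumes U: "nv_open nv U"
  shows "U = (\<Union>j\<in>{(q, n). kball (of_rat q) n \<subseteq> U}. kball (of_rat (fst j)) (snd j))"
proof
  show "(\<Union>j\<in>{(q, n). kball (of_rat q) n \<subseteq> U}. kball (of_rat (fst j)) (snd j)) \<subseteq> U" by auto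
  show "U \<subseteq> (\<Union>j\<in>{(q, n). kball (of_rat q) n \<subseteq> U}. kball (of_rat (fst j)) (snd j))"
  proof
    fix x assume x: "x \<in> U"
    obtain e where e: "e > 0" "\<forall>y. nv (y - x) < e \<longrightarrow> y \<in> U" using U x unfolding nv_open_def by blast
    obtain n where n: "rad n < e" using rad_small[OF e(1)] by blast
    obtain q where q: "nv (x - of_rat q) < rad n" using nv_dense[OF rad_pos[of n]] by blast
    have sub: "kball (of_rat q) n \<subseteq> U"
    proof
      fix y assume "y \<in> kball (of_rat q) n"
      hence "nv (y - of_rat q) \<le> rad n" by (simp add: kball_def)
      moreover have "nv (y - x) \<le> max (nv (y - of_rat q)) (nv (of_rat q - x))" by (rule nv_ultra_diff)
      ultimately have "nv (y - x) < e" using q n nv_commute[of x "of_rat q"] by simp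
      thus "y \<in> U" using e by blast
    qed
    have "x \<in> kball (of_rat q) n" using q by (simp add: kball_def)
    thus "x \<in> (\<Union>j\<in>{(q, n). kball (of_rat q) n \<subseteq> U}. kball (of_rat (fst j)) (snd j))"
      using sub by (intro UN_I[of "(q, n)"]) auto
  qed
qed

lemma sets_Kborel_kball: "sets (Kborel nv) = sigma_sets UNIV (range (\<lambda>(c, n). kball c n))"
proof -
  have "sigma_sets UNIV (Collect (nv_open nv)) = sigma_sets UNIV (range (\<lambda>(c, n). kball c n))"
  proof (rule sigma_sets_eqI)
    fix U assume "U \<in> Collect (nv_open nv)"
    hence U: "nv_open nv U" by simp
    have UN: "(\<Union>j\<in>{(q, n). kball (of_rat q) n \<subseteq> U}. kball (of_rat (fst j)) (snd j)) \<in> sigma_sets UNIV (range (\<lambda>(c, n). kball c n))"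
    proof (rule sigma_sets_UNION)
      show "countable ((\<lambda>j. kball (of_rat (fst j)) (snd j)) ` {(q, n). kball (of_rat q) n \<subseteq> U})"
        by (rule countable_image, rule countable_subset[of _ UNIV]) auto
      fix X assume "X \<in> (\<lambda>j. kball (of_rat (fst j)) (snd j)) ` {(q, n). kball (of_rat q) n \<subseteq> U}"
      then obtain j where "X = kball (of_rat (fst j)) (snd j)" by blast
      hence "X \<in> range (\<lambda>(c, n). kball c n)" by (intro image_eqI[of _ _ "(of_rat (fst j), snd j)"]) simp_all
      thus "X \<in> sigma_sets UNIV (range (\<lambda>(c, n). kball c n))" by (rule sigma_sets.Basic)
    qed
    have eqU: "U = (\<Union>j\<in>{(q, n). kball (of_rat q) n \<subseteq> U}. kball (of_rat (fst j)) (snd j))"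
      by (rule kball_cover[OF U])
    show "U \<in> sigma_sets UNIV (range (\<lambda>(c, n). kball c n))" by (subst eqU) (rule UN)
  next
    fix B assume "B \<in> range (\<lambda>(c, n). kball c n)"
    hence "nv_open nv B" using kball_open by auto
    thus "B \<in> sigma_sets UNIV (Collect (nv_open nv))" by (auto intro: sigma_sets.Basic)
  qed
  thus ?thesis using sets_Kborel by simp
qed

lemma psi_meas: "psi \<in> measurable Om (Kborel nv)"
proof (rule measurable_sigma_sets[OF sets_Kborel_kball])
  show "range (\<lambda>(c, n). kball c n) \<subseteq> Pow UNIV" by simp
  show "psi \<in> space Om \<rightarrow> UNIV" by simp
  fix y assume "y \<in> range (\<lambda>(c, n). kball c n)"
  then obtain c n where y: "y = kball c n" by auto
  have "psi -` y \<inter> space Om = {w \<in> space Om. psi w \<in> kball c n}" using y by auto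
  thus "psi -` y \<inter> space Om \<in> sets Om" using pre_kball_sets by simp
qed

definition H :: "'k measure" where "H = distr Om (Kborel nv) psi"

lemma H_prob: "prob_space H"
  unfolding H_def using Om_prob psi_meas by (intro prob_space.prob_space_distr) auto

lemma sets_H: "sets H = sets (Kborel nv)" by (simp add: H_def)
lemma space_H[simp]: "space H = UNIV" by (simp add: H_def)

lemma H_kball: "emeasure H (kball c n) = (if nv c \<le> 1 then ennreal (rad n) else 0)"
proof -
  have "emeasure H (kball c n) = emeasure Om (psi -` kball c n \<inter> space Om)"
    unfolding H_def using psi_meas kball_sets by (rule emeasure_distr)
  also have "psi -` kball c n \<inter> space Om = {w \<in> space Om. psi w \<in> kball c n}" by auto
  finally have e: "emeasure H (kball c n) = emeasure Om {w \<in> space Om. psi w \<in> kball c n}" .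
  show ?thesis
  proof (cases "nv c \<le> 1")
    case True
    obtain dg where dg: "\<And>k. dg k < p" "{w \<in> space Om. psi w \<in> kball c n} = prod_emb UNIV (\<lambda>_. Ud) {..<n} (PiE {..<n} (\<lambda>k. {dg k}))"
      using pre_kball_in[where n=n, OF True] by blast
    have "emeasure Om (prod_emb UNIV (\<lambda>_. Ud) {..<n} (PiE {..<n} (\<lambda>k. {dg k}))) = (\<Prod>k<n. emeasure Ud {dg k})"
      unfolding Om_def using Ud_prob dg(1) by (intro emeasure_PiM_emb) (auto simp: sets_Ud)
    also have "\<dots> = (\<Prod>k<n. ennreal (1 / real p))"
    proof (intro prod.cong refl)
      fix k
      show "emeasure Ud {dg k} = ennreal (1 / real p)"
        using dg(1)[of k] p_pos by (simp add: Ud_def emeasure_uniform_count_measure ennreal_of_nat_eq_real_of_nat divide_ennreal)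
    qed
    also have "\<dots> = ennreal ((1 / real p) ^ n)" by (simp add: ennreal_power)
    also have "(1 / real p) ^ n = rad n" by (simp add: rad_def power_one_over inverse_eq_divide)
    finally show ?thesis using e dg(2) True by simp
  next
    case False
    have "{w \<in> space Om. psi w \<in> kball c n} = {}" using False by (intro pre_kball_out) simp
    thus ?thesis using e False by (simp only: emeasure_empty if_False)
  qed
qed

end


locale ginv = qp p nv for p :: nat and nv :: "'k::field_char_0 \<Rightarrow> real" +
  fixes Nm :: "'v::ab_group_add \<Rightarrow> real" and sm :: "'k \<Rightarrow> 'v \<Rightarrow> 'v"
    and P :: "'v measure" and Dn :: "'v set" and phi :: "nat \<Rightarrow> ennreal"
  assumes Nm_ultra: "Nm (x + y) \<le> max (Nm x) (Nm y)"
  and Nm_sm: "Nm (sm a x) = nv a * Nm x"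
  and sm_add: "sm a (x + y) = sm a x + sm a y"
  and sm_add2: "sm (a + b) x = sm a x + sm b x"
  and sm_assoc: "sm a (sm b x) = sm (a * b) x"
  and sm_one: "sm 1 x = x"
  and Dn_countable: "countable Dn"
  and Dn_dense: "\<exists>d\<in>Dn. Nm (x - d) \<le> rad n"
  and sets_P: "sets P = sigma_sets UNIV (range (\<lambda>(c, n). {y. Nm (y - c) \<le> rad n}))"
  and space_P: "space P = UNIV"
  and P_prob: "prob_space P"
  and P_ball: "emeasure P {y. Nm (y - c) \<le> rad n} = (if Nm c \<le> 1 then phi n else 0)"
begin

lemma sm_zero: "sm 0 x = 0"
  using sm_add2[of 0 0 x] by simp
lemma sm_zero2: "sm a 0 = 0"
  using sm_add[of a 0 0] by simp
lemma sm_minus: "sm a (- x) = - sm a x"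
proof -
  have "sm a x + sm a (- x) = 0" using sm_add[of a x "- x"] sm_zero2[of a] by simp
  thus ?thesis by (metis minus_unique)
qed
lemma sm_diff: "sm a (x - y) = sm a x - sm a y"
  using sm_add[of a x "- y"] sm_minus[of a y] by simp
lemma sm_minus2: "sm (- a) x = - sm a x"
proof -
  have "sm a x + sm (- a) x = 0" using sm_add2[of a "- a" x] sm_zero[of x] by simp
  thus ?thesis by (metis minus_unique)
qed
lemma Nm_0: "Nm 0 = 0" using Nm_sm[of 0 0] sm_zero[of 0] by simp
lemma Nm_uminus: "Nm (- x) = Nm x"
  using Nm_sm[of "-1" x] sm_minus2[of 1 x] sm_one nv_minus1 by simp
lemma Nm_nonneg: "Nm x \<ge> 0"
  using Nm_ultra[of x "- x"] Nm_0 Nm_uminus[of x] by simp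
lemma Nm_commute: "Nm (x - y) = Nm (y - x)"
  using Nm_uminus[of "x - y"] by simp
lemma Nm_ultra_diff: "Nm (x - z) \<le> max (Nm (x - y)) (Nm (y - z))"
  using Nm_ultra[of "x - y" "y - z"] by simp

definition vb :: "'v \<Rightarrow> nat \<Rightarrow> 'v set" where "vb c n = {y. Nm (y - c) \<le> rad n}"

lemma sets_P': "sets P = sigma_sets UNIV (range (\<lambda>(c, n). vb c n))"
  using sets_P unfolding vb_def by simp

lemma vb_sets: "vb c n \<in> sets P"
  unfolding sets_P' by (rule sigma_sets.Basic) auto

lemma vb_center: "c \<in> vb c n" unfolding vb_def using rad_pos[of n] Nm_0 by simp

lemma vb_sub: "m \<le> n \<Longrightarrow> y \<in> vb c n \<Longrightarrow> y \<in> vb e m \<Longrightarrow> vb c n \<subseteq> vb e m"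
proof
  fix z assume mn: "m \<le> n" and y: "y \<in> vb c n" "y \<in> vb e m" and z: "z \<in> vb c n"
  have r: "rad n \<le> rad m" using mn by (rule rad_mono)
  have "Nm (z - e) \<le> max (Nm (z - y)) (Nm (y - e))" by (rule Nm_ultra_diff)
  moreover have "Nm (z - y) \<le> max (Nm (z - c)) (Nm (c - y))" by (rule Nm_ultra_diff)
  ultimately show "z \<in> vb e m" using y z r Nm_commute[of c y] unfolding vb_def by auto
qed

lemma vb_int: "m \<le> n \<Longrightarrow> vb c n \<inter> vb e m = {} \<or> vb c n \<inter> vb e m = vb c n"
  using vb_sub by blast

lemma vb_cover: "(\<Union>d\<in>Dn. vb d 0) = UNIV"
proof -
  have "y \<in> (\<Union>d\<in>Dn. vb d 0)" for y
    using Dn_dense[of y 0] unfolding vb_def by auto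
  thus ?thesis by auto
qed

lemma vb_refine: "m \<le> n \<Longrightarrow> vb c m = (\<Union>d\<in>{d\<in>Dn. vb d n \<subseteq> vb c m}. vb d n)"
proof (intro equalityI subsetI)
  fix y assume mn: "m \<le> n" and y: "y \<in> vb c m"
  obtain d where d: "d \<in> Dn" "Nm (y - d) \<le> rad n" using Dn_dense by blast
  have yd: "y \<in> vb d n" using d unfolding vb_def by simp
  have "vb d n \<subseteq> vb c m" using vb_sub[OF mn yd y] .
  thus "y \<in> (\<Union>d\<in>{d\<in>Dn. vb d n \<subseteq> vb c m}. vb d n)" using yd d(1) by blast
qed auto

definition Gbox :: "('v \<times> 'v) set set" where
  "Gbox = range (\<lambda>(c, c', n). vb c n \<times> vb c' n)"

lemma sigma_Gbox_alg: "sigma_algebra UNIV (sigma_sets UNIV Gbox)"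
  by (rule sigma_algebra_sigma_sets) simp

lemma box_any: "vb c n \<times> vb c' m \<in> sigma_sets UNIV Gbox"
proof -
  interpret S: sigma_algebra UNIV "sigma_sets UNIV Gbox" by (rule sigma_Gbox_alg)
  show ?thesis
  proof (cases "n \<le> m")
    case True
    have "vb c n \<times> vb c' m = (\<Union>d\<in>{d\<in>Dn. vb d m \<subseteq> vb c n}. vb d m \<times> vb c' m)"
      using vb_refine[OF True, of c] by blast
    also have "\<dots> \<in> sigma_sets UNIV Gbox"
    proof (rule S.countable_UN'')
      show "countable {d \<in> Dn. vb d m \<subseteq> vb c n}" using Dn_countable by (rule countable_subset[rotated]) auto
      fix d show "vb d m \<times> vb c' m \<in> sigma_sets UNIV Gbox"
        unfolding Gbox_def by (rule sigma_sets.Basic) auto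
    qed
    finally show ?thesis .
  next
    case False
    hence mn: "m \<le> n" by simp
    have "vb c n \<times> vb c' m = (\<Union>d\<in>{d\<in>Dn. vb d n \<subseteq> vb c' m}. vb c n \<times> vb d n)"
      using vb_refine[OF mn, of c'] by blast
    also have "\<dots> \<in> sigma_sets UNIV Gbox"
    proof (rule S.countable_UN'')
      show "countable {d \<in> Dn. vb d n \<subseteq> vb c' m}" using Dn_countable by (rule countable_subset[rotated]) auto
      fix d show "vb c n \<times> vb d n \<in> sigma_sets UNIV Gbox"
        unfolding Gbox_def by (rule sigma_sets.Basic) auto
    qed
    finally show ?thesis .
  qed
qed

lemma box_left: 
  assumes a: "a \<in> sets P"
  shows "a \<times> vb c' m \<in> sigma_sets UNIV Gbox"
proof -
  interpret S: sigma_algebra UNIV "sigma_sets UNIV Gbox" by (rule sigma_Gbox_alg)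
  have univ: "UNIV \<times> vb c' m \<in> sigma_sets UNIV Gbox"
  proof -
    have "UNIV \<times> vb c' m = (\<Union>d\<in>Dn. vb d 0 \<times> vb c' m)" using vb_cover by blast
    also have "\<dots> \<in> sigma_sets UNIV Gbox"
      using Dn_countable box_any by (intro S.countable_UN'') auto
    finally show ?thesis .
  qed
  have "a \<in> sigma_sets UNIV (range (\<lambda>(c, n). vb c n))" using a sets_P' by simp
  thus ?thesis
  proof (induction rule: sigma_sets.induct)
    case (Basic a) thus ?case using box_any by auto
  next
    case Empty thus ?case by simp
  next
    case (Compl a)
    have "(UNIV - a) \<times> vb c' m = (UNIV \<times> vb c' m) - (a \<times> vb c' m)" by blast
    thus ?case using univ Compl.IH by (simp add: S.Diff)
  next
    case (Union A)
    have "(\<Union>i. A i) \<times> vb c' m = (\<Union>i. A i \<times> vb c' m)" by blast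
    thus ?case using sigma_sets.Union[of "\<lambda>i. A i \<times> vb c' m", OF Union.IH] by simp
  qed
qed

lemma box_both:
  assumes a: "a \<in> sets P" and b: "b \<in> sets P"
  shows "a \<times> b \<in> sigma_sets UNIV Gbox"
proof -
  interpret S: sigma_algebra UNIV "sigma_sets UNIV Gbox" by (rule sigma_Gbox_alg)
  have univ: "a \<times> UNIV \<in> sigma_sets UNIV Gbox"
  proof -
    have "a \<times> UNIV = (\<Union>d\<in>Dn. a \<times> vb d 0)" using vb_cover by blast
    also have "\<dots> \<in> sigma_sets UNIV Gbox"
      using Dn_countable box_left[OF a] by (intro S.countable_UN'') auto
    finally show ?thesis .
  qed
  have "b \<in> sigma_sets UNIV (range (\<lambda>(c, n). vb c n))" using b sets_P' by simp
  thus ?thesis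
  proof (induction rule: sigma_sets.induct)
    case (Basic b) thus ?case using box_left[OF a] by auto
  next
    case Empty thus ?case by simp
  next
    case (Compl b)
    have "a \<times> (UNIV - b) = (a \<times> UNIV) - (a \<times> b)" by blast
    thus ?case using univ Compl.IH by (simp add: S.Diff)
  next
    case (Union B)
    have "a \<times> (\<Union>i. B i) = (\<Union>i. a \<times> B i)" by blast
    thus ?case using sigma_sets.Union[of "\<lambda>i. a \<times> B i", OF Union.IH] by simp
  qed
qed

lemma sets_PP: "sets (P \<Otimes>\<^sub>M P) = sigma_sets UNIV Gbox"
proof
  interpret S: sigma_algebra UNIV "sigma_sets UNIV Gbox" by (rule sigma_Gbox_alg)
  show "sets (P \<Otimes>\<^sub>M P) \<subseteq> sigma_sets UNIV Gbox"
    unfolding sets_pair_measure space_P UNIV_Times_UNIV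
    using box_both by (intro S.sigma_sets_subset) auto
  show "sigma_sets UNIV Gbox \<subseteq> sets (P \<Otimes>\<^sub>M P)"
  proof (rule sets.sigma_sets_subset')
    show "Gbox \<subseteq> sets (P \<Otimes>\<^sub>M P)" unfolding Gbox_def by (auto intro!: pair_measureI vb_sets)
    show "UNIV \<in> sets (P \<Otimes>\<^sub>M P)" using sets.top[of "P \<Otimes>\<^sub>M P"] by (simp add: space_pair_measure space_P)
  qed
qed

end


context qp begin
lemma onp_props:
  assumes onp: "orthonormal_pair nv a11 a12 a21 a22"
  shows "nv a11 \<le> 1" "nv a12 \<le> 1" "nv a21 \<le> 1" "nv a22 \<le> 1" "nv (a11 * a22 - a12 * a21) = 1"
proof -
  have m1: "max (nv a11) (nv a12) = 1" using onp[unfolded orthonormal_pair_def, rule_format, of 1 0] by simp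
  have m2: "max (nv a21) (nv a22) = 1" using onp[unfolded orthonormal_pair_def, rule_format, of 0 1] by simp
  show l: "nv a11 \<le> 1" "nv a12 \<le> 1" "nv a21 \<le> 1" "nv a22 \<le> 1" using m1 m2 by linarith+
  have e1: "nv (a11 * a22 - a12 * a21) = max (nv a22) (nv a12)"
    using onp[unfolded orthonormal_pair_def, rule_format, of a22 "- a12"] by (simp add: algebra_simps)
  have e2: "nv (a11 * a22 - a12 * a21) = max (nv a21) (nv a11)"
    using onp[unfolded orthonormal_pair_def, rule_format, of "- a21" a11] by (simp add: algebra_simps)
  show "nv (a11 * a22 - a12 * a21) = 1" using e1 e2 m1 l
    by (simp add: max_def split: if_splits)
qed
end

context ginv begin

lemma comp_sm: "sm a (sm b u + sm c v) + sm a' (sm b' u + sm c' v) = sm (a * b + a' * b') u + sm (a * c + a' * c') v"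
  by (simp add: sm_add sm_assoc sm_add2 algebra_simps)

lemma lin_Nm: "nv b1 \<le> 1 \<Longrightarrow> nv b2 \<le> 1 \<Longrightarrow> Nm (sm b1 x + sm b2 y) \<le> max (Nm x) (Nm y)"
proof -
  assume b: "nv b1 \<le> 1" "nv b2 \<le> 1"
  have "Nm (sm b1 x) \<le> Nm x" using b(1) Nm_nonneg[of x] by (simp add: Nm_sm mult_left_le_one_le)
  moreover have "Nm (sm b2 y) \<le> Nm y" using b(2) Nm_nonneg[of y] by (simp add: Nm_sm mult_left_le_one_le)
  ultimately show ?thesis using Nm_ultra[of "sm b1 x" "sm b2 y"] by (simp add: max_def split: if_splits)
qed

definition N2 :: "'v \<times> 'v \<Rightarrow> real" where "N2 z = max (Nm (fst z)) (Nm (snd z))"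

definition LT :: "'k \<Rightarrow> 'k \<Rightarrow> 'k \<Rightarrow> 'k \<Rightarrow> 'v \<times> 'v \<Rightarrow> 'v \<times> 'v" where
  "LT b11 b12 b21 b22 z = (sm b11 (fst z) + sm b12 (snd z), sm b21 (fst z) + sm b22 (snd z))"

lemma LT_N2: "nv b11 \<le> 1 \<Longrightarrow> nv b12 \<le> 1 \<Longrightarrow> nv b21 \<le> 1 \<Longrightarrow> nv b22 \<le> 1 \<Longrightarrow>
   N2 (LT b11 b12 b21 b22 z) \<le> N2 z"
  unfolding N2_def LT_def using lin_Nm by simp

lemma LT_diff: "LT b11 b12 b21 b22 (z - w) = LT b11 b12 b21 b22 z - LT b11 b12 b21 b22 w"
  unfolding LT_def by (simp add: sm_diff algebra_simps)

lemma LT_comp: "LT a11 a12 a21 a22 (LT b11 b12 b21 b22 z) =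
    LT (a11 * b11 + a12 * b21) (a11 * b12 + a12 * b22) (a21 * b11 + a22 * b21) (a21 * b12 + a22 * b22) z"
  unfolding LT_def by (simp add: comp_sm)

lemma LT_id: "LT 1 0 0 1 z = z"
  unfolding LT_def by (simp add: sm_one sm_zero)

context
  fixes a11 a12 a21 a22 :: 'k
  assumes onp: "orthonormal_pair nv a11 a12 a21 a22"
begin

definition "dl = a11 * a22 - a12 * a21"
lemma dl_nv: "nv dl = 1" unfolding dl_def using onp_props[OF onp] by simp
lemma dl_nz: "dl \<noteq> 0" using dl_nv by auto

definition "T = LT a11 a12 a21 a22"
definition "Ti = LT (a22 / dl) (- a12 / dl) (- a21 / dl) (a11 / dl)"

lemma T_Ti: "T (Ti z) = z"
proof -
  have c: "a11 * (a22 / dl) + a12 * (- a21 / dl) = 1" "a11 * (- a12 / dl) + a12 * (a11 / dl) = 0"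
     "a21 * (a22 / dl) + a22 * (- a21 / dl) = 0" "a21 * (- a12 / dl) + a22 * (a11 / dl) = 1"
  proof -
    have "a11 * (a22 / dl) + a12 * (- a21 / dl) = (a11 * a22 - a12 * a21) / dl" by (simp add: algebra_simps diff_divide_distrib add_divide_distrib)
    thus "a11 * (a22 / dl) + a12 * (- a21 / dl) = 1" using dl_nz by (simp add: dl_def[symmetric])
    have "a21 * (- a12 / dl) + a22 * (a11 / dl) = (a11 * a22 - a12 * a21) / dl" by (simp add: algebra_simps diff_divide_distrib add_divide_distrib)
    thus "a21 * (- a12 / dl) + a22 * (a11 / dl) = 1" using dl_nz by (simp add: dl_def[symmetric])
    show "a11 * (- a12 / dl) + a12 * (a11 / dl) = 0" "a21 * (a22 / dl) + a22 * (- a21 / dl) = 0"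
      by (simp_all add: field_simps)
  qed
  have "T (Ti z) = LT 1 0 0 1 z"
    unfolding T_def Ti_def LT_comp by (simp only: c)
  thus ?thesis by (simp add: LT_id)
qed

lemma Ti_T: "Ti (T z) = z"
proof -
  have c: "a22 / dl * a11 + - a12 / dl * a21 = 1" "a22 / dl * a12 + - a12 / dl * a22 = 0"
     "- a21 / dl * a11 + a11 / dl * a21 = 0" "- a21 / dl * a12 + a11 / dl * a22 = 1"
  proof -
    have "a22 / dl * a11 + - a12 / dl * a21 = (a11 * a22 - a12 * a21) / dl" by (simp add: algebra_simps diff_divide_distrib add_divide_distrib)
    thus "a22 / dl * a11 + - a12 / dl * a21 = 1" using dl_nz by (simp add: dl_def[symmetric])
    have "- a21 / dl * a12 + a11 / dl * a22 = (a11 * a22 - a12 * a21) / dl" by (simp add: algebra_simps diff_divide_distrib add_divide_distrib)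
    thus "- a21 / dl * a12 + a11 / dl * a22 = 1" using dl_nz by (simp add: dl_def[symmetric])
    show "a22 / dl * a12 + - a12 / dl * a22 = 0" "- a21 / dl * a11 + a11 / dl * a21 = 0"
      by (simp_all add: field_simps)
  qed
  have "Ti (T z) = LT 1 0 0 1 z"
    unfolding T_def Ti_def LT_comp by (simp only: c)
  thus ?thesis by (simp add: LT_id)
qed

lemma T_N2: "N2 (T z) = N2 z"
proof -
  have le1: "N2 (T w) \<le> N2 w" for w unfolding T_def using onp_props[OF onp] by (intro LT_N2) auto
  have le2: "N2 (Ti w) \<le> N2 w" for w unfolding Ti_def using onp_props[OF onp] dl_nv
    by (intro LT_N2) (auto simp: nv_divide)
  show ?thesis using le1[of z] le2[of "T z"] Ti_T[of z] by simp
qed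

lemma Ti_N2: "N2 (Ti z) = N2 z" using T_N2[of "Ti z"] T_Ti[of z] by simp

lemma T_diff: "T (z - w) = T z - T w" unfolding T_def by (rule LT_diff)

lemma box_N2: "vb c n \<times> vb c' n = {z. N2 (z - (c, c')) \<le> rad n}"
  unfolding vb_def N2_def by auto

lemma T_pre_box: "T -` (vb c n \<times> vb c' n) = vb (fst (Ti (c, c'))) n \<times> vb (snd (Ti (c, c'))) n"
proof -
  have "z \<in> T -` {z. N2 (z - (c, c')) \<le> rad n} \<longleftrightarrow> z \<in> {z. N2 (z - Ti (c, c')) \<le> rad n}" for z
  proof -
    have "T z - (c, c') = T (z - Ti (c, c'))" using T_Ti[of "(c, c')"] by (simp add: T_diff)
    thus ?thesis using T_N2[of "z - Ti (c, c')"] by simp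
  qed
  hence "T -` {z. N2 (z - (c, c')) \<le> rad n} = {z. N2 (z - Ti (c, c')) \<le> rad n}" by blast
  thus ?thesis unfolding box_N2 by simp
qed

lemma T_meas: "T \<in> measurable (P \<Otimes>\<^sub>M P) (P \<Otimes>\<^sub>M P)"
proof (rule measurable_sigma_sets[OF sets_PP])
  show "Gbox \<subseteq> Pow UNIV" by simp
  show "T \<in> space (P \<Otimes>\<^sub>M P) \<rightarrow> UNIV" by simp
  fix X assume "X \<in> Gbox"
  then obtain c c' n where X: "X = vb c n \<times> vb c' n" unfolding Gbox_def by auto
  have "T -` X \<inter> space (P \<Otimes>\<^sub>M P) = vb (fst (Ti (c, c'))) n \<times> vb (snd (Ti (c, c'))) n"
    using T_pre_box by (simp add: X space_pair_measure space_P)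
  thus "T -` X \<inter> space (P \<Otimes>\<^sub>M P) \<in> sets (P \<Otimes>\<^sub>M P)" by (auto intro!: pair_measureI vb_sets)
qed

lemma T_inv: "distr (P \<Otimes>\<^sub>M P) (P \<Otimes>\<^sub>M P) T = P \<Otimes>\<^sub>M P"
proof -
  interpret PP: prob_space P by (rule P_prob)
  interpret PPP: pair_sigma_finite P P by unfold_locales
  interpret Q: prob_space "P \<Otimes>\<^sub>M P" by (rule prob_space_pair) (rule P_prob)+
  let ?E = "insert {} Gbox"
  have sE: "sigma_sets UNIV ?E = sigma_sets UNIV Gbox"
    by (rule sigma_sets_eqI) (auto intro: sigma_sets.Basic sigma_sets.Empty)
  show ?thesis
  proof (rule measure_eqI_generator_eq_countable[where E = ?E and \<Omega> = UNIV and A = "(\<lambda>(d, d'). vb d 0 \<times> vb d' 0) ` (Dn \<times> Dn)"])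
    show "Int_stable ?E"
      unfolding Int_stable_def Gbox_def
    proof (intro ballI)
      fix X Y assume X: "X \<in> insert {} (range (\<lambda>(c, c', n). vb c n \<times> vb c' n))"
        and Y: "Y \<in> insert {} (range (\<lambda>(c, c', n). vb c n \<times> vb c' n))"
      show "X \<inter> Y \<in> insert {} (range (\<lambda>(c, c', n). vb c n \<times> vb c' n))"
      proof (cases "X = {} \<or> Y = {}")
        case True thus ?thesis by auto
      next
        case False
        have "X \<in> range (\<lambda>(c, c', n). vb c n \<times> vb c' n)" using X False by blast
        then obtain t where t: "X = (\<lambda>(c, c', n). vb c n \<times> vb c' n) t" by blast
        obtain c c' n where "t = (c, c', n)" by (cases t) auto
        hence X': "X = vb c n \<times> vb c' n" using t by simp
        have "Y \<in> range (\<lambda>(c, c', n). vb c n \<times> vb c' n)" using Y False by blast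
        then obtain u where u: "Y = (\<lambda>(c, c', n). vb c n \<times> vb c' n) u" by blast
        obtain e e' m where "u = (e, e', m)" by (cases u) auto
        hence Y': "Y = vb e m \<times> vb e' m" using u by simp
        note XY = X' Y'
        show ?thesis
        proof (cases "m \<le> n")
          case True
          have "X \<inter> Y = {} \<or> X \<inter> Y = X" using vb_int[OF True, of c e] vb_int[OF True, of c' e'] unfolding XY by blast
          thus ?thesis using XY by blast
        next
          case False hence nm: "n \<le> m" by simp
          have "X \<inter> Y = {} \<or> X \<inter> Y = Y" using vb_int[OF nm, of e c] vb_int[OF nm, of e' c'] unfolding XY by blast
          thus ?thesis using XY by blast
        qed
      qed
    qed
    show "?E \<subseteq> Pow UNIV" by simp
    show "sets (distr (P \<Otimes>\<^sub>M P) (P \<Otimes>\<^sub>M P) T) = sigma_sets UNIV ?E" using sE sets_PP by simp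
    show "sets (P \<Otimes>\<^sub>M P) = sigma_sets UNIV ?E" using sE sets_PP by simp
    show "(\<lambda>(d, d'). vb d 0 \<times> vb d' 0) ` (Dn \<times> Dn) \<subseteq> ?E" unfolding Gbox_def by auto
    show "\<Union> ((\<lambda>(d, d'). vb d 0 \<times> vb d' 0) ` (Dn \<times> Dn)) = UNIV"
    proof -
      have "z \<in> \<Union> ((\<lambda>(d, d'). vb d 0 \<times> vb d' 0) ` (Dn \<times> Dn))" for z
      proof -
        obtain d where "d \<in> Dn" "fst z \<in> vb d 0" using vb_cover by blast
        moreover obtain d' where "d' \<in> Dn" "snd z \<in> vb d' 0" using vb_cover by blast
        ultimately show ?thesis by (intro UN_I[of "(d, d')"]) (auto simp: mem_Times_iff)
      qed
      thus ?thesis by blast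
    qed
    show "countable ((\<lambda>(d, d'). vb d 0 \<times> vb d' 0) ` (Dn \<times> Dn))" using Dn_countable by simp
    fix a assume "a \<in> (\<lambda>(d, d'). vb d 0 \<times> vb d' 0) ` (Dn \<times> Dn)"
    show "emeasure (distr (P \<Otimes>\<^sub>M P) (P \<Otimes>\<^sub>M P) T) a \<noteq> \<infinity>"
      using Q.prob_space_distr[OF T_meas] by (simp add: prob_space_def finite_measure.emeasure_finite)
  next
    fix X assume "X \<in> ?E"
    show "emeasure (distr (P \<Otimes>\<^sub>M P) (P \<Otimes>\<^sub>M P) T) X = emeasure (P \<Otimes>\<^sub>M P) X"
    proof (cases "X = {}")
      case True thus ?thesis by simp
    next
      case False
      then obtain c c' n where X: "X = vb c n \<times> vb c' n" using \<open>X \<in> ?E\<close> unfolding Gbox_def by auto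
      define d where "d = fst (Ti (c, c'))"
      define d' where "d' = snd (Ti (c, c'))"
      have Xs: "X \<in> sets (P \<Otimes>\<^sub>M P)" unfolding X by (auto intro!: pair_measureI vb_sets)
      have "emeasure (distr (P \<Otimes>\<^sub>M P) (P \<Otimes>\<^sub>M P) T) X = emeasure (P \<Otimes>\<^sub>M P) (T -` X \<inter> space (P \<Otimes>\<^sub>M P))"
        by (rule emeasure_distr[OF T_meas Xs])
      also have "T -` X \<inter> space (P \<Otimes>\<^sub>M P) = vb d n \<times> vb d' n"
        unfolding X d_def d'_def using T_pre_box by (simp add: space_pair_measure space_P)
      also have "emeasure (P \<Otimes>\<^sub>M P) (vb d n \<times> vb d' n) = emeasure P (vb d n) * emeasure P (vb d' n)"
        by (intro PP.emeasure_pair_measure_Times vb_sets)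
      also have "\<dots> = (if max (Nm d) (Nm d') \<le> 1 then phi n * phi n else 0)"
        using P_ball[of d n] P_ball[of d' n] unfolding vb_def by auto
      also have "max (Nm d) (Nm d') = max (Nm c) (Nm c')"
        using Ti_N2[of "(c, c')"] unfolding d_def d'_def N2_def by simp
      also have "(if max (Nm c) (Nm c') \<le> 1 then phi n * phi n else 0) = emeasure P (vb c n) * emeasure P (vb c' n)"
        using P_ball[of c n] P_ball[of c' n] unfolding vb_def by auto
      also have "\<dots> = emeasure (P \<Otimes>\<^sub>M P) X"
        unfolding X by (intro PP.emeasure_pair_measure_Times[symmetric] vb_sets)
      finally show ?thesis .
    qed
  qed
qed

end
end


context qp begin

lemma ginv1: "ginv p nv nv (*) H (range of_rat) (\<lambda>n. ennreal (rad n))"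
proof (intro ginv.intro ginv_axioms.intro)
  show "qp p nv" by (rule qp_axioms)
  fix x y :: 'k and a b :: 'k and n :: nat and c :: 'k
  show "nv (x + y) \<le> max (nv x) (nv y)" by (rule nv_ultra)
  show "nv (a * x) = nv a * nv x" by (rule nv_mult)
  show "a * (x + y) = a * x + a * y" by (simp add: algebra_simps)
  show "(a + b) * x = a * x + b * x" by (simp add: algebra_simps)
  show "a * (b * x) = a * b * x" by simp
  show "1 * x = x" by simp
  show "countable (range (of_rat :: rat \<Rightarrow> 'k))" by simp
  show "\<exists>d\<in>range of_rat. nv (x - d) \<le> rad n"
    using nv_dense[OF rad_pos[of n], of x] by (auto intro: less_imp_le)
  show "sets H = sigma_sets UNIV (range (\<lambda>(c, n). {y. nv (y - c) \<le> rad n}))"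
    using sets_H sets_Kborel_kball unfolding kball_def by simp
  show "space H = UNIV" by simp
  show "prob_space H" by (rule H_prob)
  show "emeasure H {y. nv (y - c) \<le> rad n} = (if nv c \<le> 1 then ennreal (rad n) else 0)"
    using H_kball[of c n] unfolding kball_def by simp
qed

lemma H_inv:
  assumes "orthonormal_pair nv a11 a12 a21 a22"
  shows "distr (H \<Otimes>\<^sub>M H) (H \<Otimes>\<^sub>M H) (\<lambda>(x, y). (a11 * x + a12 * y, a21 * x + a22 * y)) = H \<Otimes>\<^sub>M H"
proof -
  have "distr (H \<Otimes>\<^sub>M H) (H \<Otimes>\<^sub>M H) (ginv.T (*) a11 a12 a21 a22) = H \<Otimes>\<^sub>M H"
    by (rule ginv.T_inv[OF ginv1 assms])
  moreover have "ginv.T (*) a11 a12 a21 a22 = (\<lambda>(x, y). (a11 * x + a12 * y, a21 * x + a22 * y))"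
    using ginv.T_def[OF ginv1 assms] ginv.LT_def[OF ginv1] by (auto simp: fun_eq_iff)
  ultimately show ?thesis by simp
qed

lemma max_mult_nonneg: "(a::real) \<ge> 0 \<Longrightarrow> max (a * x) (a * y) = a * max x y"
  by (simp add: max_mult_distrib_left)

lemma ginv2: "ginv p nv (\<lambda>z. max (nv (fst z)) (nv (snd z))) (\<lambda>a z. (a * fst z, a * snd z)) (H \<Otimes>\<^sub>M H)
   (range of_rat \<times> range of_rat) (\<lambda>n. ennreal (rad n) * ennreal (rad n))"
proof (intro ginv.intro ginv_axioms.intro)
  show "qp p nv" by (rule qp_axioms)
  fix x y :: "'k \<times> 'k" and a b :: 'k and n :: nat and c :: "'k \<times> 'k"
  show "max (nv (fst (x + y))) (nv (snd (x + y))) \<le> max (max (nv (fst x)) (nv (snd x))) (max (nv (fst y)) (nv (snd y)))"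
    using nv_ultra[of "fst x" "fst y"] nv_ultra[of "snd x" "snd y"] by (simp add: max_def split: if_splits)
  show "max (nv (fst (a * fst x, a * snd x))) (nv (snd (a * fst x, a * snd x))) = nv a * max (nv (fst x)) (nv (snd x))"
    by (simp add: nv_mult max_mult_nonneg)
  show "(a * fst (x + y), a * snd (x + y)) = (a * fst x, a * snd x) + (a * fst y, a * snd y)"
    by (simp add: algebra_simps)
  show "((a + b) * fst x, (a + b) * snd x) = (a * fst x, a * snd x) + (b * fst x, b * snd x)"
    by (simp add: algebra_simps)
  show "(a * fst (b * fst x, b * snd x), a * snd (b * fst x, b * snd x)) = (a * b * fst x, a * b * snd x)" by simp
  show "(1 * fst x, 1 * snd x) = x" by simp
  show "countable (range (of_rat :: rat \<Rightarrow> 'k) \<times> range of_rat)" by simp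
  show "\<exists>d\<in>range of_rat \<times> range of_rat. max (nv (fst (x - d))) (nv (snd (x - d))) \<le> rad n"
  proof -
    obtain q1 where q1: "nv (fst x - of_rat q1) < rad n" using nv_dense[OF rad_pos[of n]] by blast
    obtain q2 where q2: "nv (snd x - of_rat q2) < rad n" using nv_dense[OF rad_pos[of n]] by blast
    show ?thesis using q1 q2 by (intro bexI[of _ "(of_rat q1, of_rat q2)"]) auto
  qed
  show "sets (H \<Otimes>\<^sub>M H) = sigma_sets UNIV (range (\<lambda>(c, n). {y. max (nv (fst (y - c))) (nv (snd (y - c))) \<le> rad n}))"
  proof -
    have "sets (H \<Otimes>\<^sub>M H) = sigma_sets UNIV (ginv.Gbox p nv)"
      by (rule ginv.sets_PP[OF ginv1])
    also have "ginv.Gbox p nv = range (\<lambda>(c, n). {y. max (nv (fst (y - c))) (nv (snd (y - c))) \<le> rad n})"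
    proof -
      have e: "ginv.vb p nv c n \<times> ginv.vb p nv c' n = {y. max (nv (fst (y - (c, c')))) (nv (snd (y - (c, c')))) \<le> rad n}"
        for c c' n
        using ginv.vb_def[OF ginv1] by auto
      show ?thesis unfolding ginv.Gbox_def[OF ginv1]
      proof (intro equalityI subsetI)
        fix X assume "X \<in> range (\<lambda>(c, c', n). ginv.vb p nv c n \<times> ginv.vb p nv c' n)"
        then obtain c c' n where "X = ginv.vb p nv c n \<times> ginv.vb p nv c' n" by auto
        hence "X = (\<lambda>(c, n). {y. max (nv (fst (y - c))) (nv (snd (y - c))) \<le> rad n}) ((c, c'), n)" using e by simp
        thus "X \<in> range (\<lambda>(c, n). {y. max (nv (fst (y - c))) (nv (snd (y - c))) \<le> rad n})" by blast
      next
        fix X assume "X \<in> range (\<lambda>(c, n). {y. max (nv (fst (y - c))) (nv (snd (y - c))) \<le> rad n})"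
        then obtain c c' n where "X = {y. max (nv (fst (y - (c, c')))) (nv (snd (y - (c, c')))) \<le> rad n}" by auto
        hence "X = (\<lambda>(c, c', n). ginv.vb p nv c n \<times> ginv.vb p nv c' n) (c, c', n)" using e by simp
        thus "X \<in> range (\<lambda>(c, c', n). ginv.vb p nv c n \<times> ginv.vb p nv c' n)" by blast
      qed
    qed
    finally show ?thesis .
  qed
  show "space (H \<Otimes>\<^sub>M H) = UNIV" by (simp add: space_pair_measure)
  show "prob_space (H \<Otimes>\<^sub>M H)" using H_prob by (intro prob_space_pair)
  show "emeasure (H \<Otimes>\<^sub>M H) {y. max (nv (fst (y - c))) (nv (snd (y - c))) \<le> rad n} =
     (if max (nv (fst c)) (nv (snd c)) \<le> 1 then ennreal (rad n) * ennreal (rad n) else 0)"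
  proof -
    interpret HH: prob_space H by (rule H_prob)
    have "{y. max (nv (fst (y - c))) (nv (snd (y - c))) \<le> rad n} = kball (fst c) n \<times> kball (snd c) n"
      unfolding kball_def by auto
    moreover have "emeasure (H \<Otimes>\<^sub>M H) (kball (fst c) n \<times> kball (snd c) n) = emeasure H (kball (fst c) n) * emeasure H (kball (snd c) n)"
      by (intro HH.emeasure_pair_measure_Times) (simp_all add: sets_H kball_sets)
    ultimately show ?thesis by (simp add: H_kball)
  qed
qed

lemma HH_inv:
  assumes "orthonormal_pair nv a11 a12 a21 a22"
  shows "distr ((H \<Otimes>\<^sub>M H) \<Otimes>\<^sub>M (H \<Otimes>\<^sub>M H)) ((H \<Otimes>\<^sub>M H) \<Otimes>\<^sub>M (H \<Otimes>\<^sub>M H))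
    (\<lambda>(x, y). ((a11 * fst x + a12 * fst y, a11 * snd x + a12 * snd y), (a21 * fst x + a22 * fst y, a21 * snd x + a22 * snd y)))
    = (H \<Otimes>\<^sub>M H) \<Otimes>\<^sub>M (H \<Otimes>\<^sub>M H)"
proof -
  let ?sm = "\<lambda>a z. (a * fst z, a * snd z)"
  have "distr ((H \<Otimes>\<^sub>M H) \<Otimes>\<^sub>M (H \<Otimes>\<^sub>M H)) ((H \<Otimes>\<^sub>M H) \<Otimes>\<^sub>M (H \<Otimes>\<^sub>M H)) (ginv.T ?sm a11 a12 a21 a22) = (H \<Otimes>\<^sub>M H) \<Otimes>\<^sub>M (H \<Otimes>\<^sub>M H)"
    by (rule ginv.T_inv[OF ginv2 assms])
  moreover have "ginv.T ?sm a11 a12 a21 a22 = (\<lambda>(x, y). ((a11 * fst x + a12 * fst y, a11 * snd x + a12 * snd y), (a21 * fst x + a22 * fst y, a21 * snd x + a22 * snd y)))"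
    using ginv.T_def[OF ginv2 assms] ginv.LT_def[OF ginv2] by (auto simp: fun_eq_iff)
  ultimately show ?thesis by simp
qed

end


definition j0 :: "(nat \<Rightarrow> nat) \<times> (nat \<Rightarrow> nat) \<Rightarrow> nat set" where
  "j0 z = range (\<lambda>k. prod_encode (0, prod_encode (k, fst z k))) \<union> range (\<lambda>k. prod_encode (1, prod_encode (k, snd z k)))"

lemma j0_inj: "inj j0"
proof (rule injI)
  fix z z' assume e: "j0 z = j0 z'"
  have "fst z k = fst z' k" for k
  proof -
    have "prod_encode (0, prod_encode (k, fst z k)) \<in> j0 z'" using e unfolding j0_def by blast
    thus ?thesis unfolding j0_def by (auto simp: prod_encode_eq)
  qed
  moreover have "snd z k = snd z' k" for k
  proof -
    have "prod_encode (1, prod_encode (k, snd z k)) \<in> j0 z'" using e unfolding j0_def by blast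
    thus ?thesis unfolding j0_def by (auto simp: prod_encode_eq)
  qed
  ultimately show "z = z'" by (simp add: prod_eq_iff fun_eq_iff)
qed

definition bj :: "nat set \<Rightarrow> real" where
  "bj = (SOME f. bij_betw f (UNIV :: nat set set) (UNIV :: real set))"

lemma bj_inj: "inj bj"
proof -
  have "\<exists>f. bij_betw f (UNIV :: nat set set) (UNIV :: real set)"
    using nat_sets_eqpoll_reals unfolding eqpoll_def .
  hence "bij_betw bj (UNIV :: nat set set) (UNIV :: real set)" unfolding bj_def by (rule someI_ex)
  thus ?thesis by (simp add: bij_betw_def)
qed

definition jj :: "(nat \<Rightarrow> nat) \<times> (nat \<Rightarrow> nat) \<Rightarrow> real" where "jj = bj \<circ> j0"

lemma jj_inj: "inj jj" unfolding jj_def using bj_inj j0_inj by (rule inj_compose)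

context qp begin

definition Om2 where "Om2 = Om \<Otimes>\<^sub>M Om"

lemma Om2_prob: "prob_space Om2" unfolding Om2_def using Om_prob by (intro prob_space_pair)

lemma zero_space_Om2: "(\<lambda>_. 0, \<lambda>_. 0) \<in> space Om2"
  using p_gt1 by (simp add: Om2_def space_pair_measure space_Om)

definition jinv :: "real \<Rightarrow> (nat \<Rightarrow> nat) \<times> (nat \<Rightarrow> nat)" where
  "jinv y = (if y \<in> jj ` space Om2 then inv jj y else (\<lambda>_. 0, \<lambda>_. 0))"

lemma jinv_jj: "z \<in> space Om2 \<Longrightarrow> jinv (jj z) = z"
  unfolding jinv_def using jj_inj by (simp add: inv_f_f)

lemma jinv_space: "jinv \<in> UNIV \<rightarrow> space Om2"
  unfolding jinv_def using jj_inj zero_space_Om2 by (auto simp: inv_f_f)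

definition Rsig :: "real measure" where "Rsig = vimage_algebra UNIV jinv Om2"

lemma jinv_meas: "jinv \<in> measurable Rsig Om2"
  unfolding Rsig_def using jinv_space by (rule measurable_vimage_algebra1)

lemma jj_meas: "jj \<in> measurable Om2 Rsig"
  unfolding Rsig_def
proof (rule measurable_vimage_algebra2)
  show "jj \<in> space Om2 \<rightarrow> UNIV" by simp
  show "(\<lambda>x. jinv (jj x)) \<in> measurable Om2 Om2"
    by (rule measurable_cong[THEN iffD2, of _ _ "\<lambda>x. x"]) (simp_all add: jinv_jj)
qed

definition M0 :: "real measure" where "M0 = distr Om2 Rsig jj"

lemma M0_prob: "prob_space M0"
  unfolding M0_def using Om2_prob jj_meas by (rule prob_space.prob_space_distr)

lemma meas_M0: "measurable M0 N = measurable Rsig N" unfolding M0_def by simp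

definition A0 :: "real \<Rightarrow> 'k" where "A0 \<omega> = psi (fst (jinv \<omega>))"
definition B0 :: "real \<Rightarrow> 'k" where "B0 \<omega> = psi (snd (jinv \<omega>))"

lemma A0_meas: "A0 \<in> measurable M0 (Kborel nv)"
  unfolding meas_M0 A0_def Om2_def[symmetric]
  using measurable_comp[OF measurable_comp[OF jinv_meas[unfolded Om2_def] measurable_fst] psi_meas]
  by (simp add: comp_def)

lemma B0_meas: "B0 \<in> measurable M0 (Kborel nv)"
  unfolding meas_M0 B0_def
  using measurable_comp[OF measurable_comp[OF jinv_meas[unfolded Om2_def] measurable_snd] psi_meas]
  by (simp add: comp_def)

lemma AB0_meas: "(\<lambda>\<omega>. (A0 \<omega>, B0 \<omega>)) \<in> measurable M0 (Kborel nv \<Otimes>\<^sub>M Kborel nv)"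
  using A0_meas B0_meas by (rule measurable_Pair)

lemma AB0_law: "distr M0 (Kborel nv \<Otimes>\<^sub>M Kborel nv) (\<lambda>\<omega>. (A0 \<omega>, B0 \<omega>)) = H \<Otimes>\<^sub>M H"
proof -
  have "distr M0 (Kborel nv \<Otimes>\<^sub>M Kborel nv) (\<lambda>\<omega>. (A0 \<omega>, B0 \<omega>))
     = distr Om2 (Kborel nv \<Otimes>\<^sub>M Kborel nv) ((\<lambda>\<omega>. (A0 \<omega>, B0 \<omega>)) \<circ> jj)"
    unfolding M0_def using AB0_meas[unfolded meas_M0] jj_meas by (rule distr_distr)
  also have "\<dots> = distr (Om \<Otimes>\<^sub>M Om) (Kborel nv \<Otimes>\<^sub>M Kborel nv) (\<lambda>(x, y). (psi x, psi y))"
    by (rule distr_cong) (auto simp: Om2_def A0_def B0_def jinv_jj[unfolded Om2_def])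
  also have "\<dots> = H \<Otimes>\<^sub>M H"
    unfolding H_def
    by (rule pair_measure_distr[symmetric]) (use psi_meas H_prob in \<open>auto simp: H_def prob_space_imp_sigma_finite\<close>)
  finally show ?thesis .
qed

lemma law_pair: 
  assumes F: "F \<in> measurable (Kborel nv \<Otimes>\<^sub>M Kborel nv) N"
  shows "distr M0 N (\<lambda>\<omega>. F (A0 \<omega>, B0 \<omega>)) = distr (H \<Otimes>\<^sub>M H) N F"
proof -
  have "distr M0 N (\<lambda>\<omega>. F (A0 \<omega>, B0 \<omega>)) = distr M0 N (F \<circ> (\<lambda>\<omega>. (A0 \<omega>, B0 \<omega>)))" by (simp add: comp_def)
  also have "\<dots> = distr (distr M0 (Kborel nv \<Otimes>\<^sub>M Kborel nv) (\<lambda>\<omega>. (A0 \<omega>, B0 \<omega>))) N F"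
    using F AB0_meas by (rule distr_distr[symmetric])
  also have "\<dots> = distr (H \<Otimes>\<^sub>M H) N F" by (simp add: AB0_law)
  finally show ?thesis .
qed

lemma law_A: 
  assumes F: "F \<in> measurable (Kborel nv) N"
  shows "distr M0 N (\<lambda>\<omega>. F (A0 \<omega>)) = distr H N F"
proof -
  have "distr M0 N (\<lambda>\<omega>. F (A0 \<omega>)) = distr M0 N (\<lambda>\<omega>. (F \<circ> fst) (A0 \<omega>, B0 \<omega>))" by simp
  also have "\<dots> = distr (H \<Otimes>\<^sub>M H) N (F \<circ> fst)"
    using F by (intro law_pair) auto
  also have "\<dots> = distr (distr (H \<Otimes>\<^sub>M H) H fst) N F"
    using F by (intro distr_distr[symmetric]) (auto simp: sets_H measurable_cong_sets[OF sets_H refl])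
  also have "distr (H \<Otimes>\<^sub>M H) H fst = H"
    using H_prob by (intro prob_space.distr_pair_fst)
  finally show ?thesis by (simp cong: distr_cong add: sets_H)
qed

lemma UNIV_Kborel: "UNIV \<in> sets (Kborel nv)"
  using sets.top[of "Kborel nv"] by simp

lemma prob_B_small: "measure M0 {\<omega> \<in> space M0. nv (B0 \<omega>) \<le> rad k} = rad k"
proof -
  interpret H: prob_space H by (rule H_prob)
  have "{\<omega> \<in> space M0. nv (B0 \<omega>) \<le> rad k} = (\<lambda>\<omega>. (A0 \<omega>, B0 \<omega>)) -` (UNIV \<times> kball 0 k) \<inter> space M0"
    by (auto simp: kball_def)
  moreover have S: "UNIV \<times> kball 0 k \<in> sets (Kborel nv \<Otimes>\<^sub>M Kborel nv)"
    by (rule pair_measureI[OF UNIV_Kborel kball_sets])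
  ultimately have "emeasure M0 {\<omega> \<in> space M0. nv (B0 \<omega>) \<le> rad k} = emeasure (distr M0 (Kborel nv \<Otimes>\<^sub>M Kborel nv) (\<lambda>\<omega>. (A0 \<omega>, B0 \<omega>))) (UNIV \<times> kball 0 k)"
    by (simp add: emeasure_distr[OF AB0_meas S])
  also have "\<dots> = emeasure H UNIV * emeasure H (kball 0 k)"
    unfolding AB0_law by (intro H.emeasure_pair_measure_Times) (auto simp: sets_H kball_sets UNIV_Kborel)
  also have "\<dots> = ennreal (rad k)" using H.emeasure_space_1 H_kball[of 0 k] by simp
  finally show ?thesis using rad_pos[of k] by (simp add: measure_def)
qed

lemma prob_A_small: "measure M0 {\<omega> \<in> space M0. nv (A0 \<omega>) \<le> rad k} = rad k"
proof -
  interpret H: prob_space H by (rule H_prob)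
  have "{\<omega> \<in> space M0. nv (A0 \<omega>) \<le> rad k} = (\<lambda>\<omega>. (A0 \<omega>, B0 \<omega>)) -` (kball 0 k \<times> UNIV) \<inter> space M0"
    by (auto simp: kball_def)
  moreover have S: "kball 0 k \<times> UNIV \<in> sets (Kborel nv \<Otimes>\<^sub>M Kborel nv)"
    by (rule pair_measureI[OF kball_sets UNIV_Kborel])
  ultimately have "emeasure M0 {\<omega> \<in> space M0. nv (A0 \<omega>) \<le> rad k} = emeasure (distr M0 (Kborel nv \<Otimes>\<^sub>M Kborel nv) (\<lambda>\<omega>. (A0 \<omega>, B0 \<omega>))) (kball 0 k \<times> UNIV)"
    by (simp add: emeasure_distr[OF AB0_meas S])
  also have "\<dots> = emeasure H (kball 0 k) * emeasure H UNIV"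
    unfolding AB0_law by (intro H.emeasure_pair_measure_Times) (auto simp: sets_H kball_sets UNIV_Kborel)
  also have "\<dots> = ennreal (rad k)" using H.emeasure_space_1 H_kball[of 0 k] by simp
  finally show ?thesis using rad_pos[of k] by (simp add: measure_def)
qed

lemma A0_Zp: "nv (A0 \<omega>) \<le> 1" unfolding A0_def by (rule psi_Zp)
lemma B0_Zp: "nv (B0 \<omega>) \<le> 1" unfolding B0_def by (rule psi_Zp)

end


context qp begin

definition Phi1 :: "'k \<Rightarrow> 'k \<Rightarrow> 'k" where "Phi1 a = (\<lambda>x. if x \<in> Zp nv then a else 0)"
definition Phi2 :: "'k \<Rightarrow> 'k \<times> 'k \<Rightarrow> 'k \<Rightarrow> 'k" where
  "Phi2 c z = (\<lambda>x. if x \<in> Zp nv then fst z + snd z * (x + c) else 0)"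

lemma Phi1_cc: "Phi1 a \<in> Ccarrier nv" unfolding Phi1_def by (rule cc_const)

lemma Phi2_cc: "Phi2 c z \<in> Ccarrier nv"
proof -
  have "(\<lambda>x. (if x \<in> Zp nv then fst z else 0) + snd z * (if x \<in> Zp nv then x + c else 0)) \<in> Ccarrier nv"
    by (intro cc_add cc_smult cc_const cc_id)
  moreover have "(\<lambda>x. (if x \<in> Zp nv then fst z else 0) + snd z * (if x \<in> Zp nv then x + c else 0)) = Phi2 c z"
    unfolding Phi2_def by (auto simp: fun_eq_iff)
  ultimately show ?thesis by simp
qed

lemma Phi1_meas: "Phi1 \<in> measurable (Kborel nv) (Cborel nv)"
proof (rule K_to_C_meas)
  show "Phi1 a \<in> Ccarrier nv" for a by (rule Phi1_cc)
  fix a and e :: real assume e: "e > 0"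
  show "\<exists>d>0. \<forall>a'. nv (a' - a) < d \<longrightarrow> supnorm nv (\<lambda>x. Phi1 a' x - Phi1 a x) < e"
  proof (intro exI[of _ e] conjI allI impI e)
    fix a' assume a': "nv (a' - a) < e"
    have "supnorm nv (\<lambda>x. Phi1 a' x - Phi1 a x) \<le> nv (a' - a)"
      by (rule supnorm_le) (simp add: Phi1_def)
    thus "supnorm nv (\<lambda>x. Phi1 a' x - Phi1 a x) < e" using a' by simp
  qed
qed

lemma Phi2_meas: "Phi2 c \<in> measurable (Kborel nv \<Otimes>\<^sub>M Kborel nv) (Cborel nv)"
proof (rule K2_to_C_meas)
  show "Phi2 c (a, b) \<in> Ccarrier nv" for a b by (rule Phi2_cc)
  fix a b and e :: real assume e: "e > 0"
  define m where "m = max 1 (nv c)"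
  have m: "m \<ge> 1" unfolding m_def by simp
  show "\<exists>d>0. \<forall>a' b'. nv (a' - a) < d \<longrightarrow> nv (b' - b) < d \<longrightarrow>
       supnorm nv (\<lambda>x. Phi2 c (a', b') x - Phi2 c (a, b) x) < e"
  proof (intro exI[of _ "e / m"] conjI allI impI)
    show "e / m > 0" using e m by simp
    fix a' b' assume a': "nv (a' - a) < e / m" and b': "nv (b' - b) < e / m"
    have "supnorm nv (\<lambda>x. Phi2 c (a', b') x - Phi2 c (a, b) x) \<le> max (nv (a' - a)) (nv (b' - b) * m)"
    proof (rule supnorm_le)
      fix x assume x: "x \<in> Zp nv"
      have "Phi2 c (a', b') x - Phi2 c (a, b) x = (a' - a) + (b' - b) * (x + c)"
        using x unfolding Phi2_def by (simp add: algebra_simps)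
      moreover have "nv ((a' - a) + (b' - b) * (x + c)) \<le> max (nv (a' - a)) (nv (b' - b) * m)"
      proof -
        have "nv (x + c) \<le> m" using nv_ultra[of x c] x unfolding m_def by simp
        hence "nv ((b' - b) * (x + c)) \<le> nv (b' - b) * m" by (simp add: nv_mult mult_left_mono)
        thus ?thesis using nv_ultra[of "a' - a" "(b' - b) * (x + c)"] by (simp add: max_def split: if_splits)
      qed
      ultimately show "nv (Phi2 c (a', b') x - Phi2 c (a, b) x) \<le> max (nv (a' - a)) (nv (b' - b) * m)" by simp
    qed
    also have "\<dots> < e"
    proof -
      have "e / m \<le> e" using e m by (simp add: divide_le_eq)
      hence "nv (a' - a) < e" using a' by linarith
      moreover have "nv (b' - b) * m < e" using b' m by (simp add: pos_less_divide_eq)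
      ultimately show ?thesis by simp
    qed
    finally show "supnorm nv (\<lambda>x. Phi2 c (a', b') x - Phi2 c (a, b) x) < e" .
  qed
qed

lemma onp_shift: "nv s \<le> 1 \<Longrightarrow> orthonormal_pair nv 1 s 0 1"
  unfolding orthonormal_pair_def
proof (intro allI)
  fix b1 b2 :: 'k assume s: "nv s \<le> 1"
  have "nv (b1 * s) \<le> nv b1" using s by (simp add: nv_mult mult_left_le)
  hence "max (nv b1) (nv (b1 * s + b2)) = max (nv b1) (nv b2)"
    using nv_ultra[of "b1 * s" b2] nv_ultra[of "b1 * s + b2" "- (b1 * s)"]
    by (simp add: max_def split: if_splits)
  thus "max (nv (b1 * 1 + b2 * 0)) (nv (b1 * s + b2 * 1)) = max (nv b1) (nv b2)" by simp
qed

lemma T1_meas: "orthonormal_pair nv a11 a12 a21 a22 \<Longrightarrow>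
   (\<lambda>z. (a11 * fst z + a12 * snd z, a21 * fst z + a22 * snd z)) \<in> measurable (H \<Otimes>\<^sub>M H) (H \<Otimes>\<^sub>M H)"
proof -
  assume onp: "orthonormal_pair nv a11 a12 a21 a22"
  have "ginv.T (*) a11 a12 a21 a22 \<in> measurable (H \<Otimes>\<^sub>M H) (H \<Otimes>\<^sub>M H)"
    by (rule ginv.T_meas[OF ginv1 onp])
  moreover have "ginv.T (*) a11 a12 a21 a22 = (\<lambda>z. (a11 * fst z + a12 * snd z, a21 * fst z + a22 * snd z))"
    using ginv.T_def[OF ginv1 onp] ginv.LT_def[OF ginv1] by (auto simp: fun_eq_iff)
  ultimately show ?thesis by simp
qed

lemma T2_meas: "orthonormal_pair nv a11 a12 a21 a22 \<Longrightarrow>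
   (\<lambda>(x, y). ((a11 * fst x + a12 * fst y, a11 * snd x + a12 * snd y), (a21 * fst x + a22 * fst y, a21 * snd x + a22 * snd y)))
    \<in> measurable ((H \<Otimes>\<^sub>M H) \<Otimes>\<^sub>M (H \<Otimes>\<^sub>M H)) ((H \<Otimes>\<^sub>M H) \<Otimes>\<^sub>M (H \<Otimes>\<^sub>M H))"
proof -
  assume onp: "orthonormal_pair nv a11 a12 a21 a22"
  let ?sm = "\<lambda>a z. (a * fst z, a * snd z)"
  have "ginv.T ?sm a11 a12 a21 a22 \<in> measurable ((H \<Otimes>\<^sub>M H) \<Otimes>\<^sub>M (H \<Otimes>\<^sub>M H)) ((H \<Otimes>\<^sub>M H) \<Otimes>\<^sub>M (H \<Otimes>\<^sub>M H))"
    by (rule ginv.T_meas[OF ginv2 onp])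
  moreover have "ginv.T ?sm a11 a12 a21 a22 = (\<lambda>(x, y). ((a11 * fst x + a12 * fst y, a11 * snd x + a12 * snd y), (a21 * fst x + a22 * fst y, a21 * snd x + a22 * snd y)))"
    using ginv.T_def[OF ginv2 onp] ginv.LT_def[OF ginv2] by (auto simp: fun_eq_iff)
  ultimately show ?thesis by simp
qed

lemma sets_HH: "sets (H \<Otimes>\<^sub>M H) = sets (Kborel nv \<Otimes>\<^sub>M Kborel nv)"
  using sets_H by (intro sets_pair_measure_cong) auto

end

context qpb begin

lemma gauss_from:
  assumes Q: "prob_space Q" and Phi: "\<Phi> \<in> measurable Q (Cborel nv)"
  and T: "\<And>a11 a12 a21 a22. orthonormal_pair nv a11 a12 a21 a22 \<Longrightarrow> \<exists>Tm. Tm \<in> measurable (Q \<Otimes>\<^sub>M Q) (Q \<Otimes>\<^sub>M Q) \<and>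
      distr (Q \<Otimes>\<^sub>M Q) (Q \<Otimes>\<^sub>M Q) Tm = Q \<Otimes>\<^sub>M Q \<and>
      (\<forall>z \<in> space (Q \<Otimes>\<^sub>M Q). (C_add (C_smult a11 (\<Phi> (fst z))) (C_smult a12 (\<Phi> (snd z))),
          C_add (C_smult a21 (\<Phi> (fst z))) (C_smult a22 (\<Phi> (snd z)))) = (\<Phi> (fst (Tm z)), \<Phi> (snd (Tm z))))"
  shows "qgauss_law nv (Cborel nv) C_add C_smult (distr Q (Cborel nv) \<Phi>)"
  unfolding qgauss_law_def
proof (intro allI impI)
  fix a11 a12 a21 a22 assume onp: "orthonormal_pair nv a11 a12 a21 a22"
  obtain Tm where Tm: "Tm \<in> measurable (Q \<Otimes>\<^sub>M Q) (Q \<Otimes>\<^sub>M Q)" "distr (Q \<Otimes>\<^sub>M Q) (Q \<Otimes>\<^sub>M Q) Tm = Q \<Otimes>\<^sub>M Q"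
    "\<forall>z \<in> space (Q \<Otimes>\<^sub>M Q). (C_add (C_smult a11 (\<Phi> (fst z))) (C_smult a12 (\<Phi> (snd z))),
          C_add (C_smult a21 (\<Phi> (fst z))) (C_smult a22 (\<Phi> (snd z)))) = (\<Phi> (fst (Tm z)), \<Phi> (snd (Tm z)))"
    using T[OF onp] by blast
  let ?\<mu> = "distr Q (Cborel nv) \<Phi>"
  let ?PP = "\<lambda>(x, y). (\<Phi> x, \<Phi> y)"
  let ?G = "\<lambda>(x, y). (C_add (C_smult a11 x) (C_smult a12 y), C_add (C_smult a21 x) (C_smult a22 y))"
  have sf: "sigma_finite_measure ?\<mu>"
    using prob_space.prob_space_distr[OF Q Phi] by (rule prob_space_imp_sigma_finite)
  have PPm: "?PP \<in> measurable (Q \<Otimes>\<^sub>M Q) (Cborel nv \<Otimes>\<^sub>M Cborel nv)"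
    using Phi by (auto simp: case_prod_beta')
  have mu2: "?\<mu> \<Otimes>\<^sub>M ?\<mu> = distr (Q \<Otimes>\<^sub>M Q) (Cborel nv \<Otimes>\<^sub>M Cborel nv) ?PP"
    by (rule pair_measure_distr[OF Phi Phi sf])
  have "distr (?\<mu> \<Otimes>\<^sub>M ?\<mu>) (Cborel nv \<Otimes>\<^sub>M Cborel nv) ?G = distr (Q \<Otimes>\<^sub>M Q) (Cborel nv \<Otimes>\<^sub>M Cborel nv) (?G \<circ> ?PP)"
    unfolding mu2 by (rule distr_distr[OF gmap_meas[OF onp] PPm])
  also have "\<dots> = distr (Q \<Otimes>\<^sub>M Q) (Cborel nv \<Otimes>\<^sub>M Cborel nv) (?PP \<circ> Tm)"
    using Tm(3) by (intro distr_cong) (auto simp: case_prod_beta')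
  also have "\<dots> = distr (distr (Q \<Otimes>\<^sub>M Q) (Q \<Otimes>\<^sub>M Q) Tm) (Cborel nv \<Otimes>\<^sub>M Cborel nv) ?PP"
    by (rule distr_distr[symmetric, OF PPm Tm(1)])
  also have "\<dots> = ?\<mu> \<Otimes>\<^sub>M ?\<mu>" unfolding Tm(2) mu2 ..
  finally show "distr (?\<mu> \<Otimes>\<^sub>M ?\<mu>) (Cborel nv \<Otimes>\<^sub>M Cborel nv) ?G = ?\<mu> \<Otimes>\<^sub>M ?\<mu>" .
qed

definition X1 :: "real \<Rightarrow> 'k \<Rightarrow> 'k" where "X1 \<omega> = Phi1 (A0 \<omega>)"
definition X2 :: "'k \<Rightarrow> real \<Rightarrow> 'k \<Rightarrow> 'k" where "X2 c \<omega> = Phi2 c (A0 \<omega>, B0 \<omega>)"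

lemma X1_meas: "X1 \<in> measurable M0 (Cborel nv)"
  unfolding X1_def using measurable_comp[OF A0_meas Phi1_meas] by (simp add: comp_def)

lemma X2_meas: "X2 c \<in> measurable M0 (Cborel nv)"
  unfolding X2_def using measurable_comp[OF AB0_meas Phi2_meas] by (simp add: comp_def)

lemma X1_law: "distr M0 (Cborel nv) X1 = distr H (Cborel nv) Phi1"
  unfolding X1_def by (rule law_A[OF Phi1_meas])

lemma X2_law: "distr M0 (Cborel nv) (X2 c) = distr (H \<Otimes>\<^sub>M H) (Cborel nv) (Phi2 c)"
  unfolding X2_def by (rule law_pair[OF Phi2_meas])

lemma X1_gauss: "C_gaussian_rv nv M0 X1"
  unfolding C_gaussian_rv_def X1_law
proof (intro conjI X1_meas gauss_from H_prob)
  show "Phi1 \<in> measurable H (Cborel nv)" using Phi1_meas by (simp add: measurable_cong_sets[OF sets_H refl])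
  fix a11 a12 a21 a22 assume onp: "orthonormal_pair nv a11 a12 a21 a22"
  let ?T = "\<lambda>z. (a11 * fst z + a12 * snd z, a21 * fst z + a22 * snd z)"
  have "distr (H \<Otimes>\<^sub>M H) (H \<Otimes>\<^sub>M H) ?T = H \<Otimes>\<^sub>M H"
    using H_inv[OF onp] by (simp add: case_prod_beta')
  moreover have "\<forall>z \<in> space (H \<Otimes>\<^sub>M H). (C_add (C_smult a11 (Phi1 (fst z))) (C_smult a12 (Phi1 (snd z))),
          C_add (C_smult a21 (Phi1 (fst z))) (C_smult a22 (Phi1 (snd z)))) = (Phi1 (fst (?T z)), Phi1 (snd (?T z)))"
    by (auto simp: C_add_def C_smult_def Phi1_def fun_eq_iff)
  ultimately show "\<exists>Tm. Tm \<in> measurable (H \<Otimes>\<^sub>M H) (H \<Otimes>\<^sub>M H) \<and> distr (H \<Otimes>\<^sub>M H) (H \<Otimes>\<^sub>M H) Tm = H \<Otimes>\<^sub>M H \<and>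
      (\<forall>z \<in> space (H \<Otimes>\<^sub>M H). (C_add (C_smult a11 (Phi1 (fst z))) (C_smult a12 (Phi1 (snd z))),
          C_add (C_smult a21 (Phi1 (fst z))) (C_smult a22 (Phi1 (snd z)))) = (Phi1 (fst (Tm z)), Phi1 (snd (Tm z))))"
    using T1_meas[OF onp] by blast
qed

lemma X2_gauss: "C_gaussian_rv nv M0 (X2 c)"
  unfolding C_gaussian_rv_def X2_law
proof (intro conjI X2_meas gauss_from prob_space_pair H_prob)
  show "Phi2 c \<in> measurable (H \<Otimes>\<^sub>M H) (Cborel nv)" using Phi2_meas by (simp add: measurable_cong_sets[OF sets_HH refl])
  fix a11 a12 a21 a22 assume onp: "orthonormal_pair nv a11 a12 a21 a22"
  let ?T = "\<lambda>(x, y). ((a11 * fst x + a12 * fst y, a11 * snd x + a12 * snd y), (a21 * fst x + a22 * fst y, a21 * snd x + a22 * snd y))"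
  have "distr ((H \<Otimes>\<^sub>M H) \<Otimes>\<^sub>M (H \<Otimes>\<^sub>M H)) ((H \<Otimes>\<^sub>M H) \<Otimes>\<^sub>M (H \<Otimes>\<^sub>M H)) ?T = (H \<Otimes>\<^sub>M H) \<Otimes>\<^sub>M (H \<Otimes>\<^sub>M H)"
    by (rule HH_inv[OF onp])
  moreover have "\<forall>z \<in> space ((H \<Otimes>\<^sub>M H) \<Otimes>\<^sub>M (H \<Otimes>\<^sub>M H)). (C_add (C_smult a11 (Phi2 c (fst z))) (C_smult a12 (Phi2 c (snd z))),
          C_add (C_smult a21 (Phi2 c (fst z))) (C_smult a22 (Phi2 c (snd z)))) = (Phi2 c (fst (?T z)), Phi2 c (snd (?T z)))"
    by (auto simp: C_add_def C_smult_def Phi2_def fun_eq_iff case_prod_beta' algebra_simps)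
  ultimately show "\<exists>Tm. Tm \<in> measurable ((H \<Otimes>\<^sub>M H) \<Otimes>\<^sub>M (H \<Otimes>\<^sub>M H)) ((H \<Otimes>\<^sub>M H) \<Otimes>\<^sub>M (H \<Otimes>\<^sub>M H)) \<and>
      distr ((H \<Otimes>\<^sub>M H) \<Otimes>\<^sub>M (H \<Otimes>\<^sub>M H)) ((H \<Otimes>\<^sub>M H) \<Otimes>\<^sub>M (H \<Otimes>\<^sub>M H)) Tm = (H \<Otimes>\<^sub>M H) \<Otimes>\<^sub>M (H \<Otimes>\<^sub>M H) \<and>
      (\<forall>z \<in> space ((H \<Otimes>\<^sub>M H) \<Otimes>\<^sub>M (H \<Otimes>\<^sub>M H)). (C_add (C_smult a11 (Phi2 c (fst z))) (C_smult a12 (Phi2 c (snd z))),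
          C_add (C_smult a21 (Phi2 c (fst z))) (C_smult a22 (Phi2 c (snd z)))) = (Phi2 c (fst (Tm z)), Phi2 c (snd (Tm z))))"
    using T2_meas[OF onp] by blast
qed

lemma X1_stat: "C_stationary nv M0 X1"
  unfolding C_stationary_def
proof
  fix s assume s: "s \<in> Zp nv"
  have "(\<lambda>\<omega>. C_shift nv s (X1 \<omega>)) = X1"
    using s by (auto simp: fun_eq_iff C_shift_def X1_def Phi1_def nv_ultra_le)
  thus "distr M0 (Cborel nv) (\<lambda>\<omega>. C_shift nv s (X1 \<omega>)) = distr M0 (Cborel nv) X1" by simp
qed

lemma X2_stat: "C_stationary nv M0 (X2 c)"
  unfolding C_stationary_def
proof
  fix s assume s: "s \<in> Zp nv"
  let ?T = "\<lambda>z. (1 * fst z + s * snd z, 0 * fst z + 1 * snd z)"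
  have onp: "orthonormal_pair nv 1 s 0 1" using s by (intro onp_shift) simp
  have Tm: "?T \<in> measurable (H \<Otimes>\<^sub>M H) (H \<Otimes>\<^sub>M H)" by (rule T1_meas[OF onp])
  have Tm': "?T \<in> measurable (Kborel nv \<Otimes>\<^sub>M Kborel nv) (Kborel nv \<Otimes>\<^sub>M Kborel nv)"
    using Tm by (simp add: measurable_cong_sets[OF sets_HH sets_HH])
  have eq: "(\<lambda>\<omega>. C_shift nv s (X2 c \<omega>)) = (\<lambda>\<omega>. (Phi2 c \<circ> ?T) (A0 \<omega>, B0 \<omega>))"
    using s by (auto simp: fun_eq_iff C_shift_def X2_def Phi2_def nv_ultra_le algebra_simps)
  have "distr M0 (Cborel nv) (\<lambda>\<omega>. C_shift nv s (X2 c \<omega>)) = distr (H \<Otimes>\<^sub>M H) (Cborel nv) (Phi2 c \<circ> ?T)"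
    unfolding eq by (rule law_pair) (rule measurable_comp[OF Tm' Phi2_meas])
  also have "\<dots> = distr (distr (H \<Otimes>\<^sub>M H) (H \<Otimes>\<^sub>M H) ?T) (Cborel nv) (Phi2 c)"
    using Phi2_meas Tm by (intro distr_distr[symmetric]) (auto simp: measurable_cong_sets[OF sets_HH refl])
  also have "distr (H \<Otimes>\<^sub>M H) (H \<Otimes>\<^sub>M H) ?T = H \<Otimes>\<^sub>M H"
    using H_inv[OF onp] by (simp add: case_prod_beta')
  also have "distr (H \<Otimes>\<^sub>M H) (Cborel nv) (Phi2 c) = distr M0 (Cborel nv) (X2 c)" by (rule X2_law[symmetric])
  finally show "distr M0 (Cborel nv) (\<lambda>\<omega>. C_shift nv s (X2 c \<omega>)) = distr M0 (Cborel nv) (X2 c)" .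
qed

end


context qpb begin

definition rep :: "(nat \<Rightarrow> 'k) \<Rightarrow> ('k \<Rightarrow> 'k) \<Rightarrow> bool" where
  "rep \<alpha> g \<longleftrightarrow> (\<lambda>N. supnorm nv (\<lambda>x. g x - (\<Sum>n<N. \<alpha> n * f n x))) \<longlonglongrightarrow> 0"

lemma psum_cc: "(\<lambda>x. \<Sum>n<N. \<alpha> n * f n x) \<in> Ccarrier nv"
  using f_cc by (intro cc_sum) auto

lemma rep_unique:
  assumes g: "g \<in> Ccarrier nv" and a: "rep \<alpha> g" and b: "rep \<beta> g"
  shows "\<alpha> = \<beta>"
proof
  fix n show "\<alpha> n = \<beta> n"
  proof (rule ccontr)
    assume ne: "\<alpha> n \<noteq> \<beta> n"
    define \<delta> where "\<delta> = nv (\<alpha> n - \<beta> n)"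
    have d: "\<delta> > 0" unfolding \<delta>_def using ne nv_pos by simp
    have "eventually (\<lambda>N. supnorm nv (\<lambda>x. g x - (\<Sum>n<N. \<alpha> n * f n x)) < \<delta>) sequentially"
      using a d unfolding rep_def by (intro order_tendstoD(2)) auto
    moreover have "eventually (\<lambda>N. supnorm nv (\<lambda>x. g x - (\<Sum>n<N. \<beta> n * f n x)) < \<delta>) sequentially"
      using b d unfolding rep_def by (intro order_tendstoD(2)) auto
    ultimately have "eventually (\<lambda>N. supnorm nv (\<lambda>x. g x - (\<Sum>n<N. \<alpha> n * f n x)) < \<delta> \<and>
        supnorm nv (\<lambda>x. g x - (\<Sum>n<N. \<beta> n * f n x)) < \<delta>) sequentially" by (rule eventually_conj)
    then obtain N0 where N0': "\<forall>N\<ge>N0. supnorm nv (\<lambda>x. g x - (\<Sum>n<N. \<alpha> n * f n x)) < \<delta> \<and>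
        supnorm nv (\<lambda>x. g x - (\<Sum>n<N. \<beta> n * f n x)) < \<delta>"
      unfolding eventually_sequentially by blast
    have N0: "\<And>N. N \<ge> N0 \<Longrightarrow> supnorm nv (\<lambda>x. g x - (\<Sum>n<N. \<alpha> n * f n x)) < \<delta> \<and>
        supnorm nv (\<lambda>x. g x - (\<Sum>n<N. \<beta> n * f n x)) < \<delta>" using N0' by blast
    define N where "N = max N0 (Suc n)"
    have N: "N \<ge> N0" "n < N" unfolding N_def by auto
    have eq: "(\<lambda>x. \<Sum>k<N. (\<alpha> k - \<beta> k) * f k x) = (\<lambda>x. (\<Sum>k<N. \<alpha> k * f k x) - (\<Sum>k<N. \<beta> k * f k x))"
      by (simp add: sum_subtractf[symmetric] left_diff_distrib)
    have "\<delta> \<le> Max ((\<lambda>k. nv (\<alpha> k - \<beta> k)) ` {..<N})"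
      unfolding \<delta>_def using N(2) by (intro Max_ge) auto
    also have "\<dots> = supnorm nv (\<lambda>x. \<Sum>k<N. (\<alpha> k - \<beta> k) * f k x)"
      using N(2) by (intro f_orth[symmetric]) auto
    also have "\<dots> = supnorm nv (\<lambda>x. (\<Sum>k<N. \<alpha> k * f k x) - (\<Sum>k<N. \<beta> k * f k x))" unfolding eq ..
    also have "\<dots> \<le> max (supnorm nv (\<lambda>x. (\<Sum>k<N. \<alpha> k * f k x) - g x)) (supnorm nv (\<lambda>x. g x - (\<Sum>k<N. \<beta> k * f k x)))"
      by (intro supnorm_ultra_diff cc_bnd psum_cc g)
    also have "\<dots> < \<delta>" using N0[OF N(1)] supnorm_commute[of "\<lambda>x. \<Sum>k<N. \<alpha> k * f k x" g] by simp
    finally show False by simp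
  qed
qed

lemma rep_smult:
  assumes g: "g \<in> Ccarrier nv" and a: "rep \<alpha> g"
  shows "rep (\<lambda>n. c * \<alpha> n) (\<lambda>x. c * g x)"
proof -
  have "supnorm nv (\<lambda>x. c * g x - (\<Sum>n<N. c * \<alpha> n * f n x)) = nv c * supnorm nv (\<lambda>x. g x - (\<Sum>n<N. \<alpha> n * f n x))" for N
  proof -
    have "(\<lambda>x. c * g x - (\<Sum>n<N. c * \<alpha> n * f n x)) = (\<lambda>x. c * (g x - (\<Sum>n<N. \<alpha> n * f n x)))"
      by (simp add: sum_distrib_left right_diff_distrib mult.assoc)
    thus ?thesis by (simp add: supnorm_smult bnd_diff cc_bnd g psum_cc)
  qed
  moreover have "(\<lambda>N. nv c * supnorm nv (\<lambda>x. g x - (\<Sum>n<N. \<alpha> n * f n x))) \<longlonglongrightarrow> 0"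
    using a unfolding rep_def by (intro tendsto_mult_right_zero)
  ultimately show ?thesis unfolding rep_def by simp
qed

lemma rep_add:
  assumes g: "g \<in> Ccarrier nv" and h: "h \<in> Ccarrier nv" and a: "rep \<alpha> g" and b: "rep \<beta> h"
  shows "rep (\<lambda>n. \<alpha> n + \<beta> n) (\<lambda>x. g x + h x)"
  unfolding rep_def
proof (rule tendsto_sandwich[of "\<lambda>_. 0" _ _ "\<lambda>N. max (supnorm nv (\<lambda>x. g x - (\<Sum>n<N. \<alpha> n * f n x))) (supnorm nv (\<lambda>x. h x - (\<Sum>n<N. \<beta> n * f n x)))"])
  show "\<forall>\<^sub>F N in sequentially. 0 \<le> supnorm nv (\<lambda>x. g x + h x - (\<Sum>n<N. (\<alpha> n + \<beta> n) * f n x))"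
    by (intro always_eventually allI supnorm_nonneg bnd_diff bnd_add cc_bnd g h psum_cc)
  show "\<forall>\<^sub>F N in sequentially. supnorm nv (\<lambda>x. g x + h x - (\<Sum>n<N. (\<alpha> n + \<beta> n) * f n x)) \<le>
     max (supnorm nv (\<lambda>x. g x - (\<Sum>n<N. \<alpha> n * f n x))) (supnorm nv (\<lambda>x. h x - (\<Sum>n<N. \<beta> n * f n x)))"
  proof (intro always_eventually allI)
    fix N
    have "(\<lambda>x. g x + h x - (\<Sum>n<N. (\<alpha> n + \<beta> n) * f n x)) = (\<lambda>x. (g x - (\<Sum>n<N. \<alpha> n * f n x)) + (h x - (\<Sum>n<N. \<beta> n * f n x)))"
      by (auto simp: fun_eq_iff distrib_right sum.distrib algebra_simps)
    thus "supnorm nv (\<lambda>x. g x + h x - (\<Sum>n<N. (\<alpha> n + \<beta> n) * f n x)) \<le>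
     max (supnorm nv (\<lambda>x. g x - (\<Sum>n<N. \<alpha> n * f n x))) (supnorm nv (\<lambda>x. h x - (\<Sum>n<N. \<beta> n * f n x)))"
      by (simp add: supnorm_ultra bnd_diff cc_bnd g h psum_cc)
  qed
  show "(\<lambda>_. 0) \<longlonglongrightarrow> (0::real)" by simp
  show "(\<lambda>N. max (supnorm nv (\<lambda>x. g x - (\<Sum>n<N. \<alpha> n * f n x))) (supnorm nv (\<lambda>x. h x - (\<Sum>n<N. \<beta> n * f n x)))) \<longlonglongrightarrow> 0"
    using tendsto_max[OF a[unfolded rep_def] b[unfolded rep_def]] by simp
qed

lemma rep_const_limit:
  assumes g: "g \<in> Ccarrier nv" and a: "rep \<alpha> g" and z: "\<And>n. n \<noteq> n0 \<Longrightarrow> \<alpha> n = 0"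
    and x: "x \<in> Zp nv"
  shows "g x = \<alpha> n0 * f n0 x"
proof -
  have "supnorm nv (\<lambda>x. g x - (\<Sum>n<N. \<alpha> n * f n x)) = supnorm nv (\<lambda>x. g x - \<alpha> n0 * f n0 x)" if "N > n0" for N
  proof -
    have "(\<Sum>n<N. \<alpha> n * f n x) = \<alpha> n0 * f n0 x" for x
      using that z by (subst sum.remove[of _ n0]) (auto intro!: sum.neutral)
    thus ?thesis by simp
  qed
  hence ev: "eventually (\<lambda>N. supnorm nv (\<lambda>x. g x - (\<Sum>n<N. \<alpha> n * f n x)) = supnorm nv (\<lambda>x. g x - \<alpha> n0 * f n0 x)) sequentially"
    unfolding eventually_sequentially by (intro exI[of _ "Suc n0"]) auto
  have "(\<lambda>N. supnorm nv (\<lambda>x. g x - \<alpha> n0 * f n0 x)) \<longlonglongrightarrow> 0"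
    by (rule Lim_transform_eventually[OF a[unfolded rep_def] ev])
  hence s0: "supnorm nv (\<lambda>x. g x - \<alpha> n0 * f n0 x) = 0" by (simp add: LIMSEQ_const_iff)
  have "bnd (\<lambda>x. g x - \<alpha> n0 * f n0 x)" by (intro bnd_diff bnd_smult cc_bnd g f_cc)
  hence "g x - \<alpha> n0 * f n0 x = 0" using supnorm_zero s0 x by blast
  thus ?thesis by simp
qed

lemma AE_exists:
  assumes M: "prob_space M" and ae: "AE \<omega> in M. P \<omega>" and S: "S \<in> sets M" and pos: "measure M S > 0"
  shows "\<exists>\<omega>\<in>S. P \<omega>"
proof (rule ccontr)
  assume "\<not> (\<exists>\<omega>\<in>S. P \<omega>)"
  hence "AE \<omega> in M. \<omega> \<notin> S" using ae by (auto elim: AE_mp)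
  hence "S \<in> null_sets M" using AE_iff_null_sets[OF S] by simp
  hence "measure M S = 0" by (simp add: measure_def emeasure_eq_0_AE null_setsD1)
  thus False using pos by simp
qed

lemma indep_contra:
  assumes M: "prob_space M" and ind: "prob_space.indep_vars M (\<lambda>_. Kborel nv) A UNIV" and nm: "n \<noteq> m"
    and S: "S \<in> sets (Kborel nv)" and T: "T \<in> sets (Kborel nv)" and G: "G \<in> sets M"
    and aS: "AE \<omega> in M. (A n \<omega> \<in> S \<longleftrightarrow> \<omega> \<in> G)" and aT: "AE \<omega> in M. (A m \<omega> \<in> T \<longleftrightarrow> \<omega> \<in> G)"
  shows "measure M G = measure M G * measure M G"
proof -
  interpret M: prob_space M by (rule M)
  define B where "B i = (if i = n then S else T)" for i
  have Bs: "B i \<in> sets (Kborel nv)" for i unfolding B_def using S T by simp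
  have rv: "A i \<in> measurable M (Kborel nv)" for i using ind unfolding M.indep_vars_def by auto
  have pre: "A i -` B i \<inter> space M \<in> sets M" for i using measurable_sets[OF rv Bs] .
  have "measure M (\<Inter>i\<in>{n, m}. A i -` B i \<inter> space M) = (\<Prod>i\<in>{n, m}. measure M (A i -` B i \<inter> space M))"
    using Bs by (intro M.indep_varsD[OF ind]) auto
  hence e: "measure M ((A n -` S \<inter> space M) \<inter> (A m -` T \<inter> space M)) = measure M (A n -` S \<inter> space M) * measure M (A m -` T \<inter> space M)"
    using nm unfolding B_def by simp
  have 1: "measure M (A n -` S \<inter> space M) = measure M G"
    using aS pre[of n] G unfolding B_def by (intro measure_eq_AE) (auto elim: AE_mp)
  have 2: "measure M (A m -` T \<inter> space M) = measure M G"
    using aT pre[of m] G nm unfolding B_def by (intro measure_eq_AE) (auto elim: AE_mp)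
  have "AE \<omega> in M. (\<omega> \<in> (A n -` S \<inter> space M) \<inter> (A m -` T \<inter> space M) \<longleftrightarrow> \<omega> \<in> G)"
    using aS aT AE_space by eventually_elim (use G sets.sets_into_space in auto)
  hence 3: "measure M ((A n -` S \<inter> space M) \<inter> (A m -` T \<inter> space M)) = measure M G"
    using pre[of n] pre[of m] G nm unfolding B_def by (intro measure_eq_AE) auto
  show ?thesis using e 1 2 3 by simp
qed

end


context qp begin
lemma cball0_sets: "r > 0 \<Longrightarrow> {y. nv y \<le> r} \<in> sets (Kborel nv)"
proof -
  assume r: "r > 0"
  have "nv_open nv {y. nv y \<le> r}"
    unfolding nv_open_def
  proof (intro ballI exI[of _ r] conjI allI impI r)
    fix x y assume "x \<in> {y. nv y \<le> r}" "nv (y - x) < r"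
    thus "y \<in> {y. nv y \<le> r}" using nv_ultra[of "y - x" x] by auto
  qed
  thus ?thesis by (rule nv_open_sets)
qed

lemma rad1_lt1: "rad 1 < 1" using rad_strict[of 0 1] by simp

lemma A0_big: "{\<omega> \<in> space M0. \<not> nv (A0 \<omega>) \<le> rad 1} \<in> sets M0 \<and> measure M0 {\<omega> \<in> space M0. \<not> nv (A0 \<omega>) \<le> rad 1} > 0"
proof -
  interpret M: prob_space M0 by (rule M0_prob)
  have s: "{\<omega> \<in> space M0. nv (A0 \<omega>) \<le> rad 1} \<in> sets M0"
    using measurable_sets[OF A0_meas cball0_sets[OF rad_pos[of 1]]] by (simp add: vimage_def Int_def conj_commute)
  have "{\<omega> \<in> space M0. \<not> nv (A0 \<omega>) \<le> rad 1} = space M0 - {\<omega> \<in> space M0. nv (A0 \<omega>) \<le> rad 1}" by auto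
  moreover have "measure M0 (space M0 - {\<omega> \<in> space M0. nv (A0 \<omega>) \<le> rad 1}) = 1 - rad 1"
    using M.prob_compl[OF s] prob_A_small[of 1] by simp
  ultimately show ?thesis using s rad1_lt1 by auto
qed

lemma B0_big: "{\<omega> \<in> space M0. \<not> nv (B0 \<omega>) \<le> rad 1} \<in> sets M0 \<and> measure M0 {\<omega> \<in> space M0. \<not> nv (B0 \<omega>) \<le> rad 1} > 0"
proof -
  interpret M: prob_space M0 by (rule M0_prob)
  have s: "{\<omega> \<in> space M0. nv (B0 \<omega>) \<le> rad 1} \<in> sets M0"
    using measurable_sets[OF B0_meas cball0_sets[OF rad_pos[of 1]]] by (simp add: vimage_def Int_def conj_commute)
  have "{\<omega> \<in> space M0. \<not> nv (B0 \<omega>) \<le> rad 1} = space M0 - {\<omega> \<in> space M0. nv (B0 \<omega>) \<le> rad 1}" by auto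
  moreover have "measure M0 (space M0 - {\<omega> \<in> space M0. nv (B0 \<omega>) \<le> rad 1}) = 1 - rad 1"
    using M.prob_compl[OF s] prob_B_small[of 1] by simp
  ultimately show ?thesis using s rad1_lt1 by auto
qed

lemma A0_small_sets: "{\<omega> \<in> space M0. nv (A0 \<omega>) \<le> rad k} \<in> sets M0"
  using measurable_sets[OF A0_meas cball0_sets[OF rad_pos[of k]]] by (simp add: vimage_def Int_def conj_commute)
lemma B0_small_sets: "{\<omega> \<in> space M0. nv (B0 \<omega>) \<le> rad k} \<in> sets M0"
  using measurable_sets[OF B0_meas cball0_sets[OF rad_pos[of k]]] by (simp add: vimage_def Int_def conj_commute)
end

context qpb begin

definition one :: "'k \<Rightarrow> 'k" where "one = Phi1 1"
definition hc :: "'k \<Rightarrow> 'k \<Rightarrow> 'k" where "hc c = (\<lambda>x. if x \<in> Zp nv then x + c else 0)"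

lemma one_cc: "one \<in> Ccarrier nv" unfolding one_def by (rule Phi1_cc)
lemma hc_cc: "hc c \<in> Ccarrier nv" unfolding hc_def by (rule cc_id)

lemma X1_eq: "X1 \<omega> = (\<lambda>x. A0 \<omega> * one x)"
  unfolding X1_def one_def Phi1_def by auto
lemma X2_eq: "X2 c \<omega> = (\<lambda>x. A0 \<omega> * one x + B0 \<omega> * hc c x)"
  unfolding X2_def one_def Phi2_def hc_def Phi1_def by auto

definition HYP :: bool where
  "HYP \<longleftrightarrow> (\<forall>(M :: real measure) X.
              prob_space M \<and> C_gaussian_rv nv M X \<and> C_stationary nv M X \<longrightarrow>
              (\<exists>A. (\<forall>n. K_gaussian_rv nv M (A n)) \<and>
                   prob_space.indep_vars M (\<lambda>_. Kborel nv) A UNIV \<and>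
                   series_repr nv M X A f))"

lemma use_hyp:
  assumes "HYP" "C_gaussian_rv nv M0 X" "C_stationary nv M0 X"
  shows "\<exists>A. prob_space.indep_vars M0 (\<lambda>_. Kborel nv) A UNIV \<and> (AE \<omega> in M0. rep (\<lambda>n. A n \<omega>) (X \<omega>))"
  using assms M0_prob unfolding HYP_def series_repr_def rep_def by blast

lemma one_coef:
  assumes hyp: "HYP"
  shows "\<exists>n0 u0. u0 \<noteq> 0 \<and> rep (\<lambda>n. if n = n0 then u0 else 0) one"
proof -
  interpret M: prob_space M0 by (rule M0_prob)
  obtain A where ind: "prob_space.indep_vars M0 (\<lambda>_. Kborel nv) A UNIV"
    and ae: "AE \<omega> in M0. rep (\<lambda>n. A n \<omega>) (X1 \<omega>)"
    using use_hyp[OF hyp X1_gauss X1_stat] by blast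
  obtain \<omega>0 where w0: "\<omega>0 \<in> {\<omega> \<in> space M0. \<not> nv (A0 \<omega>) \<le> rad 1}" "rep (\<lambda>n. A n \<omega>0) (X1 \<omega>0)"
    using AE_exists[OF M0_prob ae] A0_big by blast
  have a0: "A0 \<omega>0 \<noteq> 0" using w0(1) rad_pos[of 1] by auto
  define u where "u n = inverse (A0 \<omega>0) * A n \<omega>0" for n
  have X1cc: "X1 \<omega> \<in> Ccarrier nv" for \<omega> unfolding X1_def by (rule Phi1_cc)
  have "rep u (\<lambda>x. inverse (A0 \<omega>0) * X1 \<omega>0 x)" unfolding u_def by (rule rep_smult[OF X1cc w0(2)])
  moreover have "(\<lambda>x. inverse (A0 \<omega>0) * X1 \<omega>0 x) = one" using a0 unfolding X1_eq by auto
  ultimately have ru: "rep u one" by simp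
  have aeu: "AE \<omega> in M0. \<forall>n. A n \<omega> = A0 \<omega> * u n"
    using ae
  proof (rule AE_mp, intro AE_I2 impI)
    fix \<omega> assume r: "rep (\<lambda>n. A n \<omega>) (X1 \<omega>)"
    have "rep (\<lambda>n. A0 \<omega> * u n) (\<lambda>x. A0 \<omega> * one x)" by (rule rep_smult[OF one_cc ru])
    hence "rep (\<lambda>n. A0 \<omega> * u n) (X1 \<omega>)" by (simp add: X1_eq)
    from rep_unique[OF X1cc r this] show "\<forall>n. A n \<omega> = A0 \<omega> * u n" by (simp add: fun_eq_iff)
  qed
  have at_most: "u n = 0 \<or> u m = 0" if nm: "n \<noteq> m" for n m
  proof (rule ccontr)
    assume "\<not> (u n = 0 \<or> u m = 0)"
    hence un: "u n \<noteq> 0" and um: "u m \<noteq> 0" by auto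
    define G where "G = {\<omega> \<in> space M0. nv (A0 \<omega>) \<le> rad 1}"
    have "measure M0 G = measure M0 G * measure M0 G"
    proof (rule indep_contra[OF M0_prob ind nm])
      show "{y. nv y \<le> nv (u n) * rad 1} \<in> sets (Kborel nv)"
        using nv_pos[OF un] rad_pos[of 1] by (intro cball0_sets) simp
      show "{y. nv y \<le> nv (u m) * rad 1} \<in> sets (Kborel nv)"
        using nv_pos[OF um] rad_pos[of 1] by (intro cball0_sets) simp
      show "G \<in> sets M0" unfolding G_def by (rule A0_small_sets)
      show "AE \<omega> in M0. (A n \<omega> \<in> {y. nv y \<le> nv (u n) * rad 1}) = (\<omega> \<in> G)"
        using aeu AE_space
      proof eventually_elim
        case (elim \<omega>)
        thus ?case using nv_pos[OF un] unfolding G_def by (auto simp: nv_mult mult.commute)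
      qed
      show "AE \<omega> in M0. (A m \<omega> \<in> {y. nv y \<le> nv (u m) * rad 1}) = (\<omega> \<in> G)"
        using aeu AE_space
      proof eventually_elim
        case (elim \<omega>)
        thus ?case using nv_pos[OF um] unfolding G_def by (auto simp: nv_mult mult.commute)
      qed
    qed
    moreover have "measure M0 G = rad 1" unfolding G_def by (rule prob_A_small)
    ultimately show False using rad1_lt1 rad_pos[of 1] by simp
  qed
  obtain n0 where n0: "u n0 \<noteq> 0"
  proof (rule ccontr)
    assume "\<not> thesis"
    hence z: "\<And>n. u n = 0" using that by blast
    have "one 0 = u 0 * f 0 0" using rep_const_limit[OF one_cc ru, of 0 0] z by simp
    thus False using z by (simp add: one_def Phi1_def)
  qed
  have "u = (\<lambda>n. if n = n0 then u n0 else 0)" using at_most n0 by (auto simp: fun_eq_iff)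
  thus ?thesis using ru n0 by metis
qed

end


context qpb begin

lemma X2cc: "X2 c \<omega> \<in> Ccarrier nv" unfolding X2_def by (rule Phi2_cc)

lemma h_coef:
  assumes hyp: "HYP" and ru: "rep u one"
  shows "\<exists>v. rep v (hc 0)"
proof -
  interpret M: prob_space M0 by (rule M0_prob)
  obtain A where ae: "AE \<omega> in M0. rep (\<lambda>n. A n \<omega>) (X2 0 \<omega>)"
    using use_hyp[OF hyp X2_gauss X2_stat] by blast
  obtain \<omega>1 where w1: "\<omega>1 \<in> {\<omega> \<in> space M0. \<not> nv (B0 \<omega>) \<le> rad 1}" "rep (\<lambda>n. A n \<omega>1) (X2 0 \<omega>1)"
    using AE_exists[OF M0_prob ae] B0_big by blast
  have b0: "B0 \<omega>1 \<noteq> 0" using w1(1) rad_pos[of 1] by auto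
  have r1: "rep (\<lambda>n. - A0 \<omega>1 * u n) (\<lambda>x. - A0 \<omega>1 * one x)" by (rule rep_smult[OF one_cc ru])
  have r2: "rep (\<lambda>n. A n \<omega>1 + - A0 \<omega>1 * u n) (\<lambda>x. X2 0 \<omega>1 x + - A0 \<omega>1 * one x)"
    by (rule rep_add[OF X2cc _ w1(2) r1]) (intro cc_smult one_cc)
  have e: "(\<lambda>x. X2 0 \<omega>1 x + - A0 \<omega>1 * one x) = (\<lambda>x. B0 \<omega>1 * hc 0 x)"
    unfolding X2_eq by auto
  have cc: "(\<lambda>x. B0 \<omega>1 * hc 0 x) \<in> Ccarrier nv" by (intro cc_smult hc_cc)
  have "rep (\<lambda>n. inverse (B0 \<omega>1) * (A n \<omega>1 + - A0 \<omega>1 * u n)) (\<lambda>x. inverse (B0 \<omega>1) * (B0 \<omega>1 * hc 0 x))"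
    using r2 unfolding e by (rule rep_smult[OF cc])
  moreover have "(\<lambda>x. inverse (B0 \<omega>1) * (B0 \<omega>1 * hc 0 x)) = hc 0" using b0 by auto
  ultimately show ?thesis by auto
qed

lemma final:
  assumes hyp: "HYP" and u0: "u0 \<noteq> 0" and ru: "rep (\<lambda>n. if n = n0 then u0 else 0) one"
    and rw: "rep w (hc c)" and big: "nv (w n0) > nv u0"
  shows False
proof -
  interpret M: prob_space M0 by (rule M0_prob)
  let ?u = "\<lambda>n. if n = n0 then u0 else 0"
  have wn0: "w n0 \<noteq> 0"
  proof
    assume "w n0 = 0" thus False using big nv_nonneg[of u0] by simp
  qed
  obtain m where m: "m \<noteq> n0" "w m \<noteq> 0"
  proof (rule ccontr)
    assume "\<not> thesis"
    hence z: "\<And>n. n \<noteq> n0 \<Longrightarrow> w n = 0" using that by blast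
    have z0: "0 \<in> Zp nv" and z1: "1 \<in> Zp nv" by simp_all
    have h0: "hc c 0 = w n0 * f n0 0" using rep_const_limit[OF hc_cc rw z z0] by simp
    have h1: "hc c 1 = w n0 * f n0 1" using rep_const_limit[OF hc_cc rw z z1] by simp
    have o0: "one 0 = u0 * f n0 0" using rep_const_limit[OF one_cc ru _ z0, of n0] by simp
    have o1: "one 1 = u0 * f n0 1" using rep_const_limit[OF one_cc ru _ z1, of n0] by simp
    have "f n0 0 = f n0 1" using o0 o1 u0 by (simp add: one_def Phi1_def) (metis mult_left_cancel)
    hence "hc c 0 = hc c 1" using h0 h1 by simp
    thus False by (simp add: hc_def)
  qed
  obtain A where ind: "prob_space.indep_vars M0 (\<lambda>_. Kborel nv) A UNIV"
    and ae: "AE \<omega> in M0. rep (\<lambda>n. A n \<omega>) (X2 c \<omega>)"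
    using use_hyp[OF hyp X2_gauss X2_stat] by blast
  have aeA: "AE \<omega> in M0. \<forall>n. A n \<omega> = A0 \<omega> * ?u n + B0 \<omega> * w n"
    using ae
  proof (rule AE_mp, intro AE_I2 impI)
    fix \<omega> assume r: "rep (\<lambda>n. A n \<omega>) (X2 c \<omega>)"
    have "rep (\<lambda>n. A0 \<omega> * ?u n + B0 \<omega> * w n) (\<lambda>x. A0 \<omega> * one x + B0 \<omega> * hc c x)"
      by (intro rep_add rep_smult cc_smult one_cc hc_cc ru rw)
    hence "rep (\<lambda>n. A0 \<omega> * ?u n + B0 \<omega> * w n) (X2 c \<omega>)" by (simp add: X2_eq)
    from rep_unique[OF X2cc r this] show "\<forall>n. A n \<omega> = A0 \<omega> * ?u n + B0 \<omega> * w n" by (simp add: fun_eq_iff)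
  qed
  define r where "r = nv (u0 / w n0)"
  have r_eq: "r = nv u0 / nv (w n0)" unfolding r_def by (simp add: nv_divide)
  have rpos: "r > 0" using u0 wn0 unfolding r_def by (intro nv_pos) simp
  have rlt: "r < 1" using r_eq big nv_pos[OF wn0] by simp
  obtain k where k: "r = rad k" using nv_le1_rad[of "u0 / w n0"] u0 wn0 rlt unfolding r_def by auto
  have k0: "k \<noteq> 0" using k rlt rad_0 by (metis less_irrefl)
  define G where "G = {\<omega> \<in> space M0. nv (B0 \<omega>) \<le> rad k}"
  have "measure M0 G = measure M0 G * measure M0 G"
  proof (rule indep_contra[OF M0_prob ind m(1)[symmetric]])
    show "{y. nv y \<le> nv u0} \<in> sets (Kborel nv)" using nv_pos[OF u0] by (intro cball0_sets)
    show "{y. nv y \<le> nv (w m) * rad k} \<in> sets (Kborel nv)"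
      using nv_pos[OF m(2)] rad_pos[of k] by (intro cball0_sets) simp
    show "G \<in> sets M0" unfolding G_def by (rule B0_small_sets)
    show "AE \<omega> in M0. (A n0 \<omega> \<in> {y. nv y \<le> nv u0}) = (\<omega> \<in> G)"
      using aeA AE_space
    proof eventually_elim
      case (elim \<omega>)
      have An0: "A n0 \<omega> = A0 \<omega> * u0 + B0 \<omega> * w n0" using elim by simp
      have a: "nv (A0 \<omega> * u0) \<le> nv u0" using A0_Zp[of \<omega>] by (simp add: nv_mult mult_left_le_one_le)
      have iff: "nv (B0 \<omega> * w n0) \<le> nv u0 \<longleftrightarrow> nv (B0 \<omega>) \<le> rad k"
        using nv_pos[OF wn0] unfolding k[symmetric] r_eq by (simp add: nv_mult pos_le_divide_eq)
      show ?case
      proof (cases "nv (B0 \<omega> * w n0) \<le> nv u0")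
        case True
        hence "nv (A n0 \<omega>) \<le> nv u0" unfolding An0 using a by (intro nv_ultra_le)
        thus ?thesis using True iff elim unfolding G_def by simp
      next
        case False
        hence "nv (A n0 \<omega>) = nv (B0 \<omega> * w n0)" unfolding An0 using a
          by (subst add.commute, intro nv_strict) simp
        thus ?thesis using False iff elim unfolding G_def by simp
      qed
    qed
    show "AE \<omega> in M0. (A m \<omega> \<in> {y. nv y \<le> nv (w m) * rad k}) = (\<omega> \<in> G)"
      using aeA AE_space
    proof eventually_elim
      case (elim \<omega>)
      have Am: "A m \<omega> = B0 \<omega> * w m" using elim m(1) by simp
      show ?case using nv_pos[OF m(2)] elim unfolding Am G_def by (auto simp: nv_mult mult.commute)
    qed
  qed
  moreover have "measure M0 G = rad k" unfolding G_def by (rule prob_B_small)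
  moreover have "rad k < 1" using k0 rad_strict[of 0 k] by simp
  ultimately show False using rad_pos[of k] by simp
qed

lemma main_false:
  assumes hyp: "HYP"
  shows False
proof -
  obtain n0 u0 where u0: "u0 \<noteq> 0" and ru: "rep (\<lambda>n. if n = n0 then u0 else 0) one"
    using one_coef[OF hyp] by blast
  obtain v where rv: "rep v (hc 0)" using h_coef[OF hyp ru] by blast
  show False
  proof (cases "nv (v n0) > nv u0")
    case True
    show False by (rule final[OF hyp u0 ru rv True])
  next
    case False
    define ip :: 'k where "ip = inverse (of_nat p)"
    have nip: "nv ip = real p" unfolding ip_def using p_pos by (simp add: nv_inverse nv_p)
    define w where "w n = v n + ip * (if n = n0 then u0 else 0)" for n
    have rw: "rep w (\<lambda>x. hc 0 x + ip * one x)"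
      unfolding w_def by (intro rep_add rep_smult cc_smult one_cc hc_cc ru rv)
    have e: "(\<lambda>x. hc 0 x + ip * one x) = hc ip"
      unfolding hc_def one_def Phi1_def by auto
    have big: "nv (ip * u0) > nv u0" using nv_pos[OF u0] p_gt1 nip by (simp add: nv_mult)
    have "nv (ip * u0 + v n0) = nv (ip * u0)"
      using False big by (intro nv_strict) simp
    hence "nv (w n0) = nv (ip * u0)" unfolding w_def by (simp add: add.commute)
    hence "nv (w n0) > nv u0" using big by simp
    thus False using final[OF hyp u0 ru rw[unfolded e]] by simp
  qed
qed

end


theorem corollary8p4:
  fixes p :: nat and nv :: "'k::field_char_0 \<Rightarrow> real"
  assumes "prime p" and "is_Qp p nv"
  shows "\<not> (\<exists>f. orthonormal_basis_C nv f \<and>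
           (\<forall>(M :: real measure) X.
              prob_space M \<and> C_gaussian_rv nv M X \<and> C_stationary nv M X \<longrightarrow>
              (\<exists>A. (\<forall>n. K_gaussian_rv nv M (A n)) \<and>
                   prob_space.indep_vars M (\<lambda>_. Kborel nv) A UNIV \<and>
                   series_repr nv M X A f)))"
proof
  assume ex: "\<exists>f. orthonormal_basis_C nv f \<and>
           (\<forall>(M :: real measure) X.
              prob_space M \<and> C_gaussian_rv nv M X \<and> C_stationary nv M X \<longrightarrow>
              (\<exists>A. (\<forall>n. K_gaussian_rv nv M (A n)) \<and>
                   prob_space.indep_vars M (\<lambda>_. Kborel nv) A UNIV \<and>
                   series_repr nv M X A f))"
  then obtain f where f: "orthonormal_basis_C nv f" and h: "\<forall>(M :: real measure) X.
              prob_space M \<and> C_gaussian_rv nv M X \<and> C_stationary nv M X \<longrightarrow>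
              (\<exists>A. (\<forall>n. K_gaussian_rv nv M (A n)) \<and>
                   prob_space.indep_vars M (\<lambda>_. Kborel nv) A UNIV \<and>
                   series_repr nv M X A f)" by blast
  interpret Q: qpb p nv f
    using assms f by (intro qpb.intro qp.intro qpb_axioms.intro)
  have "Q.HYP" unfolding Q.HYP_def using h by blast
  thus False by (rule Q.main_false)
qed

end
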